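(* Let $F\in\mathbb{D}^{1,2}$ with $\mathbb{E}[F]=0$, $\operatorname{Var}(F)=1$, such that $Ff_z(F)+\mathbf 1\{F>z\}\in\mathbb{D}^{1,2}$ for all $z\in\mathbb{R}$ and $u:=\big(\frac{1}{\sqrt{p_kq_k}}D_kF\,|D_kL^{-1}F|\big)_{k\in\mathbb{N}}\in\operatorname{Dom}(\delta)$. Assume there exist a constant $A>0$ and increasing functions $\gamma_1,\gamma_2$ such that $\mathbb{E}[e^{tF}]<\infty$, $$\mathbb{E}\big[|1-\langle DF,-DL^{-1}F\rangle|\,e^{tF}\big]\le\gamma_1(t)\,\mathbb{E}[e^{tF}]\quad\text{and}\quad \mathbb{E}\big[|\delta(u)|\,e^{tF}\big]\le\gamma_2(t)\,\mathbb{E}[e^{tF}]$$ for all $0\le t\le A$. Then for $0\le t\le A$, $$\mathbb{E}[e^{tF}]\le\exp\Big\{\frac{t^2}{2}\big(1+\gamma_1(t)+\gamma_2(t)\big)\Big\},$$ and, for any $d_0\ge0$ and $0\le t\le A_0(d_0):=\max\{0\le s\le A:\frac{s^2}{2}(\gamma_1(s)+\gamma_2(s))\le d_0\}$, $$\mathbb{E}[e^{tF}]\le e^{d_0}e^{t^2/2}.$$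
   Context: $X=(X_k)_{k\in\mathbb{N}}$ are independent Rademacher variables with $\mathbb{P}(X_k=1)=p_k\in(0,1)$, $q_k=1-p_k$; $Y_k=(X_k-p_k+q_k)/(2\sqrt{p_kq_k})$. For $F=f(X)\in L^2(\Omega,\sigma(X),\mathbb{P})$, $F_k^\pm$ is $f$ with $X_k$ replaced by $\pm1$, $D_kF:=\sqrt{p_kq_k}(F_k^+-F_k^-)$. $\mathbb{D}^{1,2}=\{F\in L^2:\mathbb{E}\sum_k(D_kF)^2<\infty\}$. $\delta$ is the adjoint of $D$: $\mathbb{E}[\langle DG,u\rangle]=\mathbb{E}[G\delta(u)]$ for $G\in\mathbb{D}^{1,2}$, $\langle a,b\rangle=\sum_ka_kb_k$. With chaos expansion $F=\mathbb{E}F+\sum_{n\ge1}J_n(f_n)$ in the multiple integrals $J_n(f_n)=\sum f_n(i_1,\dots,i_n)Y_{i_1}\cdots Y_{i_n}\mathbf 1\{i_j\ne i_k, j\neq k\}$, $L^{-1}F:=-\sum_n\frac1nJ_n(f_n)$. $\Phi$, $p(w)$ are the standard normal distribution function and density; $f_z(w)=\Phi(w)(1-\Phi(z))/p(w)$ for $w\le z$, $f_z(w)=\Phi(z)(1-\Phi(w))/p(w)$ for $w>z$. *)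

theory Defs
  imports "HOL-Probability.Probability"
begin

text \<open>Canonical probability space of the independent Rademacher sequence:
  \<omega> :: nat \<Rightarrow> bool, with \<omega> k = True meaning X_k = 1 (probability p k).\<close>

definition Mrad :: "(nat \<Rightarrow> real) \<Rightarrow> (nat \<Rightarrow> bool) measure" where
  "Mrad p = PiM UNIV (\<lambda>k. measure_pmf (bernoulli_pmf (p k)))"

definition Xr :: "nat \<Rightarrow> (nat \<Rightarrow> bool) \<Rightarrow> real" where
  "Xr k \<omega> = (if \<omega> k then 1 else -1)"

definition Yr :: "(nat \<Rightarrow> real) \<Rightarrow> nat \<Rightarrow> (nat \<Rightarrow> bool) \<Rightarrow> real" where
  "Yr p k \<omega> = (Xr k \<omega> - p k + (1 - p k)) / (2 * sqrt (p k * (1 - p k)))"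

definition Dk :: "(nat \<Rightarrow> real) \<Rightarrow> nat \<Rightarrow> ((nat \<Rightarrow> bool) \<Rightarrow> real) \<Rightarrow> (nat \<Rightarrow> bool) \<Rightarrow> real" where
  "Dk p k F \<omega> = sqrt (p k * (1 - p k)) * (F (fun_upd \<omega> k True) - F (fun_upd \<omega> k False))"

definition L2 :: "(nat \<Rightarrow> real) \<Rightarrow> ((nat \<Rightarrow> bool) \<Rightarrow> real) \<Rightarrow> bool" where
  "L2 p F \<longleftrightarrow> F \<in> borel_measurable (Mrad p) \<and> integrable (Mrad p) (\<lambda>\<omega>. (F \<omega>)\<^sup>2)"

definition D12 :: "(nat \<Rightarrow> real) \<Rightarrow> ((nat \<Rightarrow> bool) \<Rightarrow> real) \<Rightarrow> bool" where
  "D12 p F \<longleftrightarrow> L2 p F \<and>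
     (\<integral>\<^sup>+\<omega>. (\<Sum>k. ennreal ((Dk p k F \<omega>)\<^sup>2)) \<partial>Mrad p) < \<infinity>"

definition L2proc :: "(nat \<Rightarrow> real) \<Rightarrow> (nat \<Rightarrow> (nat \<Rightarrow> bool) \<Rightarrow> real) \<Rightarrow> bool" where
  "L2proc p u \<longleftrightarrow> (\<forall>k. u k \<in> borel_measurable (Mrad p)) \<and>
     (\<integral>\<^sup>+\<omega>. (\<Sum>k. ennreal ((u k \<omega>)\<^sup>2)) \<partial>Mrad p) < \<infinity>"

definition ipair :: "(nat \<Rightarrow> real) \<Rightarrow> (nat \<Rightarrow> real) \<Rightarrow> real" where
  "ipair a b = (\<Sum>k. a k * b k)"

text \<open>div_rel p u du: u \<in> Dom(\<delta>) and du = \<delta>(u) (the adjoint of D):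
  E[\<langle>DG,u\<rangle>] = E[G \<delta>(u)] for all G \<in> D^{1,2}.\<close>
definition div_rel :: "(nat \<Rightarrow> real) \<Rightarrow> (nat \<Rightarrow> (nat \<Rightarrow> bool) \<Rightarrow> real) \<Rightarrow> ((nat \<Rightarrow> bool) \<Rightarrow> real) \<Rightarrow> bool" where
  "div_rel p u du \<longleftrightarrow> L2proc p u \<and> L2 p du \<and>
     (\<forall>G. D12 p G \<longrightarrow>
        (\<integral>\<omega>. ipair (\<lambda>k. Dk p k G \<omega>) (\<lambda>k. u k \<omega>) \<partial>Mrad p) = (\<integral>\<omega>. G \<omega> * du \<omega> \<partial>Mrad p))"

definition L2lim :: "(nat \<Rightarrow> real) \<Rightarrow> (nat \<Rightarrow> (nat \<Rightarrow> bool) \<Rightarrow> real) \<Rightarrow> ((nat \<Rightarrow> bool) \<Rightarrow> real) \<Rightarrow> bool" where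
  "L2lim p S G \<longleftrightarrow>
     ((\<lambda>N. \<integral>\<^sup>+\<omega>. ennreal ((S N \<omega> - G \<omega>)\<^sup>2) \<partial>Mrad p) \<longlongrightarrow> 0) sequentially"

text \<open>Truncation of the multiple integral J_n(f) to indices < N
  (sum over n-tuples of pairwise distinct indices, tuples represented as lists).\<close>
definition Jtrunc :: "(nat \<Rightarrow> real) \<Rightarrow> nat \<Rightarrow> (nat list \<Rightarrow> real) \<Rightarrow> nat \<Rightarrow> (nat \<Rightarrow> bool) \<Rightarrow> real" where
  "Jtrunc p n f N \<omega> =
     (\<Sum>is\<in>{is. length is = n \<and> distinct is \<and> set is \<subseteq> {..<N}}.
        f is * prod_list (map (\<lambda>i. Yr p i \<omega>) is))"

text \<open>is_J p n f G: G = J_n(f), the multiple integral as L^2 limit of its truncations.\<close>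
definition is_J :: "(nat \<Rightarrow> real) \<Rightarrow> nat \<Rightarrow> (nat list \<Rightarrow> real) \<Rightarrow> ((nat \<Rightarrow> bool) \<Rightarrow> real) \<Rightarrow> bool" where
  "is_J p n f G \<longleftrightarrow> G \<in> borel_measurable (Mrad p) \<and> L2lim p (Jtrunc p n f) G"

text \<open>Linv p F H: H = L^{-1} F, i.e. F = E F + \<Sum>_{n\<ge>1} J_n(f_n) (chaos expansion,
  convergence in L^2) and H = - \<Sum>_{n\<ge>1} (1/n) J_n(f_n).\<close>
definition Linv :: "(nat \<Rightarrow> real) \<Rightarrow> ((nat \<Rightarrow> bool) \<Rightarrow> real) \<Rightarrow> ((nat \<Rightarrow> bool) \<Rightarrow> real) \<Rightarrow> bool" where
  "Linv p F H \<longleftrightarrow> H \<in> borel_measurable (Mrad p) \<and>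
     (\<exists>f :: nat \<Rightarrow> nat list \<Rightarrow> real. \<exists>J :: nat \<Rightarrow> (nat \<Rightarrow> bool) \<Rightarrow> real.
        (\<forall>n\<ge>1. is_J p n (f n) (J n)) \<and>
        L2lim p (\<lambda>N \<omega>. (\<integral>\<omega>'. F \<omega>' \<partial>Mrad p) + (\<Sum>n\<in>{1..N}. J n \<omega>)) F \<and>
        L2lim p (\<lambda>N \<omega>. - (\<Sum>n\<in>{1..N}. J n \<omega> / real n)) H)"

definition Phi :: "real \<Rightarrow> real" where
  "Phi w = (LBINT x:{..w}. std_normal_density x)"

definition fz :: "real \<Rightarrow> real \<Rightarrow> real" where
  "fz z w = (if w \<le> z then Phi w * (1 - Phi z) / std_normal_density w
             else Phi z * (1 - Phi w) / std_normal_density w)"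

end

theory Submission
  imports Defs
begin

locale rad =
  fixes p :: "nat \<Rightarrow> real"
  assumes pp: "\<And>k. 0 < p k \<and> p k < 1"
begin

abbreviation "M \<equiv> Mrad p"

lemma p_pos: "0 < p k" and p_lt1: "p k < 1" using pp by auto

lemma prob: "prob_space M"
  unfolding Mrad_def by (intro prob_space_PiM) (simp add: prob_space_measure_pmf)

sublocale P: prob_space M by (rule prob)

lemma space_M[simp]: "space M = UNIV"
  unfolding Mrad_def by (simp add: space_PiM)

lemma upd_meas[measurable]: "(\<lambda>\<omega>. fun_upd \<omega> k b) \<in> measurable M M"
  unfolding Mrad_def
  by (rule measurable_fun_upd[where J=UNIV]) auto

lemma upd_meas':
  "f \<in> borel_measurable M \<Longrightarrow> (\<lambda>\<omega>. f (fun_upd \<omega> k b)) \<in> borel_measurable M"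
  using measurable_comp[OF upd_meas] by (auto simp: comp_def)

lemma distr_eq: "distr (measure_pmf (bernoulli_pmf (p k)) \<Otimes>\<^sub>M M) M (\<lambda>(x, X). fun_upd X k x) = M"
proof -
  have "distr (measure_pmf (bernoulli_pmf (p k)) \<Otimes>\<^sub>M (\<Pi>\<^sub>M i\<in>UNIV. measure_pmf (bernoulli_pmf (p i))))
      (\<Pi>\<^sub>M i\<in>insert k UNIV. measure_pmf (bernoulli_pmf (p i))) (\<lambda>(x, X). fun_upd X k x) =
    (\<Pi>\<^sub>M i\<in>insert k UNIV. measure_pmf (bernoulli_pmf (p i)))"
    by (rule distr_pair_PiM_eq_PiM) (auto simp: prob_space_measure_pmf)
  then show ?thesis unfolding Mrad_def by simp
qed

lemma pair_meas[measurable]: "(\<lambda>(x, X). fun_upd X k x) \<in> measurable (measure_pmf (bernoulli_pmf (p k)) \<Otimes>\<^sub>M M) M"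
proof -
  have "(\<lambda>(x, X). fun_upd X k x) = (\<lambda>y. fun_upd (snd y) k (fst y))" by auto
  moreover have "(\<lambda>y. fun_upd (snd y) k (fst y)) \<in> measurable (measure_pmf (bernoulli_pmf (p k)) \<Otimes>\<^sub>M M) M"
    unfolding Mrad_def by (rule measurable_fun_upd[where J=UNIV]) auto
  ultimately show ?thesis by simp
qed

lemma resample_nn:
  assumes f[measurable]: "f \<in> borel_measurable M"
  shows "(\<integral>\<^sup>+\<omega>. f \<omega> \<partial>M) = (\<integral>\<^sup>+\<omega>. f (fun_upd \<omega> k True) * ennreal (p k) + f (fun_upd \<omega> k False) * ennreal (1 - p k) \<partial>M)"
proof -
  interpret B: prob_space "measure_pmf (bernoulli_pmf (p k))" by (rule prob_space_measure_pmf)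
  interpret PS: pair_sigma_finite "measure_pmf (bernoulli_pmf (p k))" M
    by unfold_locales
  have "(\<integral>\<^sup>+\<omega>. f \<omega> \<partial>M) = (\<integral>\<^sup>+\<omega>. f \<omega> \<partial>distr (measure_pmf (bernoulli_pmf (p k)) \<Otimes>\<^sub>M M) M (\<lambda>(x, X). fun_upd X k x))"
    by (simp add: distr_eq)
  also have "\<dots> = (\<integral>\<^sup>+y. f ((\<lambda>(x, X). fun_upd X k x) y) \<partial>(measure_pmf (bernoulli_pmf (p k)) \<Otimes>\<^sub>M M))"
    by (rule nn_integral_distr) auto
  also have "\<dots> = (\<integral>\<^sup>+ X. (\<integral>\<^sup>+ x. f (fun_upd X k x) \<partial>measure_pmf (bernoulli_pmf (p k))) \<partial>M)"
  proof -
    have m: "(\<lambda>y. f (fun_upd (snd y) k (fst y))) \<in> borel_measurable (measure_pmf (bernoulli_pmf (p k)) \<Otimes>\<^sub>M M)"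
      using measurable_comp[OF pair_meas f] by (simp add: comp_def case_prod_beta)
    show ?thesis using PS.nn_integral_snd[OF m] by (simp add: case_prod_beta)
  qed
  also have "\<dots> = (\<integral>\<^sup>+\<omega>. f (fun_upd \<omega> k True) * ennreal (p k) + f (fun_upd \<omega> k False) * ennreal (1 - p k) \<partial>M)"
    using pp[of k] by (intro nn_integral_cong) (simp add: nn_integral_measure_pmf_support[of UNIV] UNIV_bool)
  finally show ?thesis .
qed

abbreviation "B k \<equiv> measure_pmf (bernoulli_pmf (p k))"

lemma pair_meas2[measurable]: "(\<lambda>(X, x). fun_upd X k x) \<in> measurable (M \<Otimes>\<^sub>M B k) M"
proof -
  have "(\<lambda>(X, x). fun_upd X k x) = (\<lambda>y. fun_upd (fst y) k (snd y))" by auto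
  moreover have "(\<lambda>y. fun_upd (fst y) k (snd y)) \<in> measurable (M \<Otimes>\<^sub>M B k) M"
    unfolding Mrad_def by (rule measurable_fun_upd[where J=UNIV]) auto
  ultimately show ?thesis by simp
qed

lemma distr_eq2: "distr (M \<Otimes>\<^sub>M B k) M (\<lambda>(X, x). fun_upd X k x) = M"
proof -
  interpret Bp: prob_space "B k" by (rule prob_space_measure_pmf)
  interpret PS: pair_sigma_finite "B k" M by unfold_locales
  have "distr (M \<Otimes>\<^sub>M B k) M (\<lambda>(X, x). fun_upd X k x) =
     distr (distr (M \<Otimes>\<^sub>M B k) (B k \<Otimes>\<^sub>M M) (\<lambda>(x, y). (y, x))) M (\<lambda>(x, X). fun_upd X k x)"
    by (subst distr_distr) (auto simp: comp_def case_prod_beta intro!: distr_cong)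
  also have "distr (M \<Otimes>\<^sub>M B k) (B k \<Otimes>\<^sub>M M) (\<lambda>(x, y). (y, x)) = B k \<Otimes>\<^sub>M M"
    by (rule PS.distr_pair_swap[symmetric])
  finally show ?thesis using distr_eq[of k] by (rule trans)
qed

lemma resample_int:
  assumes f: "integrable M f"
  shows "integrable M (\<lambda>\<omega>. f (fun_upd \<omega> k True) * p k + f (fun_upd \<omega> k False) * (1 - p k))"
    and "(\<integral>\<omega>. f \<omega> \<partial>M) = (\<integral>\<omega>. f (fun_upd \<omega> k True) * p k + f (fun_upd \<omega> k False) * (1 - p k) \<partial>M)"
proof -
  interpret Bp: prob_space "B k" by (rule prob_space_measure_pmf)
  interpret PS: pair_sigma_finite M "B k" by unfold_locales
  have fm[measurable]: "f \<in> borel_measurable M" using f by auto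
  have "integrable (distr (M \<Otimes>\<^sub>M B k) M (\<lambda>(X, x). fun_upd X k x)) f" using f distr_eq2 by simp
  then have i2: "integrable (M \<Otimes>\<^sub>M B k) (\<lambda>y. f ((\<lambda>(X, x). fun_upd X k x) y))"
    by (subst (asm) integrable_distr_eq) auto
  then have i3: "integrable (M \<Otimes>\<^sub>M B k) (\<lambda>y. f (fun_upd (fst y) k (snd y)))"
    by (simp add: case_prod_beta)
  have inner: "(\<integral>x. f (fun_upd X k x) \<partial>B k) = f (fun_upd X k True) * p k + f (fun_upd X k False) * (1 - p k)" for X
    using pp[of k] by simp
  show "integrable M (\<lambda>\<omega>. f (fun_upd \<omega> k True) * p k + f (fun_upd \<omega> k False) * (1 - p k))"
    using PS.integrable_fst'[OF i3] by (simp add: inner)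
  have "(\<integral>\<omega>. f \<omega> \<partial>M) = (\<integral>\<omega>. f \<omega> \<partial>distr (M \<Otimes>\<^sub>M B k) M (\<lambda>(X, x). fun_upd X k x))"
    using distr_eq2 by simp
  also have "\<dots> = (\<integral>y. f ((\<lambda>(X, x). fun_upd X k x) y) \<partial>(M \<Otimes>\<^sub>M B k))"
    by (rule integral_distr) auto
  also have "\<dots> = (\<integral>y. f (fun_upd (fst y) k (snd y)) \<partial>(M \<Otimes>\<^sub>M B k))"
    by (simp add: case_prod_beta)
  also have "\<dots> = (\<integral>X. (\<integral>x. f (fun_upd X k x) \<partial>B k) \<partial>M)"
    using PS.integral_fst'[OF i3] by simp
  finally show "(\<integral>\<omega>. f \<omega> \<partial>M) = (\<integral>\<omega>. f (fun_upd \<omega> k True) * p k + f (fun_upd \<omega> k False) * (1 - p k) \<partial>M)"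
    by (simp add: inner)
qed

end

context rad begin

abbreviation "cc k \<equiv> sqrt (p k * (1 - p k))"

lemma cc_pos: "cc k > 0" using pp[of k] by simp

lemma Dk_upd[simp]: "Dk p k G (fun_upd \<omega> k b) = Dk p k G \<omega>"
  by (simp add: Dk_def)

lemma Dk_meas[measurable]: "G \<in> borel_measurable M \<Longrightarrow> (\<lambda>\<omega>. Dk p k G \<omega>) \<in> borel_measurable M"
proof -
  assume G: "G \<in> borel_measurable M"
  have "(\<lambda>\<omega>. G (fun_upd \<omega> k True)) \<in> borel_measurable M" "(\<lambda>\<omega>. G (fun_upd \<omega> k False)) \<in> borel_measurable M"
    using upd_meas'[OF G] by auto
  then show ?thesis unfolding Dk_def by measurable
qed

lemma Dk_diff: "Dk p k (\<lambda>\<omega>. G \<omega> - K \<omega>) \<omega> = Dk p k G \<omega> - Dk p k K \<omega>"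
  by (simp add: Dk_def algebra_simps)

lemma Dk_add: "Dk p k (\<lambda>\<omega>. G \<omega> + K \<omega>) \<omega> = Dk p k G \<omega> + Dk p k K \<omega>"
  by (simp add: Dk_def algebra_simps)

lemma Dk_scale: "Dk p k (\<lambda>\<omega>. a * G \<omega>) \<omega> = a * Dk p k G \<omega>"
  by (simp add: Dk_def algebra_simps)

lemma Dk_minus: "Dk p k (\<lambda>\<omega>. - G \<omega>) \<omega> = - Dk p k G \<omega>"
  by (simp add: Dk_def algebra_simps)

lemma Dk_sum: "Dk p k (\<lambda>\<omega>. \<Sum>i\<in>S. G i \<omega>) \<omega> = (\<Sum>i\<in>S. Dk p k (G i) \<omega>)"
  by (simp add: Dk_def sum_subtractf[symmetric] sum_distrib_left)

lemma Dk_indep: "(\<And>\<omega> b. G (fun_upd \<omega> k b) = G \<omega>) \<Longrightarrow> Dk p k G \<omega> = 0"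
  by (simp add: Dk_def)

lemma Dk_sq_le: "(Dk p k G \<omega>)\<^sup>2 \<le> p k * (G (fun_upd \<omega> k True))\<^sup>2 + (1 - p k) * (G (fun_upd \<omega> k False))\<^sup>2"
proof -
  define x where "x = G (fun_upd \<omega> k True)"
  define y where "y = G (fun_upd \<omega> k False)"
  have q: "p k * (1 - p k) \<ge> 0" using pp[of k] by simp
  have "(Dk p k G \<omega>)\<^sup>2 = p k * (1 - p k) * (x - y)\<^sup>2"
    using q by (simp add: Dk_def x_def y_def power_mult_distrib)
  also have "\<dots> \<le> p k * x\<^sup>2 + (1 - p k) * y\<^sup>2"
  proof -
    have "p k * x\<^sup>2 + (1 - p k) * y\<^sup>2 - p k * (1 - p k) * (x - y)\<^sup>2 = (p k * x + (1 - p k) * y)\<^sup>2"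
      by (simp add: power2_eq_square algebra_simps)
    then show ?thesis by (smt (verit) zero_le_power2)
  qed
  finally show ?thesis by (simp add: x_def y_def)
qed

lemma Dk_nn:
  assumes [measurable]: "G \<in> borel_measurable M"
  shows "(\<integral>\<^sup>+\<omega>. ennreal ((Dk p k G \<omega>)\<^sup>2) \<partial>M) \<le> (\<integral>\<^sup>+\<omega>. ennreal ((G \<omega>)\<^sup>2) \<partial>M)"
proof -
  have "(\<integral>\<^sup>+\<omega>. ennreal ((G \<omega>)\<^sup>2) \<partial>M) = (\<integral>\<^sup>+\<omega>. ennreal ((G (fun_upd \<omega> k True))\<^sup>2) * ennreal (p k)
      + ennreal ((G (fun_upd \<omega> k False))\<^sup>2) * ennreal (1 - p k) \<partial>M)"
    by (rule resample_nn) measurable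
  also have "\<dots> = (\<integral>\<^sup>+\<omega>. ennreal (p k * (G (fun_upd \<omega> k True))\<^sup>2 + (1 - p k) * (G (fun_upd \<omega> k False))\<^sup>2) \<partial>M)"
  proof (intro nn_integral_cong)
    fix \<omega>
    have a: "0 \<le> p k" "0 \<le> 1 - p k" using pp[of k] by auto
    show "ennreal ((G (fun_upd \<omega> k True))\<^sup>2) * ennreal (p k) + ennreal ((G (fun_upd \<omega> k False))\<^sup>2) * ennreal (1 - p k) =
      ennreal (p k * (G (fun_upd \<omega> k True))\<^sup>2 + (1 - p k) * (G (fun_upd \<omega> k False))\<^sup>2)"
      using a by (simp add: ennreal_mult'[symmetric] ennreal_plus[symmetric] mult.commute del: ennreal_plus)
  qed
  finally show ?thesis
    by (auto intro!: nn_integral_mono ennreal_leI Dk_sq_le)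
qed

lemma L2_iff: "L2 p G \<longleftrightarrow> G \<in> borel_measurable M \<and> (\<integral>\<^sup>+\<omega>. ennreal ((G \<omega>)\<^sup>2) \<partial>M) < \<infinity>"
  unfolding L2_def by (auto simp: integrable_iff_bounded)

lemma L2_meas: "L2 p G \<Longrightarrow> G \<in> borel_measurable M" by (simp add: L2_def)

lemma L2_Dk: "L2 p G \<Longrightarrow> L2 p (Dk p k G)"
  unfolding L2_iff using Dk_nn[of G k] Dk_meas[of G k] by auto

lemma L2_int: "L2 p G \<Longrightarrow> integrable M G"
  unfolding L2_def by (auto intro: P.square_integrable_imp_integrable)

lemma L2_mult_int:
  assumes "L2 p G" "L2 p K"
  shows "integrable M (\<lambda>\<omega>. G \<omega> * K \<omega>)"
proof -
  have i: "integrable M (\<lambda>\<omega>. (G \<omega>)\<^sup>2 + (K \<omega>)\<^sup>2)" using assms unfolding L2_def by auto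
  show ?thesis
  proof (rule Bochner_Integration.integrable_bound[OF i])
  show "(\<lambda>\<omega>. G \<omega> * K \<omega>) \<in> borel_measurable M" using assms unfolding L2_def by auto
  show "AE x in M. norm (G x * K x) \<le> norm ((G x)\<^sup>2 + (K x)\<^sup>2)"
  proof (intro AE_I2)
    fix x
    have "\<bar>G x * K x\<bar> \<le> (G x)\<^sup>2 + (K x)\<^sup>2"
    proof -
      have "0 \<le> (\<bar>G x\<bar> - \<bar>K x\<bar>)\<^sup>2" by simp
      then have "2 * (\<bar>G x\<bar> * \<bar>K x\<bar>) \<le> (G x)\<^sup>2 + (K x)\<^sup>2"
        by (simp add: power2_eq_square algebra_simps)
      moreover have "\<bar>G x\<bar> * \<bar>K x\<bar> \<ge> 0" by simp
      ultimately show ?thesis unfolding abs_mult by linarith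
    qed
    then show "norm (G x * K x) \<le> norm ((G x)\<^sup>2 + (K x)\<^sup>2)" by simp
  qed
  qed
qed

lemma L2_add: "L2 p G \<Longrightarrow> L2 p K \<Longrightarrow> L2 p (\<lambda>\<omega>. G \<omega> + K \<omega>)"
proof -
  assume a: "L2 p G" "L2 p K"
  have "integrable M (\<lambda>\<omega>. G \<omega> * K \<omega>)" by (rule L2_mult_int[OF a])
  then have "integrable M (\<lambda>\<omega>. (G \<omega>)\<^sup>2 + (K \<omega>)\<^sup>2 + 2 * (G \<omega> * K \<omega>))"
    using a unfolding L2_def by (intro Bochner_Integration.integrable_add Bochner_Integration.integrable_mult_right) auto
  then show ?thesis using a unfolding L2_def power2_sum by (auto simp: mult.assoc)
qed

lemma L2_scale: "L2 p G \<Longrightarrow> L2 p (\<lambda>\<omega>. a * G \<omega>)"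
  unfolding L2_def power_mult_distrib by auto

lemma L2_diff: "L2 p G \<Longrightarrow> L2 p K \<Longrightarrow> L2 p (\<lambda>\<omega>. G \<omega> - K \<omega>)"
  using L2_add[of G "\<lambda>\<omega>. (-1) * K \<omega>"] L2_scale[of K "-1"] by simp

lemma L2_bounded: "G \<in> borel_measurable M \<Longrightarrow> (\<And>\<omega>. \<bar>G \<omega>\<bar> \<le> C) \<Longrightarrow> L2 p G"
  unfolding L2_def
proof (intro conjI P.integrable_const_bound[where B="C\<^sup>2"] AE_I2)
  fix x assume "G \<in> borel_measurable M" "\<And>\<omega>. \<bar>G \<omega>\<bar> \<le> C"
  then have "\<bar>G x\<bar> \<le> C" by auto
  then have "\<bar>G x\<bar>\<^sup>2 \<le> C\<^sup>2" by (intro power_mono) auto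
  then show "norm ((G x)\<^sup>2) \<le> C\<^sup>2" by simp
qed (auto intro!: borel_measurable_power)

lemma L2_sum: "finite S \<Longrightarrow> (\<And>i. i \<in> S \<Longrightarrow> L2 p (G i)) \<Longrightarrow> L2 p (\<lambda>\<omega>. \<Sum>i\<in>S. G i \<omega>)"
proof (induction S rule: finite_induct)
  case empty then show ?case by (auto intro: L2_bounded[where C=0])
next
  case (insert x F) then show ?case by (auto intro!: L2_add)
qed

end

definition monoS :: "(nat \<Rightarrow> real) \<Rightarrow> nat set \<Rightarrow> (nat \<Rightarrow> bool) \<Rightarrow> real" where
  "monoS p S \<omega> = (\<Prod>i\<in>S. Yr p i \<omega>)"

definition Tset :: "nat \<Rightarrow> nat \<Rightarrow> nat list set" where
  "Tset n N = {is. length is = n \<and> distinct is \<and> set is \<subseteq> {..<N}}"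

definition hpoly :: "(nat \<Rightarrow> real) \<Rightarrow> nat \<Rightarrow> nat \<Rightarrow> ((nat \<Rightarrow> bool) \<Rightarrow> real) \<Rightarrow> bool" where
  "hpoly p n N P \<longleftrightarrow> (\<exists>c. \<forall>\<omega>. P \<omega> = (\<Sum>is\<in>Tset n N. c is * monoS p (set is) \<omega>))"

lemma finite_Tset: "finite (Tset n N)"
proof -
  have "Tset n N \<subseteq> {xs. set xs \<subseteq> {..<N} \<and> length xs = n}" unfolding Tset_def by auto
  then show ?thesis using finite_lists_length_eq[of "{..<N}" n] finite_subset by auto
qed

lemma integrable_mult_bdd:
  fixes G R :: "'a \<Rightarrow> real"
  assumes "integrable M G" "R \<in> borel_measurable M" "\<And>x. \<bar>R x\<bar> \<le> C"
  shows "integrable M (\<lambda>x. G x * R x)"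
proof (rule Bochner_Integration.integrable_bound[where f="\<lambda>x. C * G x"])
  show "integrable M (\<lambda>x. C * G x)" using assms by auto
  show "(\<lambda>x. G x * R x) \<in> borel_measurable M" using assms by auto
  show "AE x in M. norm (G x * R x) \<le> norm (C * G x)"
  proof (intro AE_I2)
    fix x
    have "\<bar>R x\<bar> * \<bar>G x\<bar> \<le> C * \<bar>G x\<bar>" using assms(3)[of x] by (intro mult_right_mono) auto
    moreover have "C \<ge> 0" using assms(3)[of x] by linarith
    ultimately show "norm (G x * R x) \<le> norm (C * G x)" by (simp add: abs_mult mult.commute)
  qed
qed

lemma div_helper1: "(x::real) > 0 \<Longrightarrow> (1 - a) / x - (- a / x) = 1 / x"
  by (simp add: field_simps)

lemma div_helper2: "(x::real) > 0 \<Longrightarrow> x * x = q \<Longrightarrow> q / x = x"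
  by (simp add: field_simps)

context rad begin

lemma Yr_eq: "Yr p k \<omega> = (if \<omega> k then (1 - p k) / cc k else - p k / cc k)"
proof -
  have c: "cc k > 0" by (rule cc_pos)
  have "2 * cc k \<noteq> 0" using c by linarith
  then show ?thesis using pp[of k] unfolding Yr_def Xr_def by (auto simp: field_simps)
qed

lemma Yr_bound: "\<bar>Yr p k \<omega>\<bar> \<le> 1 / cc k"
  using pp[of k] cc_pos[of k] unfolding Yr_eq by (auto simp: divide_right_mono abs_div_pos)

lemma comp_meas: "(\<lambda>\<omega>. \<omega> k) \<in> measurable M (count_space UNIV)"
proof -
  have "(\<lambda>\<omega>. \<omega> k) \<in> measurable M (B k)"
    unfolding Mrad_def by (rule measurable_component_singleton) auto
  moreover have "measurable M (B k) = measurable M (count_space UNIV)"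
    by (rule measurable_cong_sets) auto
  ultimately show ?thesis by simp
qed

lemma Yr_meas[measurable]: "(\<lambda>\<omega>. Yr p k \<omega>) \<in> borel_measurable M"
proof -
  have "(\<lambda>b. if b then (1 - p k) / cc k else - p k / cc k) \<circ> (\<lambda>\<omega>. \<omega> k) \<in> borel_measurable M"
    by (rule measurable_comp[OF comp_meas]) auto
  then show ?thesis by (simp add: Yr_eq[abs_def] comp_def)
qed

lemma monoS_meas[measurable]: "(\<lambda>\<omega>. monoS p S \<omega>) \<in> borel_measurable M"
  unfolding monoS_def by measurable

lemma monoS_bound: "\<bar>monoS p S \<omega>\<bar> \<le> (\<Prod>i\<in>S. 1 / cc i)"
  unfolding monoS_def abs_prod by (intro prod_mono) (auto simp: Yr_bound)

lemma Yr_upd_other: "i \<noteq> k \<Longrightarrow> Yr p i (fun_upd \<omega> k b) = Yr p i \<omega>"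
  unfolding Yr_eq by simp

lemma monoS_upd_notin: "k \<notin> S \<Longrightarrow> monoS p S (fun_upd \<omega> k b) = monoS p S \<omega>"
  unfolding monoS_def by (rule prod.cong[OF refl]) (metis Yr_upd_other)

lemma monoS_split: "finite S \<Longrightarrow> k \<in> S \<Longrightarrow> monoS p S \<omega> = Yr p k \<omega> * monoS p (S - {k}) \<omega>"
  unfolding monoS_def by (simp add: prod.remove)

lemma Dk_monoS_in:
  assumes S: "finite S" "k \<in> S"
  shows "Dk p k (monoS p S) \<omega> = monoS p (S - {k}) \<omega>"
proof -
  have c: "cc k > 0" by (rule cc_pos)
  have "Dk p k (monoS p S) \<omega> = cc k * (Yr p k (fun_upd \<omega> k True) - Yr p k (fun_upd \<omega> k False)) * monoS p (S - {k}) \<omega>"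
    unfolding Dk_def using S by (simp add: monoS_split[OF S] monoS_upd_notin algebra_simps)
  also have "Yr p k (fun_upd \<omega> k True) - Yr p k (fun_upd \<omega> k False) = 1 / cc k"
    unfolding Yr_eq using div_helper1[OF c, of "p k"] by simp
  finally show ?thesis using c by (metis mult_1 nonzero_mult_div_cancel_left order_less_irrefl times_divide_eq_right)
qed

lemma Dk_monoS_notin: "k \<notin> S \<Longrightarrow> Dk p k (monoS p S) \<omega> = 0"
  by (rule Dk_indep) (simp add: monoS_upd_notin)

lemma L2_monoS: "L2 p (monoS p S)"
  by (rule L2_bounded[OF _ monoS_bound]) (use monoS_meas in simp)

lemma dual_monoS:
  assumes G: "L2 p G" and S: "finite S" "k \<in> S"
  shows "(\<integral>\<omega>. G \<omega> * monoS p S \<omega> \<partial>M) = (\<integral>\<omega>. Dk p k G \<omega> * monoS p (S - {k}) \<omega> \<partial>M)"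
proof -
  have c: "cc k > 0" by (rule cc_pos)
  have cc2: "cc k * cc k = p k * (1 - p k)" using pp[of k] by (simp add: real_sqrt_mult_self)
  have i: "integrable M (\<lambda>\<omega>. G \<omega> * monoS p S \<omega>)"
    by (rule integrable_mult_bdd[OF L2_int[OF G] monoS_meas monoS_bound])
  have "(\<integral>\<omega>. G \<omega> * monoS p S \<omega> \<partial>M) =
     (\<integral>\<omega>. G (fun_upd \<omega> k True) * monoS p S (fun_upd \<omega> k True) * p k +
          G (fun_upd \<omega> k False) * monoS p S (fun_upd \<omega> k False) * (1 - p k) \<partial>M)"
    by (rule resample_int(2)[OF i])
  also have "\<dots> = (\<integral>\<omega>. Dk p k G \<omega> * monoS p (S - {k}) \<omega> \<partial>M)"
  proof (intro Bochner_Integration.integral_cong refl)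
    fix \<omega>
    have a: "p k * ((1 - p k) / cc k) = cc k" using div_helper2[OF c cc2] by (simp add: times_divide_eq_right)
    have b: "(1 - p k) * (p k / cc k) = cc k" using div_helper2[OF c cc2] by (simp add: times_divide_eq_right mult.commute)
    show "G (fun_upd \<omega> k True) * monoS p S (fun_upd \<omega> k True) * p k +
          G (fun_upd \<omega> k False) * monoS p S (fun_upd \<omega> k False) * (1 - p k) =
          Dk p k G \<omega> * monoS p (S - {k}) \<omega>"
    proof -
      define c where "c = cc k"
      define R where "R = monoS p (S - {k}) \<omega>"
      have R: "monoS p (S - {k}) (fun_upd \<omega> k b) = R" for b unfolding R_def using S by (simp add: monoS_upd_notin)
      have yt: "Yr p k (fun_upd \<omega> k True) = (1 - p k) / c" unfolding Yr_eq c_def by simp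
      have yf: "Yr p k (fun_upd \<omega> k False) = - p k / c" unfolding Yr_eq c_def by simp
      have d: "Dk p k G \<omega> = c * (G (fun_upd \<omega> k True) - G (fun_upd \<omega> k False))" unfolding Dk_def c_def by simp
      have a': "p k * ((1 - p k) / c) = c" using a unfolding c_def .
      have b': "(1 - p k) * (p k / c) = c" using b unfolding c_def .
      show ?thesis
        unfolding monoS_split[OF S, of "fun_upd \<omega> k True"] monoS_split[OF S, of "fun_upd \<omega> k False"] R yt yf d
        R_def[symmetric]
      proof -
        have "G (fun_upd \<omega> k True) * ((1 - p k) / c * R) * p k + G (fun_upd \<omega> k False) * (- p k / c * R) * (1 - p k)
          = G (fun_upd \<omega> k True) * R * (p k * ((1 - p k) / c)) - G (fun_upd \<omega> k False) * R * ((1 - p k) * (p k / c))"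
          by (simp add: algebra_simps)
        also have "\<dots> = c * (G (fun_upd \<omega> k True) - G (fun_upd \<omega> k False)) * R" unfolding a' b' by (simp add: algebra_simps)
        finally show "G (fun_upd \<omega> k True) * ((1 - p k) / c * R) * p k + G (fun_upd \<omega> k False) * (- p k / c * R) * (1 - p k) =
            c * (G (fun_upd \<omega> k True) - G (fun_upd \<omega> k False)) * R" .
      qed
    qed
  qed
  finally show ?thesis .
qed

end

context rad begin

lemma Dk_monoS: "finite S \<Longrightarrow> Dk p k (monoS p S) \<omega> = (if k \<in> S then monoS p (S - {k}) \<omega> else 0)"
  using Dk_monoS_in Dk_monoS_notin by auto

lemma dual_monoS_sum:
  assumes G: "L2 p G" and S: "finite S" "S \<subseteq> {..<N}"
  shows "real (card S) * (\<integral>\<omega>. G \<omega> * monoS p S \<omega> \<partial>M) = (\<Sum>k<N. \<integral>\<omega>. Dk p k G \<omega> * Dk p k (monoS p S) \<omega> \<partial>M)"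
proof -
  have "(\<Sum>k<N. \<integral>\<omega>. Dk p k G \<omega> * Dk p k (monoS p S) \<omega> \<partial>M) =
        (\<Sum>k<N. if k \<in> S then (\<integral>\<omega>. Dk p k G \<omega> * monoS p (S - {k}) \<omega> \<partial>M) else 0)"
    by (intro sum.cong refl) (simp add: Dk_monoS[OF S(1)])
  also have "\<dots> = (\<Sum>k\<in>S. \<integral>\<omega>. Dk p k G \<omega> * monoS p (S - {k}) \<omega> \<partial>M)"
  proof -
    have "S \<inter> {..<N} = S" "{..<N} \<inter> S = S" using S by auto
    then show ?thesis by (simp add: sum.If_cases)
  qed
  also have "\<dots> = (\<Sum>k\<in>S. \<integral>\<omega>. G \<omega> * monoS p S \<omega> \<partial>M)"
    by (intro sum.cong refl) (simp add: dual_monoS[OF G S(1)])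
  finally show ?thesis by simp
qed

lemma hpoly_eq: "hpoly p n N P \<Longrightarrow> \<exists>c. P = (\<lambda>\<omega>. \<Sum>xs\<in>Tset n N. c xs * monoS p (set xs) \<omega>)"
  unfolding hpoly_def by auto

lemma L2_hpoly: "hpoly p n N P \<Longrightarrow> L2 p P"
  using hpoly_eq[of n N P]
  by (auto intro!: L2_sum L2_scale finite_Tset L2_monoS)

lemma hpoly_Dk_zero: "hpoly p n N P \<Longrightarrow> N \<le> k \<Longrightarrow> Dk p k P \<omega> = 0"
proof -
  assume "hpoly p n N P" "N \<le> k"
  then obtain c where P: "P = (\<lambda>\<omega>. \<Sum>xs\<in>Tset n N. c xs * monoS p (set xs) \<omega>)" using hpoly_eq by blast
  show ?thesis unfolding P
  proof (rule Dk_indep)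
    fix \<omega> b
    show "(\<Sum>xs\<in>Tset n N. c xs * monoS p (set xs) (fun_upd \<omega> k b)) = (\<Sum>xs\<in>Tset n N. c xs * monoS p (set xs) \<omega>)"
    proof (intro sum.cong refl)
      fix xs assume "xs \<in> Tset n N"
      then have "k \<notin> set xs" using \<open>N \<le> k\<close> by (auto simp: Tset_def)
      then show "c xs * monoS p (set xs) (fun_upd \<omega> k b) = c xs * monoS p (set xs) \<omega>" by (simp add: monoS_upd_notin)
    qed
  qed
qed

lemma hpoly_mono: "hpoly p n N P \<Longrightarrow> N \<le> N' \<Longrightarrow> hpoly p n N' P"
proof -
  assume "hpoly p n N P" "N \<le> N'"
  then obtain c where P: "P = (\<lambda>\<omega>. \<Sum>xs\<in>Tset n N. c xs * monoS p (set xs) \<omega>)" using hpoly_eq by blast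
  define c' where "c' xs = (if xs \<in> Tset n N then c xs else 0)" for xs
  have sub: "Tset n N \<subseteq> Tset n N'" using \<open>N \<le> N'\<close> by (auto simp: Tset_def)
  have "P \<omega> = (\<Sum>xs\<in>Tset n N'. c' xs * monoS p (set xs) \<omega>)" for \<omega>
  proof -
    have "(\<Sum>xs\<in>Tset n N'. c' xs * monoS p (set xs) \<omega>) = (\<Sum>xs\<in>Tset n N. c' xs * monoS p (set xs) \<omega>)"
      by (rule sum.mono_neutral_right[OF finite_Tset sub]) (auto simp: c'_def)
    also have "\<dots> = P \<omega>" unfolding P c'_def by simp
    finally show ?thesis by simp
  qed
  then show ?thesis unfolding hpoly_def by (intro exI[of _ c']) auto
qed

lemma hpoly_diff: "hpoly p n N P \<Longrightarrow> hpoly p n N Q \<Longrightarrow> hpoly p n N (\<lambda>\<omega>. P \<omega> - Q \<omega>)"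
proof -
  assume "hpoly p n N P" "hpoly p n N Q"
  then obtain c where P: "P = (\<lambda>\<omega>. \<Sum>xs\<in>Tset n N. c xs * monoS p (set xs) \<omega>)"
    using hpoly_eq by blast
  obtain d where Q: "Q = (\<lambda>\<omega>. \<Sum>xs\<in>Tset n N. d xs * monoS p (set xs) \<omega>)"
    using hpoly_eq \<open>hpoly p n N Q\<close> by blast
  have "P \<omega> - Q \<omega> = (\<Sum>xs\<in>Tset n N. (c xs - d xs) * monoS p (set xs) \<omega>)" for \<omega>
    unfolding P Q by (simp add: sum_subtractf left_diff_distrib)
  then show ?thesis unfolding hpoly_def by (intro exI[of _ "\<lambda>xs. c xs - d xs"]) auto
qed

lemma Jtrunc_hpoly: "hpoly p n N (Jtrunc p n f N)"
proof -
  have "Jtrunc p n f N \<omega> = (\<Sum>xs\<in>Tset n N. f xs * monoS p (set xs) \<omega>)" for \<omega>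
    unfolding Jtrunc_def Tset_def monoS_def
    by (intro sum.cong refl) (auto simp: prod.distinct_set_conv_list)
  then show ?thesis unfolding hpoly_def by (intro exI[of _ f]) auto
qed

lemma hpoly_dual:
  assumes P: "hpoly p n N P" and G: "L2 p G"
  shows "integrable M (\<lambda>\<omega>. \<Sum>k<N. Dk p k G \<omega> * Dk p k P \<omega>)"
    and "real n * (\<integral>\<omega>. G \<omega> * P \<omega> \<partial>M) = (\<integral>\<omega>. (\<Sum>k<N. Dk p k G \<omega> * Dk p k P \<omega>) \<partial>M)"
proof -
  obtain c where Pe: "P = (\<lambda>\<omega>. \<Sum>xs\<in>Tset n N. c xs * monoS p (set xs) \<omega>)" using hpoly_eq[OF P] by blast
  have DP: "Dk p k P \<omega> = (\<Sum>xs\<in>Tset n N. c xs * Dk p k (monoS p (set xs)) \<omega>)" for k \<omega>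
    unfolding Pe by (simp add: Dk_sum Dk_scale)
  have iDD: "integrable M (\<lambda>\<omega>. Dk p k G \<omega> * Dk p k (monoS p S) \<omega>)" for k S
    by (rule L2_mult_int[OF L2_Dk[OF G] L2_Dk[OF L2_monoS]])
  have iGm: "integrable M (\<lambda>\<omega>. G \<omega> * monoS p S \<omega>)" for S
    by (rule L2_mult_int[OF G L2_monoS])
  have eq1: "(\<lambda>\<omega>. \<Sum>k<N. Dk p k G \<omega> * Dk p k P \<omega>) =
     (\<lambda>\<omega>. \<Sum>k<N. \<Sum>xs\<in>Tset n N. c xs * (Dk p k G \<omega> * Dk p k (monoS p (set xs)) \<omega>))"
    unfolding DP by (simp add: sum_distrib_left algebra_simps)
  show "integrable M (\<lambda>\<omega>. \<Sum>k<N. Dk p k G \<omega> * Dk p k P \<omega>)"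
    unfolding eq1 by (intro Bochner_Integration.integrable_sum Bochner_Integration.integrable_mult_right iDD)
  have "real n * (\<integral>\<omega>. G \<omega> * P \<omega> \<partial>M) = real n * (\<integral>\<omega>. (\<Sum>xs\<in>Tset n N. c xs * (G \<omega> * monoS p (set xs) \<omega>)) \<partial>M)"
    unfolding Pe by (simp add: sum_distrib_left algebra_simps)
  also have "\<dots> = (\<Sum>xs\<in>Tset n N. c xs * (real n * (\<integral>\<omega>. G \<omega> * monoS p (set xs) \<omega> \<partial>M)))"
  proof -
    have "(\<integral>\<omega>. (\<Sum>xs\<in>Tset n N. c xs * (G \<omega> * monoS p (set xs) \<omega>)) \<partial>M) =
        (\<Sum>xs\<in>Tset n N. (\<integral>\<omega>. c xs * (G \<omega> * monoS p (set xs) \<omega>) \<partial>M))"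
      by (rule Bochner_Integration.integral_sum) (auto intro!: Bochner_Integration.integrable_mult_right iGm)
    also have "\<dots> = (\<Sum>xs\<in>Tset n N. c xs * (\<integral>\<omega>. G \<omega> * monoS p (set xs) \<omega> \<partial>M))"
      by simp
    finally show ?thesis by (simp add: sum_distrib_left algebra_simps)
  qed
  also have "\<dots> = (\<Sum>xs\<in>Tset n N. c xs * (\<Sum>k<N. \<integral>\<omega>. Dk p k G \<omega> * Dk p k (monoS p (set xs)) \<omega> \<partial>M))"
  proof (intro sum.cong refl arg_cong2[where f="(*)"])
    fix xs assume "xs \<in> Tset n N"
    then have "card (set xs) = n" "set xs \<subseteq> {..<N}" by (auto simp: Tset_def distinct_card)
    then show "real n * (\<integral>\<omega>. G \<omega> * monoS p (set xs) \<omega> \<partial>M) = (\<Sum>k<N. \<integral>\<omega>. Dk p k G \<omega> * Dk p k (monoS p (set xs)) \<omega> \<partial>M)"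
      using dual_monoS_sum[OF G, of "set xs" N] by simp
  qed
  also have "\<dots> = (\<integral>\<omega>. (\<Sum>k<N. \<Sum>xs\<in>Tset n N. c xs * (Dk p k G \<omega> * Dk p k (monoS p (set xs)) \<omega>)) \<partial>M)"
  proof -
    have "(\<integral>\<omega>. (\<Sum>k<N. \<Sum>xs\<in>Tset n N. c xs * (Dk p k G \<omega> * Dk p k (monoS p (set xs)) \<omega>)) \<partial>M)
       = (\<Sum>k<N. (\<integral>\<omega>. (\<Sum>xs\<in>Tset n N. c xs * (Dk p k G \<omega> * Dk p k (monoS p (set xs)) \<omega>)) \<partial>M))"
      by (rule Bochner_Integration.integral_sum) (auto intro!: Bochner_Integration.integrable_sum Bochner_Integration.integrable_mult_right iDD)
    also have "\<dots> = (\<Sum>k<N. \<Sum>xs\<in>Tset n N. (\<integral>\<omega>. c xs * (Dk p k G \<omega> * Dk p k (monoS p (set xs)) \<omega>) \<partial>M))"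
      by (intro sum.cong refl Bochner_Integration.integral_sum) (auto intro!: Bochner_Integration.integrable_mult_right iDD)
    also have "\<dots> = (\<Sum>k<N. \<Sum>xs\<in>Tset n N. c xs * (\<integral>\<omega>. Dk p k G \<omega> * Dk p k (monoS p (set xs)) \<omega> \<partial>M))"
      by simp
    also have "\<dots> = (\<Sum>xs\<in>Tset n N. c xs * (\<Sum>k<N. \<integral>\<omega>. Dk p k G \<omega> * Dk p k (monoS p (set xs)) \<omega> \<partial>M))"
      by (subst sum.swap) (simp add: sum_distrib_left)
    finally show ?thesis by simp
  qed
  also have "\<dots> = (\<integral>\<omega>. (\<Sum>k<N. Dk p k G \<omega> * Dk p k P \<omega>) \<partial>M)"
    unfolding eq1 ..
  finally show "real n * (\<integral>\<omega>. G \<omega> * P \<omega> \<partial>M) = (\<integral>\<omega>. (\<Sum>k<N. Dk p k G \<omega> * Dk p k P \<omega>) \<partial>M)" .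
qed

end

definition Dn :: "'a measure \<Rightarrow> (nat \<Rightarrow> 'a \<Rightarrow> real) \<Rightarrow> ennreal" where
  "Dn M U = (\<integral>\<^sup>+\<omega>. (\<Sum>k. ennreal ((U k \<omega>)\<^sup>2)) \<partial>M)"

definition nrm :: "'a measure \<Rightarrow> ('a \<Rightarrow> real) \<Rightarrow> ennreal" where
  "nrm M X = (\<integral>\<^sup>+\<omega>. ennreal ((X \<omega>)\<^sup>2) \<partial>M)"

lemma amgm_pt:
  fixes u v e :: real
  assumes e: "e > 0"
  shows "\<bar>u * v\<bar> \<le> e / 2 * u\<^sup>2 + 1 / (2 * e) * v\<^sup>2"
proof -
  have "0 \<le> (e * \<bar>u\<bar> - \<bar>v\<bar>)\<^sup>2 / (2 * e)" using e by simp
  also have "(e * \<bar>u\<bar> - \<bar>v\<bar>)\<^sup>2 / (2 * e) = e / 2 * \<bar>u\<bar>\<^sup>2 + 1 / (2 * e) * \<bar>v\<bar>\<^sup>2 - \<bar>u\<bar> * \<bar>v\<bar>"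
    using e by (simp add: field_simps power2_eq_square)
  finally show ?thesis by (simp add: abs_mult)
qed

lemma amgm_Dn:
  assumes U: "\<And>k. U k \<in> borel_measurable M" and V: "\<And>k. V k \<in> borel_measurable M" and e: "e > 0"
  shows "(\<integral>\<^sup>+\<omega>. (\<Sum>k. ennreal \<bar>U k \<omega> * V k \<omega>\<bar>) \<partial>M) \<le> ennreal (e / 2) * Dn M U + ennreal (1 / (2 * e)) * Dn M V"
proof -
  have "(\<integral>\<^sup>+\<omega>. (\<Sum>k. ennreal \<bar>U k \<omega> * V k \<omega>\<bar>) \<partial>M) \<le>
      (\<integral>\<^sup>+\<omega>. ennreal (e / 2) * (\<Sum>k. ennreal ((U k \<omega>)\<^sup>2)) + ennreal (1 / (2 * e)) * (\<Sum>k. ennreal ((V k \<omega>)\<^sup>2)) \<partial>M)"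
  proof (intro nn_integral_mono)
    fix \<omega>
    have "(\<Sum>k. ennreal \<bar>U k \<omega> * V k \<omega>\<bar>) \<le> (\<Sum>k. ennreal (e / 2) * ennreal ((U k \<omega>)\<^sup>2) + ennreal (1 / (2 * e)) * ennreal ((V k \<omega>)\<^sup>2))"
    proof (intro suminf_le summableI)
      fix k
      have "\<bar>U k \<omega> * V k \<omega>\<bar> \<le> e / 2 * (U k \<omega>)\<^sup>2 + 1 / (2 * e) * (V k \<omega>)\<^sup>2" by (rule amgm_pt[OF e])
      then show "ennreal \<bar>U k \<omega> * V k \<omega>\<bar> \<le> ennreal (e / 2) * ennreal ((U k \<omega>)\<^sup>2) + ennreal (1 / (2 * e)) * ennreal ((V k \<omega>)\<^sup>2)"
        using e by (simp add: ennreal_mult[symmetric] ennreal_plus[symmetric] del: ennreal_plus)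
    qed
    also have "\<dots> = ennreal (e / 2) * (\<Sum>k. ennreal ((U k \<omega>)\<^sup>2)) + ennreal (1 / (2 * e)) * (\<Sum>k. ennreal ((V k \<omega>)\<^sup>2))"
      by (subst suminf_add[symmetric]) (auto intro: summableI)
    finally show "(\<Sum>k. ennreal \<bar>U k \<omega> * V k \<omega>\<bar>) \<le> \<dots>" .
  qed
  also have "\<dots> = ennreal (e / 2) * Dn M U + ennreal (1 / (2 * e)) * Dn M V"
    unfolding Dn_def using U V
    by (subst nn_integral_add) (auto intro!: borel_measurable_suminf_order simp: nn_integral_cmult)
  finally show ?thesis .
qed

lemma Dn_AE_summable:
  assumes U: "\<And>k. U k \<in> borel_measurable M" and f: "Dn M U < \<infinity>"
  shows "AE \<omega> in M. summable (\<lambda>k. (U k \<omega>)\<^sup>2)"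
proof -
  have "AE \<omega> in M. (\<Sum>k. ennreal ((U k \<omega>)\<^sup>2)) \<noteq> \<infinity>"
    using f U unfolding Dn_def by (intro nn_integral_PInf_AE) auto
  then show ?thesis by eventually_elim (auto intro: summable_suminf_not_top)
qed

lemma summable_prod_sq:
  fixes u v :: "nat \<Rightarrow> real"
  assumes "summable (\<lambda>k. (u k)\<^sup>2)" "summable (\<lambda>k. (v k)\<^sup>2)"
  shows "summable (\<lambda>k. \<bar>u k * v k\<bar>)"
proof (rule summable_comparison_test)
  show "\<exists>N. \<forall>n\<ge>N. norm \<bar>u n * v n\<bar> \<le> 1 / 2 * (u n)\<^sup>2 + 1 / 2 * (v n)\<^sup>2"
    using amgm_pt[of 1] by auto
  show "summable (\<lambda>n. 1 / 2 * (u n)\<^sup>2 + 1 / 2 * (v n)\<^sup>2)"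
    using assms by (intro summable_add summable_mult) auto
qed

lemma ipair_int:
  assumes U: "\<And>k. U k \<in> borel_measurable M" and V: "\<And>k. V k \<in> borel_measurable M"
    and fU: "Dn M U < \<infinity>" and fV: "Dn M V < \<infinity>"
  shows "integrable M (\<lambda>\<omega>. ipair (\<lambda>k. U k \<omega>) (\<lambda>k. V k \<omega>))"
    and "AE \<omega> in M. summable (\<lambda>k. \<bar>U k \<omega> * V k \<omega>\<bar>)"
    and "(\<integral>\<^sup>+\<omega>. norm (ipair (\<lambda>k. U k \<omega>) (\<lambda>k. V k \<omega>)) \<partial>M) \<le> (\<integral>\<^sup>+\<omega>. (\<Sum>k. ennreal \<bar>U k \<omega> * V k \<omega>\<bar>) \<partial>M)"
proof -
  show sm: "AE \<omega> in M. summable (\<lambda>k. \<bar>U k \<omega> * V k \<omega>\<bar>)"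
    using Dn_AE_summable[OF U fU] Dn_AE_summable[OF V fV]
    by eventually_elim (rule summable_prod_sq)
  have meas: "(\<lambda>\<omega>. ipair (\<lambda>k. U k \<omega>) (\<lambda>k. V k \<omega>)) \<in> borel_measurable M"
    unfolding ipair_def using U V by (intro borel_measurable_suminf) auto
  show le: "(\<integral>\<^sup>+\<omega>. norm (ipair (\<lambda>k. U k \<omega>) (\<lambda>k. V k \<omega>)) \<partial>M) \<le> (\<integral>\<^sup>+\<omega>. (\<Sum>k. ennreal \<bar>U k \<omega> * V k \<omega>\<bar>) \<partial>M)"
  proof (intro nn_integral_mono_AE)
    show "AE \<omega> in M. ennreal (norm (ipair (\<lambda>k. U k \<omega>) (\<lambda>k. V k \<omega>))) \<le> (\<Sum>k. ennreal \<bar>U k \<omega> * V k \<omega>\<bar>)"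
      using sm
    proof eventually_elim
      case (elim \<omega>)
      have h1: "norm (ipair (\<lambda>k. U k \<omega>) (\<lambda>k. V k \<omega>)) \<le> (\<Sum>k. \<bar>U k \<omega> * V k \<omega>\<bar>)"
        unfolding ipair_def using elim by (simp add: summable_rabs)
      have h2: "ennreal (\<Sum>k. \<bar>U k \<omega> * V k \<omega>\<bar>) = (\<Sum>k. ennreal \<bar>U k \<omega> * V k \<omega>\<bar>)"
        using elim by (intro suminf_ennreal2[symmetric]) auto
      have "ennreal (norm (ipair (\<lambda>k. U k \<omega>) (\<lambda>k. V k \<omega>))) \<le> ennreal (\<Sum>k. \<bar>U k \<omega> * V k \<omega>\<bar>)"
        by (rule ennreal_leI[OF h1])
      then show ?case unfolding h2 .
    qed
  qed
  have "(\<integral>\<^sup>+\<omega>. (\<Sum>k. ennreal \<bar>U k \<omega> * V k \<omega>\<bar>) \<partial>M) \<le> ennreal (1 / 2) * Dn M U + ennreal (1 / (2 * 1)) * Dn M V"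
    by (rule amgm_Dn[OF U V]) simp
  also have "\<dots> < \<infinity>"
  proof -
    have a: "ennreal (1 / 2) * Dn M U < \<infinity>" using fU
      using ennreal_mult_less_top[of "ennreal (1/2)" "Dn M U"] by (simp only: ennreal_less_top) simp
    have b: "ennreal (1 / (2 * 1)) * Dn M V < \<infinity>" using fV
      using ennreal_mult_less_top[of "ennreal (1/2)" "Dn M V"] by (simp only: ennreal_less_top) simp
    show ?thesis using a b by (simp add: less_top[symmetric] del: ennreal_1)
  qed
  finally show "integrable M (\<lambda>\<omega>. ipair (\<lambda>k. U k \<omega>) (\<lambda>k. V k \<omega>))"
    unfolding integrable_iff_bounded using meas le by auto
qed

lemma ipair_bound:
  assumes U: "\<And>k. U k \<in> borel_measurable M" and V: "\<And>k. V k \<in> borel_measurable M"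
    and fU: "Dn M U < \<infinity>" and fV: "Dn M V < \<infinity>" and e: "e > 0"
  shows "\<bar>\<integral>\<omega>. ipair (\<lambda>k. U k \<omega>) (\<lambda>k. V k \<omega>) \<partial>M\<bar> \<le> e / 2 * enn2real (Dn M U) + 1 / (2 * e) * enn2real (Dn M V)"
proof -
  have "ennreal \<bar>\<integral>\<omega>. ipair (\<lambda>k. U k \<omega>) (\<lambda>k. V k \<omega>) \<partial>M\<bar> \<le> (\<integral>\<^sup>+\<omega>. norm (ipair (\<lambda>k. U k \<omega>) (\<lambda>k. V k \<omega>)) \<partial>M)"
    using integral_norm_bound_ennreal[OF ipair_int(1)[OF U V fU fV]] by simp
  also have "\<dots> \<le> (\<integral>\<^sup>+\<omega>. (\<Sum>k. ennreal \<bar>U k \<omega> * V k \<omega>\<bar>) \<partial>M)" by (rule ipair_int(3)[OF U V fU fV])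
  also have "\<dots> \<le> ennreal (e / 2) * Dn M U + ennreal (1 / (2 * e)) * Dn M V" by (rule amgm_Dn[OF U V e])
  also have "\<dots> = ennreal (e / 2 * enn2real (Dn M U) + 1 / (2 * e) * enn2real (Dn M V))"
  proof -
    have u: "Dn M U = ennreal (enn2real (Dn M U))" using fU by simp
    have v: "Dn M V = ennreal (enn2real (Dn M V))" using fV by simp
    have "ennreal (e / 2) * ennreal (enn2real (Dn M U)) + ennreal (1 / (2 * e)) * ennreal (enn2real (Dn M V))
       = ennreal (e / 2 * enn2real (Dn M U) + 1 / (2 * e) * enn2real (Dn M V))"
    proof -
      have n1: "enn2real (Dn M U) \<ge> 0" "enn2real (Dn M V) \<ge> 0" by auto
      have "ennreal (e / 2) * ennreal (enn2real (Dn M U)) = ennreal (e / 2 * enn2real (Dn M U))"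
        using e n1 by (intro ennreal_mult[symmetric]) auto
      moreover have "ennreal (1 / (2 * e)) * ennreal (enn2real (Dn M V)) = ennreal (1 / (2 * e) * enn2real (Dn M V))"
        using e n1 by (intro ennreal_mult[symmetric]) auto
      moreover have "ennreal (e / 2 * enn2real (Dn M U)) + ennreal (1 / (2 * e) * enn2real (Dn M V)) =
          ennreal (e / 2 * enn2real (Dn M U) + 1 / (2 * e) * enn2real (Dn M V))"
        using e n1 by (intro ennreal_plus[symmetric]) auto
      ultimately show ?thesis by simp
    qed
    then show ?thesis using u v by metis
  qed
  finally show ?thesis using e by (subst (asm) ennreal_le_iff) (auto intro!: add_nonneg_nonneg mult_nonneg_nonneg enn2real_nonneg)
qed

lemma amgm_L2:
  fixes X Y :: "'a \<Rightarrow> real" and e :: real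
  assumes X: "integrable M (\<lambda>\<omega>. (X \<omega>)\<^sup>2)" and Y: "integrable M (\<lambda>\<omega>. (Y \<omega>)\<^sup>2)"
    and m: "X \<in> borel_measurable M" "Y \<in> borel_measurable M" and e: "e > 0"
  shows "\<bar>\<integral>\<omega>. X \<omega> * Y \<omega> \<partial>M\<bar> \<le> e / 2 * (\<integral>\<omega>. (X \<omega>)\<^sup>2 \<partial>M) + 1 / (2 * e) * (\<integral>\<omega>. (Y \<omega>)\<^sup>2 \<partial>M)"
proof -
  have i2: "integrable M (\<lambda>\<omega>. e / 2 * (X \<omega>)\<^sup>2 + 1 / (2 * e) * (Y \<omega>)\<^sup>2)" using X Y by auto
  have i1: "integrable M (\<lambda>\<omega>. X \<omega> * Y \<omega>)"
  proof (rule Bochner_Integration.integrable_bound[OF i2])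
    show "(\<lambda>\<omega>. X \<omega> * Y \<omega>) \<in> borel_measurable M" using m by auto
    show "AE x in M. norm (X x * Y x) \<le> norm (e / 2 * (X x)\<^sup>2 + 1 / (2 * e) * (Y x)\<^sup>2)"
    proof (intro AE_I2)
      fix x
      have h: "\<bar>X x * Y x\<bar> \<le> e / 2 * (X x)\<^sup>2 + 1 / (2 * e) * (Y x)\<^sup>2" by (rule amgm_pt[OF e])
      have "0 \<le> e / 2 * (X x)\<^sup>2 + 1 / (2 * e) * (Y x)\<^sup>2" using e by (intro add_nonneg_nonneg mult_nonneg_nonneg) auto
      then show "norm (X x * Y x) \<le> norm (e / 2 * (X x)\<^sup>2 + 1 / (2 * e) * (Y x)\<^sup>2)"
        using h by (simp only: real_norm_def abs_of_nonneg)
    qed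
  qed
  have "\<bar>\<integral>\<omega>. X \<omega> * Y \<omega> \<partial>M\<bar> \<le> (\<integral>\<omega>. \<bar>X \<omega> * Y \<omega>\<bar> \<partial>M)" by (rule integral_abs_bound)
  also have "\<dots> \<le> (\<integral>\<omega>. e / 2 * (X \<omega>)\<^sup>2 + 1 / (2 * e) * (Y \<omega>)\<^sup>2 \<partial>M)"
    using i1 i2 amgm_pt[OF e] by (intro integral_mono) auto
  also have "\<dots> = e / 2 * (\<integral>\<omega>. (X \<omega>)\<^sup>2 \<partial>M) + 1 / (2 * e) * (\<integral>\<omega>. (Y \<omega>)\<^sup>2 \<partial>M)"
    using X Y by simp
  finally show ?thesis .
qed

lemma lim_zero_amgm:
  fixes x b :: "nat \<Rightarrow> real"
  assumes a: "a \<ge> 0" and b: "b \<longlonglongrightarrow> 0" and bd: "\<And>N e. e > 0 \<Longrightarrow> \<bar>x N\<bar> \<le> e * a + b N / e"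
  shows "x \<longlonglongrightarrow> 0"
proof (rule LIMSEQ_I)
  fix r :: real assume r: "r > 0"
  define e where "e = r / (2 * (a + 1))"
  have e: "e > 0" using r a by (simp add: e_def)
  have ea: "e * a < r / 2"
  proof -
    have "e * a = r / 2 * (a / (a + 1))" using a by (simp add: e_def field_simps)
    also have "\<dots> < r / 2 * 1" using r a by (intro mult_strict_left_mono) auto
    finally show ?thesis by simp
  qed
  have "e * r / 2 > 0" using e r by simp
  from LIMSEQ_D[OF b this] obtain N0 where N0: "\<And>N. N \<ge> N0 \<Longrightarrow> \<bar>b N\<bar> < e * r / 2" by auto
  show "\<exists>no. \<forall>n\<ge>no. norm (x n - 0) < r"
  proof (intro exI allI impI)
    fix n assume "N0 \<le> n"
    then have "\<bar>b n\<bar> < e * r / 2" by (rule N0)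
    then have h: "b n / e < r / 2" using e by (simp add: field_simps)
    have "\<bar>x n\<bar> < r" using bd[OF e, of n] ea h by linarith
    then show "norm (x n - 0) < r" by simp
  qed
qed

lemma sq_sum_le: "((a::real) + b)\<^sup>2 \<le> 2 * a\<^sup>2 + 2 * b\<^sup>2"
proof -
  have "0 \<le> (a - b)\<^sup>2" by simp
  then show ?thesis by (simp add: power2_eq_square algebra_simps)
qed

context rad begin

lemma nrm_sym: "nrm M (\<lambda>\<omega>. X \<omega> - Y \<omega>) = nrm M (\<lambda>\<omega>. Y \<omega> - X \<omega>)"
  unfolding nrm_def by (simp add: power2_commute)

lemma Dk_sq_split: "(Dk p k Q \<omega>)\<^sup>2 \<le> 2 * (Dk p k Qm \<omega>)\<^sup>2 + 2 * (Dk p k (\<lambda>\<omega>. Q \<omega> - Qm \<omega>) \<omega>)\<^sup>2"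
  using sq_sum_le[of "Dk p k Qm \<omega>" "Dk p k (\<lambda>\<omega>. Q \<omega> - Qm \<omega>) \<omega>"] by (simp add: Dk_diff)

lemma Dfatou:
  assumes Qm: "\<And>m. Qs m \<in> borel_measurable M" and Q: "Q \<in> borel_measurable M"
    and lim: "(\<lambda>m. nrm M (\<lambda>\<omega>. Qs m \<omega> - Q \<omega>)) \<longlonglongrightarrow> 0"
    and bd: "eventually (\<lambda>m. Dn M (\<lambda>k. Dk p k (Qs m)) \<le> Bd) sequentially"
  shows "Dn M (\<lambda>k. Dk p k Q) \<le> 2 * Bd"
proof -
  have eq: "Dn M (\<lambda>k. Dk p k Q) = (\<Sum>k. \<integral>\<^sup>+\<omega>. ennreal ((Dk p k Q \<omega>)\<^sup>2) \<partial>M)"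
    unfolding Dn_def using Q by (intro nn_integral_suminf) auto
  have "(\<Sum>k. \<integral>\<^sup>+\<omega>. ennreal ((Dk p k Q \<omega>)\<^sup>2) \<partial>M) \<le> 2 * Bd"
  proof (rule suminf_le_const[OF summableI])
    fix K :: nat
    show "(\<Sum>k<K. \<integral>\<^sup>+\<omega>. ennreal ((Dk p k Q \<omega>)\<^sup>2) \<partial>M) \<le> 2 * Bd"
    proof (rule ennreal_le_epsilon)
      fix \<delta> :: real assume \<delta>: "0 < \<delta>"
      define d where "d = \<delta> / (2 * real K + 1)"
      have d: "d > 0" using \<delta> by (simp add: d_def)
      have "eventually (\<lambda>m. nrm M (\<lambda>\<omega>. Qs m \<omega> - Q \<omega>) < ennreal d) sequentially"
        using lim d by (intro order_tendstoD(2)) auto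
      with bd have "eventually (\<lambda>m. Dn M (\<lambda>k. Dk p k (Qs m)) \<le> Bd \<and> nrm M (\<lambda>\<omega>. Qs m \<omega> - Q \<omega>) < ennreal d) sequentially"
        by (rule eventually_conj)
      then obtain m where m1: "Dn M (\<lambda>k. Dk p k (Qs m)) \<le> Bd" and m2: "nrm M (\<lambda>\<omega>. Qs m \<omega> - Q \<omega>) < ennreal d"
        by (auto simp: eventually_sequentially)
      have each: "(\<integral>\<^sup>+\<omega>. ennreal ((Dk p k Q \<omega>)\<^sup>2) \<partial>M) \<le> 2 * (\<integral>\<^sup>+\<omega>. ennreal ((Dk p k (Qs m) \<omega>)\<^sup>2) \<partial>M) + 2 * ennreal d" for k
      proof -
        have "(\<integral>\<^sup>+\<omega>. ennreal ((Dk p k Q \<omega>)\<^sup>2) \<partial>M) \<le>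
            (\<integral>\<^sup>+\<omega>. 2 * ennreal ((Dk p k (Qs m) \<omega>)\<^sup>2) + 2 * ennreal ((Dk p k (\<lambda>\<omega>. Q \<omega> - Qs m \<omega>) \<omega>)\<^sup>2) \<partial>M)"
        proof (intro nn_integral_mono)
          fix \<omega>
          have "ennreal ((Dk p k Q \<omega>)\<^sup>2) \<le> ennreal (2 * (Dk p k (Qs m) \<omega>)\<^sup>2 + 2 * (Dk p k (\<lambda>\<omega>. Q \<omega> - Qs m \<omega>) \<omega>)\<^sup>2)"
            by (intro ennreal_leI Dk_sq_split)
          also have "\<dots> = 2 * ennreal ((Dk p k (Qs m) \<omega>)\<^sup>2) + 2 * ennreal ((Dk p k (\<lambda>\<omega>. Q \<omega> - Qs m \<omega>) \<omega>)\<^sup>2)"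
            by (simp add: ennreal_plus ennreal_mult)
          finally show "ennreal ((Dk p k Q \<omega>)\<^sup>2) \<le> \<dots>" .
        qed
        also have "\<dots> = 2 * (\<integral>\<^sup>+\<omega>. ennreal ((Dk p k (Qs m) \<omega>)\<^sup>2) \<partial>M) + 2 * (\<integral>\<^sup>+\<omega>. ennreal ((Dk p k (\<lambda>\<omega>. Q \<omega> - Qs m \<omega>) \<omega>)\<^sup>2) \<partial>M)"
          using Q Qm[of m] by (subst nn_integral_add) (auto simp: nn_integral_cmult intro!: Dk_meas)
        also have "(\<integral>\<^sup>+\<omega>. ennreal ((Dk p k (\<lambda>\<omega>. Q \<omega> - Qs m \<omega>) \<omega>)\<^sup>2) \<partial>M) \<le> nrm M (\<lambda>\<omega>. Q \<omega> - Qs m \<omega>)"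
          unfolding nrm_def using Q Qm[of m] by (intro Dk_nn) auto
        also have "nrm M (\<lambda>\<omega>. Q \<omega> - Qs m \<omega>) \<le> ennreal d" using m2 nrm_sym[of Q "Qs m"] by simp
        finally show ?thesis by (simp add: add_left_mono mult_left_mono)
      qed
      have "(\<Sum>k<K. \<integral>\<^sup>+\<omega>. ennreal ((Dk p k Q \<omega>)\<^sup>2) \<partial>M) \<le> (\<Sum>k<K. 2 * (\<integral>\<^sup>+\<omega>. ennreal ((Dk p k (Qs m) \<omega>)\<^sup>2) \<partial>M) + 2 * ennreal d)"
        by (intro sum_mono each)
      also have "\<dots> = 2 * (\<Sum>k<K. \<integral>\<^sup>+\<omega>. ennreal ((Dk p k (Qs m) \<omega>)\<^sup>2) \<partial>M) + of_nat K * (2 * ennreal d)"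
        by (simp add: sum.distrib sum_distrib_left)
      also have "(\<Sum>k<K. \<integral>\<^sup>+\<omega>. ennreal ((Dk p k (Qs m) \<omega>)\<^sup>2) \<partial>M) \<le> Dn M (\<lambda>k. Dk p k (Qs m))"
      proof -
        have "(\<Sum>k<K. \<integral>\<^sup>+\<omega>. ennreal ((Dk p k (Qs m) \<omega>)\<^sup>2) \<partial>M) \<le> (\<Sum>k. \<integral>\<^sup>+\<omega>. ennreal ((Dk p k (Qs m) \<omega>)\<^sup>2) \<partial>M)"
          by (intro sum_le_suminf summableI) auto
        also have "\<dots> = Dn M (\<lambda>k. Dk p k (Qs m))"
          unfolding Dn_def using Qm[of m] by (intro nn_integral_suminf[symmetric]) auto
        finally show ?thesis .
      qed
      also have "Dn M (\<lambda>k. Dk p k (Qs m)) \<le> Bd" by (rule m1)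
      also have "of_nat K * (2 * ennreal d) \<le> ennreal \<delta>"
      proof -
        have "of_nat K * (2 * ennreal d) = ennreal (real K * (2 * d))"
          using d by (simp add: ennreal_mult ennreal_of_nat_eq_real_of_nat)
        also have "real K * (2 * d) \<le> \<delta>"
          using \<delta> by (simp add: d_def field_simps)
        finally show ?thesis by (simp add: ennreal_leI)
      qed
      finally show "(\<Sum>k<K. \<integral>\<^sup>+\<omega>. ennreal ((Dk p k Q \<omega>)\<^sup>2) \<partial>M) \<le> 2 * Bd + ennreal \<delta>"
        by (simp add: add_mono mult_left_mono)
    qed
  qed
  then show ?thesis using eq by simp
qed

end

lemma ipair_finite: "(\<And>k. N \<le> k \<Longrightarrow> b k = 0) \<Longrightarrow> ipair a b = (\<Sum>k<N. a k * b k)"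
  unfolding ipair_def by (rule suminf_finite) auto

lemma ipair_diff: "summable (\<lambda>k. \<bar>a k * b k\<bar>) \<Longrightarrow> summable (\<lambda>k. \<bar>a k * c k\<bar>) \<Longrightarrow>
   ipair a (\<lambda>k. b k - c k) = ipair a b - ipair a c"
  unfolding ipair_def by (subst suminf_diff) (auto intro: summable_rabs_cancel simp: algebra_simps)

lemma ipair_add: "summable (\<lambda>k. \<bar>a k * b k\<bar>) \<Longrightarrow> summable (\<lambda>k. \<bar>a k * c k\<bar>) \<Longrightarrow>
   ipair a (\<lambda>k. b k + c k) = ipair a b + ipair a c"
  unfolding ipair_def by (subst suminf_add) (auto intro: summable_rabs_cancel simp: algebra_simps)

lemma ipair_neg: "summable (\<lambda>k. \<bar>a k * b k\<bar>) \<Longrightarrow> ipair a (\<lambda>k. - b k) = - ipair a b"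
  unfolding ipair_def by (subst suminf_minus[symmetric]) (auto intro: summable_rabs_cancel)

lemma ipair_sum: "finite I \<Longrightarrow> (\<And>i. i \<in> I \<Longrightarrow> summable (\<lambda>k. \<bar>a k * b i k\<bar>)) \<Longrightarrow>
   ipair a (\<lambda>k. \<Sum>i\<in>I. b i k) = (\<Sum>i\<in>I. ipair a (b i))"
  unfolding ipair_def by (subst suminf_sum[symmetric]) (auto intro: summable_rabs_cancel simp: sum_distrib_left)

lemma ipair_scale: "summable (\<lambda>k. \<bar>a k * b k\<bar>) \<Longrightarrow> ipair a (\<lambda>k. r * b k) = r * ipair a b"
  unfolding ipair_def by (subst suminf_mult[symmetric]) (auto intro: summable_rabs_cancel simp: algebra_simps)

lemma ipair_sym: "ipair a b = ipair b a"
  unfolding ipair_def by (simp add: mult.commute)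

context rad begin

lemma nrm_L2: "L2 p X \<Longrightarrow> nrm M X = ennreal (\<integral>\<omega>. (X \<omega>)\<^sup>2 \<partial>M)"
  unfolding nrm_def L2_def by (intro nn_integral_eq_integral) auto

lemma L2_iff_nrm: "L2 p X \<longleftrightarrow> X \<in> borel_measurable M \<and> nrm M X < \<infinity>"
  unfolding nrm_def by (rule L2_iff)

lemma nrm_tri:
  assumes "X \<in> borel_measurable M" "Y \<in> borel_measurable M" "Z \<in> borel_measurable M"
  shows "nrm M (\<lambda>\<omega>. X \<omega> - Z \<omega>) \<le> 2 * nrm M (\<lambda>\<omega>. X \<omega> - Y \<omega>) + 2 * nrm M (\<lambda>\<omega>. Y \<omega> - Z \<omega>)"
proof -
  have "nrm M (\<lambda>\<omega>. X \<omega> - Z \<omega>) \<le> (\<integral>\<^sup>+\<omega>. 2 * ennreal ((X \<omega> - Y \<omega>)\<^sup>2) + 2 * ennreal ((Y \<omega> - Z \<omega>)\<^sup>2) \<partial>M)"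
    unfolding nrm_def
  proof (intro nn_integral_mono)
    fix \<omega>
    have "ennreal ((X \<omega> - Z \<omega>)\<^sup>2) \<le> ennreal (2 * (X \<omega> - Y \<omega>)\<^sup>2 + 2 * (Y \<omega> - Z \<omega>)\<^sup>2)"
      using sq_sum_le[of "X \<omega> - Y \<omega>" "Y \<omega> - Z \<omega>"] by (intro ennreal_leI) simp
    then show "ennreal ((X \<omega> - Z \<omega>)\<^sup>2) \<le> 2 * ennreal ((X \<omega> - Y \<omega>)\<^sup>2) + 2 * ennreal ((Y \<omega> - Z \<omega>)\<^sup>2)"
      by (simp add: ennreal_plus ennreal_mult)
  qed
  also have "\<dots> = 2 * nrm M (\<lambda>\<omega>. X \<omega> - Y \<omega>) + 2 * nrm M (\<lambda>\<omega>. Y \<omega> - Z \<omega>)"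
    unfolding nrm_def using assms by (subst nn_integral_add) (auto simp: nn_integral_cmult)
  finally show ?thesis .
qed

lemma L2lim_L2:
  assumes S: "\<And>N. L2 p (S N)" and G: "G \<in> borel_measurable M" and lim: "L2lim p S G"
  shows "L2 p G"
proof -
  have l: "(\<lambda>N. nrm M (\<lambda>\<omega>. S N \<omega> - G \<omega>)) \<longlonglongrightarrow> 0" using lim unfolding L2lim_def nrm_def by simp
  have "eventually (\<lambda>N. nrm M (\<lambda>\<omega>. S N \<omega> - G \<omega>) < 1) sequentially"
    using l by (intro order_tendstoD(2)) auto
  then obtain N where N: "nrm M (\<lambda>\<omega>. S N \<omega> - G \<omega>) < 1" by (auto simp: eventually_sequentially)
  have "nrm M G = nrm M (\<lambda>\<omega>. G \<omega> - 0)" by simp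
  also have "\<dots> \<le> 2 * nrm M (\<lambda>\<omega>. G \<omega> - S N \<omega>) + 2 * nrm M (\<lambda>\<omega>. S N \<omega> - 0)"
    using S[of N] G by (intro nrm_tri) (auto simp: L2_def)
  also have "\<dots> < \<infinity>"
  proof -
    have a: "nrm M (\<lambda>\<omega>. S N \<omega> - G \<omega>) \<noteq> \<top>" using N by auto
    have b: "nrm M (S N) \<noteq> \<top>" using S[of N] unfolding L2_iff_nrm by auto
    show ?thesis using a b nrm_sym[of G "S N"] by (simp add: ennreal_mult_eq_top_iff less_top[symmetric])
  qed
  finally show ?thesis unfolding L2_iff_nrm using G by simp
qed

lemma int_sq_enn: "L2 p X \<Longrightarrow> (\<integral>\<omega>. (X \<omega>)\<^sup>2 \<partial>M) = enn2real (nrm M X)"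
  using nrm_L2[of X] by simp

lemma L2lim_int:
  assumes S: "\<And>N. L2 p (S N)" and G: "L2 p G" and Y: "L2 p Y" and lim: "L2lim p S G"
  shows "(\<lambda>N. \<integral>\<omega>. S N \<omega> * Y \<omega> \<partial>M) \<longlonglongrightarrow> (\<integral>\<omega>. G \<omega> * Y \<omega> \<partial>M)"
proof -
  define x where "x N = (\<integral>\<omega>. (S N \<omega> - G \<omega>) * Y \<omega> \<partial>M)" for N
  define b where "b N = enn2real (nrm M (\<lambda>\<omega>. S N \<omega> - G \<omega>))" for N
  have l: "(\<lambda>N. nrm M (\<lambda>\<omega>. S N \<omega> - G \<omega>)) \<longlonglongrightarrow> 0" using lim unfolding L2lim_def nrm_def by simp
  have b: "b \<longlonglongrightarrow> 0" unfolding b_def using l by (intro tendsto_enn2real) auto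
  have D: "L2 p (\<lambda>\<omega>. S N \<omega> - G \<omega>)" for N using S G by (rule L2_diff)
  have "x \<longlonglongrightarrow> 0"
  proof (rule lim_zero_amgm[OF _ b])
    show "0 \<le> (\<integral>\<omega>. (Y \<omega>)\<^sup>2 \<partial>M)" by simp
    fix N and e :: real assume e: "e > 0"
    have "\<bar>x N\<bar> = \<bar>\<integral>\<omega>. Y \<omega> * (S N \<omega> - G \<omega>) \<partial>M\<bar>" unfolding x_def by (simp add: mult.commute)
    also have "\<dots> \<le> e / 2 * (\<integral>\<omega>. (Y \<omega>)\<^sup>2 \<partial>M) + 1 / (2 * e) * (\<integral>\<omega>. (S N \<omega> - G \<omega>)\<^sup>2 \<partial>M)"
      using Y D[of N] e by (intro amgm_L2) (auto simp: L2_def)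
    also have "(\<integral>\<omega>. (S N \<omega> - G \<omega>)\<^sup>2 \<partial>M) = b N" unfolding b_def by (rule int_sq_enn[OF D])
    also have "e / 2 * (\<integral>\<omega>. (Y \<omega>)\<^sup>2 \<partial>M) + 1 / (2 * e) * b N \<le> e * (\<integral>\<omega>. (Y \<omega>)\<^sup>2 \<partial>M) + b N / e"
    proof -
      have "0 \<le> (\<integral>\<omega>. (Y \<omega>)\<^sup>2 \<partial>M)" "0 \<le> b N" by (auto simp: b_def)
      then show ?thesis using e by (intro add_mono) (auto simp: field_simps)
    qed
    finally show "\<bar>x N\<bar> \<le> e * (\<integral>\<omega>. (Y \<omega>)\<^sup>2 \<partial>M) + b N / e" .
  qed
  moreover have "x N = (\<integral>\<omega>. S N \<omega> * Y \<omega> \<partial>M) - (\<integral>\<omega>. G \<omega> * Y \<omega> \<partial>M)" for N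
    unfolding x_def left_diff_distrib using L2_mult_int[OF S Y] L2_mult_int[OF G Y] by simp
  ultimately have "(\<lambda>N. (\<integral>\<omega>. S N \<omega> * Y \<omega> \<partial>M) - (\<integral>\<omega>. G \<omega> * Y \<omega> \<partial>M)) \<longlonglongrightarrow> 0"
  proof -
    assume a: "x \<longlonglongrightarrow> 0" and b: "\<And>N. x N = (\<integral>\<omega>. S N \<omega> * Y \<omega> \<partial>M) - (\<integral>\<omega>. G \<omega> * Y \<omega> \<partial>M)"
    have "x = (\<lambda>N. (\<integral>\<omega>. S N \<omega> * Y \<omega> \<partial>M) - (\<integral>\<omega>. G \<omega> * Y \<omega> \<partial>M))" using b by (rule ext)
    with a show ?thesis by simp
  qed
  then show ?thesis by (simp add: LIM_zero_iff)
qed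

lemma ipair_conv:
  assumes U: "\<And>k. U k \<in> borel_measurable M" and fU: "Dn M U < \<infinity>"
    and V: "\<And>N k. V N k \<in> borel_measurable M" and fV: "\<And>N. Dn M (V N) < \<infinity>"
    and l: "(\<lambda>N. Dn M (V N)) \<longlonglongrightarrow> 0"
  shows "(\<lambda>N. \<integral>\<omega>. ipair (\<lambda>k. U k \<omega>) (\<lambda>k. V N k \<omega>) \<partial>M) \<longlonglongrightarrow> 0"
proof (rule lim_zero_amgm)
  show "0 \<le> enn2real (Dn M U)" by simp
  show "(\<lambda>N. enn2real (Dn M (V N))) \<longlonglongrightarrow> 0" using l by (intro tendsto_enn2real) auto
  fix N and e :: real assume e: "e > 0"
  have "\<bar>\<integral>\<omega>. ipair (\<lambda>k. U k \<omega>) (\<lambda>k. V N k \<omega>) \<partial>M\<bar> \<le> e / 2 * enn2real (Dn M U) + 1 / (2 * e) * enn2real (Dn M (V N))"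
    by (rule ipair_bound[OF U V fU fV e])
  also have "\<dots> \<le> e * enn2real (Dn M U) + enn2real (Dn M (V N)) / e"
    using e by (intro add_mono) (auto simp: field_simps)
  finally show "\<bar>\<integral>\<omega>. ipair (\<lambda>k. U k \<omega>) (\<lambda>k. V N k \<omega>) \<partial>M\<bar> \<le> e * enn2real (Dn M U) + enn2real (Dn M (V N)) / e" .
qed

lemma hpoly_Dn:
  assumes Q: "hpoly p n N Q"
  shows "Dn M (\<lambda>k. Dk p k Q) = ennreal (real n) * nrm M Q"
proof -
  have LQ: "L2 p Q" by (rule L2_hpoly[OF Q])
  have "Dn M (\<lambda>k. Dk p k Q) = (\<integral>\<^sup>+\<omega>. ennreal (\<Sum>k<N. Dk p k Q \<omega> * Dk p k Q \<omega>) \<partial>M)"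
    unfolding Dn_def
  proof (intro nn_integral_cong)
    fix \<omega>
    have "(\<Sum>k. ennreal ((Dk p k Q \<omega>)\<^sup>2)) = (\<Sum>k<N. ennreal ((Dk p k Q \<omega>)\<^sup>2))"
      by (rule suminf_finite) (auto simp: hpoly_Dk_zero[OF Q])
    also have "\<dots> = ennreal (\<Sum>k<N. Dk p k Q \<omega> * Dk p k Q \<omega>)" by (simp add: power2_eq_square)
    finally show "(\<Sum>k. ennreal ((Dk p k Q \<omega>)\<^sup>2)) = ennreal (\<Sum>k<N. Dk p k Q \<omega> * Dk p k Q \<omega>)" .
  qed
  also have "\<dots> = ennreal (\<integral>\<omega>. (\<Sum>k<N. Dk p k Q \<omega> * Dk p k Q \<omega>) \<partial>M)"
    using hpoly_dual(1)[OF Q LQ] by (intro nn_integral_eq_integral) (auto intro!: AE_I2 sum_nonneg)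
  also have "(\<integral>\<omega>. (\<Sum>k<N. Dk p k Q \<omega> * Dk p k Q \<omega>) \<partial>M) = real n * (\<integral>\<omega>. Q \<omega> * Q \<omega> \<partial>M)"
    using hpoly_dual(2)[OF Q LQ] by simp
  also have "ennreal (real n * (\<integral>\<omega>. Q \<omega> * Q \<omega> \<partial>M)) = ennreal (real n) * nrm M Q"
    using nrm_L2[OF LQ] by (simp add: ennreal_mult power2_eq_square)
  finally show ?thesis .
qed

end

context rad begin

abbreviation "DD X \<equiv> (\<lambda>k. Dk p k X)"

lemma D12_iff: "D12 p G \<longleftrightarrow> L2 p G \<and> Dn M (DD G) < \<infinity>"
  unfolding D12_def Dn_def by simp

lemma DD_meas: "X \<in> borel_measurable M \<Longrightarrow> DD X k \<in> borel_measurable M"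
  using Dk_meas[of X k] by simp

lemma Dn_split:
  assumes "Q \<in> borel_measurable M" "Qm \<in> borel_measurable M"
  shows "Dn M (DD Q) \<le> 2 * Dn M (DD Qm) + 2 * Dn M (DD (\<lambda>\<omega>. Q \<omega> - Qm \<omega>))"
proof -
  have "Dn M (DD Q) \<le> (\<integral>\<^sup>+\<omega>. 2 * (\<Sum>k. ennreal ((Dk p k Qm \<omega>)\<^sup>2)) + 2 * (\<Sum>k. ennreal ((Dk p k (\<lambda>\<omega>. Q \<omega> - Qm \<omega>) \<omega>)\<^sup>2)) \<partial>M)"
    unfolding Dn_def
  proof (intro nn_integral_mono)
    fix \<omega>
    have "(\<Sum>k. ennreal ((Dk p k Q \<omega>)\<^sup>2)) \<le> (\<Sum>k. 2 * ennreal ((Dk p k Qm \<omega>)\<^sup>2) + 2 * ennreal ((Dk p k (\<lambda>\<omega>. Q \<omega> - Qm \<omega>) \<omega>)\<^sup>2))"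
    proof (intro suminf_le summableI)
      fix k
      have "ennreal ((Dk p k Q \<omega>)\<^sup>2) \<le> ennreal (2 * (Dk p k Qm \<omega>)\<^sup>2 + 2 * (Dk p k (\<lambda>\<omega>. Q \<omega> - Qm \<omega>) \<omega>)\<^sup>2)"
        by (intro ennreal_leI Dk_sq_split)
      then show "ennreal ((Dk p k Q \<omega>)\<^sup>2) \<le> 2 * ennreal ((Dk p k Qm \<omega>)\<^sup>2) + 2 * ennreal ((Dk p k (\<lambda>\<omega>. Q \<omega> - Qm \<omega>) \<omega>)\<^sup>2)"
        by (simp add: ennreal_plus ennreal_mult)
    qed
    also have "\<dots> = 2 * (\<Sum>k. ennreal ((Dk p k Qm \<omega>)\<^sup>2)) + 2 * (\<Sum>k. ennreal ((Dk p k (\<lambda>\<omega>. Q \<omega> - Qm \<omega>) \<omega>)\<^sup>2))"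
      by (subst suminf_add[symmetric]) (auto intro: summableI)
    finally show "(\<Sum>k. ennreal ((Dk p k Q \<omega>)\<^sup>2)) \<le> \<dots>" .
  qed
  also have "\<dots> = 2 * Dn M (DD Qm) + 2 * Dn M (DD (\<lambda>\<omega>. Q \<omega> - Qm \<omega>))"
    unfolding Dn_def using assms
    by (subst nn_integral_add) (auto intro!: borel_measurable_suminf_order Dk_meas simp: nn_integral_cmult)
  finally show ?thesis .
qed

lemma Dn_sym: "Dn M (DD (\<lambda>\<omega>. X \<omega> - Y \<omega>)) = Dn M (DD (\<lambda>\<omega>. Y \<omega> - X \<omega>))"
  unfolding Dn_def by (simp add: Dk_diff power2_commute)

lemma ennreal_lim_helper: "(\<lambda>N. ennreal (1 / (real N + 1))) \<longlonglongrightarrow> 0"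
proof -
  have "(\<lambda>N. 1 / (real N + 1)) \<longlonglongrightarrow> 0"
    using LIMSEQ_inverse_real_of_nat by (simp add: inverse_eq_divide add.commute)
  then show ?thesis by (simp add: ennreal_tendsto_0_iff)
qed

lemma J_props:
  assumes J: "is_J p n f J"
  shows "L2 p J"
    and "(\<lambda>N. Dn M (DD (\<lambda>\<omega>. Jtrunc p n f N \<omega> - J \<omega>))) \<longlonglongrightarrow> 0"
    and "D12 p J"
    and "\<And>G. D12 p G \<Longrightarrow> real n * (\<integral>\<omega>. G \<omega> * J \<omega> \<partial>M) = (\<integral>\<omega>. ipair (\<lambda>k. Dk p k G \<omega>) (\<lambda>k. Dk p k J \<omega>) \<partial>M)"
proof -
  define P where "P = Jtrunc p n f"
  have Jm: "J \<in> borel_measurable M" and lim: "L2lim p P J" using J unfolding is_J_def P_def by auto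
  have hP: "hpoly p n N (P N)" for N unfolding P_def by (rule Jtrunc_hpoly)
  have LP: "L2 p (P N)" for N by (rule L2_hpoly[OF hP])
  have Pm: "P N \<in> borel_measurable M" for N using LP[of N] by (simp add: L2_def)
  show LJ: "L2 p J" by (rule L2lim_L2[OF LP Jm lim])
  have l: "(\<lambda>N. nrm M (\<lambda>\<omega>. P N \<omega> - J \<omega>)) \<longlonglongrightarrow> 0" using lim unfolding L2lim_def nrm_def by simp
  have fin: "nrm M (\<lambda>\<omega>. P N \<omega> - J \<omega>) < \<infinity>" for N using L2_diff[OF LP LJ] unfolding L2_iff_nrm by auto
  define eps where "eps N = nrm M (\<lambda>\<omega>. P N \<omega> - J \<omega>) + ennreal (1 / (real N + 1))" for N
  have bnd: "Dn M (DD (\<lambda>\<omega>. P N \<omega> - J \<omega>)) \<le> 2 * (ennreal (real n) * (2 * nrm M (\<lambda>\<omega>. P N \<omega> - J \<omega>) + 2 * eps N))" for N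
  proof (rule Dfatou[where Qs="\<lambda>m \<omega>. P N \<omega> - P m \<omega>"])
    show "(\<lambda>\<omega>. P N \<omega> - P m \<omega>) \<in> borel_measurable M" for m using Pm by auto
    show "(\<lambda>\<omega>. P N \<omega> - J \<omega>) \<in> borel_measurable M" using Pm Jm by auto
    have "(\<lambda>m. nrm M (\<lambda>\<omega>. (P N \<omega> - P m \<omega>) - (P N \<omega> - J \<omega>))) = (\<lambda>m. nrm M (\<lambda>\<omega>. P m \<omega> - J \<omega>))"
      by (rule ext) (simp add: nrm_sym[of J])
    then show "(\<lambda>m. nrm M (\<lambda>\<omega>. (P N \<omega> - P m \<omega>) - (P N \<omega> - J \<omega>))) \<longlonglongrightarrow> 0" using l by simp
    have epos: "nrm M (\<lambda>\<omega>. P N \<omega> - J \<omega>) + ennreal (1 / (real N + 1)) > 0"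
    proof -
      have a: "0 < ennreal (1 / (real N + 1))" by simp
      have "ennreal (1 / (real N + 1)) \<le> nrm M (\<lambda>\<omega>. P N \<omega> - J \<omega>) + ennreal (1 / (real N + 1))"
        by (rule add_increasing) auto
      then show ?thesis using a by (rule less_le_trans[rotated])
    qed
    have "eventually (\<lambda>m. nrm M (\<lambda>\<omega>. P m \<omega> - J \<omega>) < eps N) sequentially"
      using l epos unfolding eps_def by (intro order_tendstoD(2)) auto
    then show "eventually (\<lambda>m. Dn M (DD (\<lambda>\<omega>. P N \<omega> - P m \<omega>)) \<le> ennreal (real n) * (2 * nrm M (\<lambda>\<omega>. P N \<omega> - J \<omega>) + 2 * eps N)) sequentially"
    proof eventually_elim
      case (elim m)
      have hq: "hpoly p n (max N m) (\<lambda>\<omega>. P N \<omega> - P m \<omega>)"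
        by (intro hpoly_diff hpoly_mono[OF hP]) auto
      have "Dn M (DD (\<lambda>\<omega>. P N \<omega> - P m \<omega>)) = ennreal (real n) * nrm M (\<lambda>\<omega>. P N \<omega> - P m \<omega>)"
        by (rule hpoly_Dn[OF hq])
      also have "nrm M (\<lambda>\<omega>. P N \<omega> - P m \<omega>) \<le> 2 * nrm M (\<lambda>\<omega>. P N \<omega> - J \<omega>) + 2 * nrm M (\<lambda>\<omega>. J \<omega> - P m \<omega>)"
        using Pm Jm by (intro nrm_tri) auto
      also have "nrm M (\<lambda>\<omega>. J \<omega> - P m \<omega>) \<le> eps N" using elim nrm_sym[of J "P m"] by simp
      finally show ?case by (simp add: mult_left_mono add_left_mono)
    qed
  qed
  have tl: "(\<lambda>N. 2 * (ennreal (real n) * (2 * nrm M (\<lambda>\<omega>. P N \<omega> - J \<omega>) + 2 * eps N))) \<longlonglongrightarrow> 2 * (ennreal (real n) * (2 * 0 + 2 * (0 + 0)))"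
    unfolding eps_def
    by (intro ennreal_tendsto_cmult tendsto_add l ennreal_lim_helper) auto
  show DJ: "(\<lambda>N. Dn M (DD (\<lambda>\<omega>. Jtrunc p n f N \<omega> - J \<omega>))) \<longlonglongrightarrow> 0"
    unfolding P_def[symmetric]
  proof (rule tendsto_sandwich[OF _ _ tendsto_const])
    show "eventually (\<lambda>N. 0 \<le> Dn M (DD (\<lambda>\<omega>. P N \<omega> - J \<omega>))) sequentially" by simp
    show "eventually (\<lambda>N. Dn M (DD (\<lambda>\<omega>. P N \<omega> - J \<omega>)) \<le> 2 * (ennreal (real n) * (2 * nrm M (\<lambda>\<omega>. P N \<omega> - J \<omega>) + 2 * eps N))) sequentially"
      using bnd by simp
    show "(\<lambda>N. 2 * (ennreal (real n) * (2 * nrm M (\<lambda>\<omega>. P N \<omega> - J \<omega>) + 2 * eps N))) \<longlonglongrightarrow> 0" using tl by simp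
  qed
  have DPfin: "Dn M (DD (P N)) < \<infinity>" for N
    using hpoly_Dn[OF hP] LP[of N] unfolding L2_iff_nrm by (simp add: ennreal_mult_less_top)
  have "eventually (\<lambda>N. Dn M (DD (\<lambda>\<omega>. P N \<omega> - J \<omega>)) < 1) sequentially"
    using DJ unfolding P_def by (intro order_tendstoD(2)) auto
  then obtain N0 where N0: "Dn M (DD (\<lambda>\<omega>. P N0 \<omega> - J \<omega>)) < 1" by (auto simp: eventually_sequentially)
  have DJfin: "Dn M (DD J) < \<infinity>"
  proof -
    have "Dn M (DD J) \<le> 2 * Dn M (DD (P N0)) + 2 * Dn M (DD (\<lambda>\<omega>. J \<omega> - P N0 \<omega>))"
      using Jm Pm by (rule Dn_split)
    also have "\<dots> < \<infinity>"
    proof -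
      have a: "Dn M (DD (P N0)) \<noteq> \<top>" using DPfin[of N0] by auto
      have b: "Dn M (DD (\<lambda>\<omega>. J \<omega> - P N0 \<omega>)) \<noteq> \<top>" using N0 Dn_sym[of J "P N0"] by auto
      show ?thesis using a b by (simp add: ennreal_mult_eq_top_iff less_top[symmetric])
    qed
    finally show ?thesis .
  qed
  show D12J: "D12 p J" unfolding D12_iff using LJ DJfin by simp
  fix G assume G: "D12 p G"
  have LG: "L2 p G" and DG: "Dn M (DD G) < \<infinity>" using G unfolding D12_iff by auto
  have Gm: "G \<in> borel_measurable M" using LG by (simp add: L2_def)
  have DPJfin: "Dn M (DD (\<lambda>\<omega>. P N \<omega> - J \<omega>)) < \<infinity>" for N
  proof -
    have A: "Dn M (DD (\<lambda>\<omega>. P N \<omega> - J \<omega>)) \<le> 2 * Dn M (DD J) + 2 * Dn M (DD (\<lambda>\<omega>. (P N \<omega> - J \<omega>) - J \<omega>))"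
      using Jm Pm[of N] by (intro Dn_split) auto
    have B: "Dn M (DD (\<lambda>\<omega>. (P N \<omega> - J \<omega>) - J \<omega>)) \<le> 2 * Dn M (DD (P N)) + 2 * Dn M (DD (\<lambda>\<omega>. ((P N \<omega> - J \<omega>) - J \<omega>) - P N \<omega>))"
      using Jm Pm[of N] by (intro Dn_split) auto
    have C: "Dn M (DD (\<lambda>\<omega>. ((P N \<omega> - J \<omega>) - J \<omega>) - P N \<omega>)) = 4 * Dn M (DD J)"
    proof -
      have "Dn M (DD (\<lambda>\<omega>. ((P N \<omega> - J \<omega>) - J \<omega>) - P N \<omega>)) = Dn M (DD (\<lambda>\<omega>. (-2) * J \<omega>))" by (simp add: algebra_simps)
      also have "\<dots> = (\<integral>\<^sup>+\<omega>. 4 * (\<Sum>k. ennreal ((Dk p k J \<omega>)\<^sup>2)) \<partial>M)"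
        unfolding Dn_def
      proof (intro nn_integral_cong)
        fix \<omega>
        have e: "ennreal ((Dk p k (\<lambda>\<omega>. (-2) * J \<omega>) \<omega>)\<^sup>2) = 4 * ennreal ((Dk p k J \<omega>)\<^sup>2)" for k
        proof -
          have "(Dk p k (\<lambda>\<omega>. (-2) * J \<omega>) \<omega>)\<^sup>2 = 4 * (Dk p k J \<omega>)\<^sup>2"
            by (simp only: Dk_scale) (simp add: power_mult_distrib)
          then show ?thesis by (simp add: ennreal_mult)
        qed
        show "(\<Sum>k. ennreal ((DD (\<lambda>\<omega>. (-2) * J \<omega>) k \<omega>)\<^sup>2)) = 4 * (\<Sum>k. ennreal ((DD J k \<omega>)\<^sup>2))"
          by (simp only: e ennreal_suminf_cmult)
      qed
      also have "\<dots> = 4 * Dn M (DD J)" unfolding Dn_def using Jm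
        by (intro nn_integral_cmult) (auto intro!: borel_measurable_suminf_order Dk_meas)
      finally show ?thesis .
    qed
    have "Dn M (DD (\<lambda>\<omega>. P N \<omega> - J \<omega>)) \<le> 2 * Dn M (DD J) + 2 * (2 * Dn M (DD (P N)) + 2 * (4 * Dn M (DD J)))"
    proof -
      have "2 * Dn M (DD (\<lambda>\<omega>. (P N \<omega> - J \<omega>) - J \<omega>)) \<le> 2 * (2 * Dn M (DD (P N)) + 2 * Dn M (DD (\<lambda>\<omega>. ((P N \<omega> - J \<omega>) - J \<omega>) - P N \<omega>)))"
        using B by (rule mult_left_mono) simp
      then have "2 * Dn M (DD (\<lambda>\<omega>. (P N \<omega> - J \<omega>) - J \<omega>)) \<le> 2 * (2 * Dn M (DD (P N)) + 2 * (4 * Dn M (DD J)))"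
        unfolding C .
      then have "2 * Dn M (DD J) + 2 * Dn M (DD (\<lambda>\<omega>. (P N \<omega> - J \<omega>) - J \<omega>)) \<le> 2 * Dn M (DD J) + 2 * (2 * Dn M (DD (P N)) + 2 * (4 * Dn M (DD J)))"
        by (rule add_left_mono)
      with A show ?thesis by (rule order_trans)
    qed
    also have "\<dots> < \<infinity>" using DJfin DPfin[of N]
      by (simp add: ennreal_mult_eq_top_iff less_top[symmetric])
    finally show ?thesis .
  qed
  have eqN: "real n * (\<integral>\<omega>. G \<omega> * P N \<omega> \<partial>M) = (\<integral>\<omega>. ipair (\<lambda>k. Dk p k G \<omega>) (\<lambda>k. Dk p k (P N) \<omega>) \<partial>M)" for N
  proof -
    have "ipair (\<lambda>k. Dk p k G \<omega>) (\<lambda>k. Dk p k (P N) \<omega>) = (\<Sum>k<N. Dk p k G \<omega> * Dk p k (P N) \<omega>)" for \<omega>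
      by (rule ipair_finite) (simp add: hpoly_Dk_zero[OF hP])
    then show ?thesis using hpoly_dual(2)[OF hP LG] by simp
  qed
  have c1: "(\<lambda>N. real n * (\<integral>\<omega>. G \<omega> * P N \<omega> \<partial>M)) \<longlonglongrightarrow> real n * (\<integral>\<omega>. G \<omega> * J \<omega> \<partial>M)"
  proof -
    have "(\<lambda>N. \<integral>\<omega>. P N \<omega> * G \<omega> \<partial>M) \<longlonglongrightarrow> (\<integral>\<omega>. J \<omega> * G \<omega> \<partial>M)"
      by (rule L2lim_int[OF LP LJ LG lim])
    then show ?thesis by (intro tendsto_mult tendsto_const) (simp add: mult.commute)
  qed
  have c2: "(\<lambda>N. \<integral>\<omega>. ipair (\<lambda>k. Dk p k G \<omega>) (\<lambda>k. Dk p k (P N) \<omega>) \<partial>M) \<longlonglongrightarrow> (\<integral>\<omega>. ipair (\<lambda>k. Dk p k G \<omega>) (\<lambda>k. Dk p k J \<omega>) \<partial>M)"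
  proof -
    have z: "(\<lambda>N. \<integral>\<omega>. ipair (\<lambda>k. DD G k \<omega>) (\<lambda>k. DD (\<lambda>\<omega>. P N \<omega> - J \<omega>) k \<omega>) \<partial>M) \<longlonglongrightarrow> 0"
    proof (intro ipair_conv[OF DD_meas[OF Gm] DG])
      show "DD (\<lambda>\<omega>. P N \<omega> - J \<omega>) k \<in> borel_measurable M" for N k
        using Pm[of N] Jm by (intro DD_meas) auto
      show "Dn M (DD (\<lambda>\<omega>. P N \<omega> - J \<omega>)) < \<infinity>" for N by (rule DPJfin)
    qed (use DJ P_def in simp)
    have e: "(\<integral>\<omega>. ipair (\<lambda>k. DD G k \<omega>) (\<lambda>k. DD (\<lambda>\<omega>. P N \<omega> - J \<omega>) k \<omega>) \<partial>M) =
        (\<integral>\<omega>. ipair (\<lambda>k. Dk p k G \<omega>) (\<lambda>k. Dk p k (P N) \<omega>) \<partial>M) - (\<integral>\<omega>. ipair (\<lambda>k. Dk p k G \<omega>) (\<lambda>k. Dk p k J \<omega>) \<partial>M)" for N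
    proof -
      have i1: "integrable M (\<lambda>\<omega>. ipair (\<lambda>k. Dk p k G \<omega>) (\<lambda>k. Dk p k (P N) \<omega>))"
        using ipair_int(1)[OF DD_meas[OF Gm] DD_meas[OF Pm] DG DPfin] by simp
      have i2: "integrable M (\<lambda>\<omega>. ipair (\<lambda>k. Dk p k G \<omega>) (\<lambda>k. Dk p k J \<omega>))"
        using ipair_int(1)[OF DD_meas[OF Gm] DD_meas[OF Jm] DG DJfin] by simp
      have "(\<integral>\<omega>. ipair (\<lambda>k. DD G k \<omega>) (\<lambda>k. DD (\<lambda>\<omega>. P N \<omega> - J \<omega>) k \<omega>) \<partial>M) =
          (\<integral>\<omega>. ipair (\<lambda>k. Dk p k G \<omega>) (\<lambda>k. Dk p k (P N) \<omega>) - ipair (\<lambda>k. Dk p k G \<omega>) (\<lambda>k. Dk p k J \<omega>) \<partial>M)"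
      proof (intro integral_cong_AE)
        show "AE \<omega> in M. ipair (\<lambda>k. DD G k \<omega>) (\<lambda>k. DD (\<lambda>\<omega>. P N \<omega> - J \<omega>) k \<omega>) =
            ipair (\<lambda>k. Dk p k G \<omega>) (\<lambda>k. Dk p k (P N) \<omega>) - ipair (\<lambda>k. Dk p k G \<omega>) (\<lambda>k. Dk p k J \<omega>)"
          using ipair_int(2)[OF DD_meas[OF Gm] DD_meas[OF Pm] DG DPfin, of N]
                ipair_int(2)[OF DD_meas[OF Gm] DD_meas[OF Jm] DG DJfin]
          by eventually_elim (simp add: Dk_diff ipair_diff)
      qed (use Gm Pm Jm in \<open>auto intro!: borel_measurable_suminf Dk_meas simp: ipair_def\<close>)
      also have "\<dots> = (\<integral>\<omega>. ipair (\<lambda>k. Dk p k G \<omega>) (\<lambda>k. Dk p k (P N) \<omega>) \<partial>M) - (\<integral>\<omega>. ipair (\<lambda>k. Dk p k G \<omega>) (\<lambda>k. Dk p k J \<omega>) \<partial>M)"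
        using i1 i2 by simp
      finally show ?thesis .
    qed
    show ?thesis using z unfolding e by (simp add: LIM_zero_iff)
  qed
  have "(\<lambda>N. real n * (\<integral>\<omega>. G \<omega> * P N \<omega> \<partial>M)) \<longlonglongrightarrow> (\<integral>\<omega>. ipair (\<lambda>k. Dk p k G \<omega>) (\<lambda>k. Dk p k J \<omega>) \<partial>M)"
    using c2 unfolding eqN .
  with c1 show "real n * (\<integral>\<omega>. G \<omega> * J \<omega> \<partial>M) = (\<integral>\<omega>. ipair (\<lambda>k. Dk p k G \<omega>) (\<lambda>k. Dk p k J \<omega>) \<partial>M)"
    by (rule LIMSEQ_unique)
qed

end

context rad begin

lemma Dn_scale: "X \<in> borel_measurable M \<Longrightarrow> Dn M (DD (\<lambda>\<omega>. r * X \<omega>)) = ennreal (r\<^sup>2) * Dn M (DD X)"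
proof -
  assume Xm: "X \<in> borel_measurable M"
  have "Dn M (DD (\<lambda>\<omega>. r * X \<omega>)) = (\<integral>\<^sup>+\<omega>. ennreal (r\<^sup>2) * (\<Sum>k. ennreal ((DD X k \<omega>)\<^sup>2)) \<partial>M)"
    unfolding Dn_def
  proof (intro nn_integral_cong)
    fix \<omega>
    have e: "ennreal ((Dk p k (\<lambda>\<omega>. r * X \<omega>) \<omega>)\<^sup>2) = ennreal (r\<^sup>2) * ennreal ((Dk p k X \<omega>)\<^sup>2)" for k
    proof -
      have "(Dk p k (\<lambda>\<omega>. r * X \<omega>) \<omega>)\<^sup>2 = r\<^sup>2 * (Dk p k X \<omega>)\<^sup>2"
        by (simp only: Dk_scale) (simp add: power_mult_distrib)
      then show ?thesis by (simp add: ennreal_mult)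
    qed
    show "(\<Sum>k. ennreal ((DD (\<lambda>\<omega>. r * X \<omega>) k \<omega>)\<^sup>2)) = ennreal (r\<^sup>2) * (\<Sum>k. ennreal ((DD X k \<omega>)\<^sup>2))"
      by (simp only: e ennreal_suminf_cmult)
  qed
  also have "\<dots> = ennreal (r\<^sup>2) * Dn M (DD X)" unfolding Dn_def using Xm
    by (intro nn_integral_cmult) (auto intro!: borel_measurable_suminf_order Dk_meas)
  finally show ?thesis .
qed

lemma D12_meas: "D12 p X \<Longrightarrow> X \<in> borel_measurable M"
  unfolding D12_iff L2_def by simp

lemma D12_scale: "D12 p X \<Longrightarrow> D12 p (\<lambda>\<omega>. r * X \<omega>)"
  using Dn_scale[of X r] D12_meas[of X] unfolding D12_iff
  by (auto intro: L2_scale simp: ennreal_mult_less_top)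

lemma D12_add: "D12 p X \<Longrightarrow> D12 p Y \<Longrightarrow> D12 p (\<lambda>\<omega>. X \<omega> + Y \<omega>)"
proof -
  assume X: "D12 p X" and Y: "D12 p Y"
  have Xm: "X \<in> borel_measurable M" and Ym: "Y \<in> borel_measurable M" using X Y by (auto intro: D12_meas)
  have "Dn M (DD (\<lambda>\<omega>. X \<omega> + Y \<omega>)) \<le> 2 * Dn M (DD X) + 2 * Dn M (DD (\<lambda>\<omega>. (X \<omega> + Y \<omega>) - X \<omega>))"
    using Xm Ym by (intro Dn_split) auto
  also have "(\<lambda>\<omega>. (X \<omega> + Y \<omega>) - X \<omega>) = Y" by auto
  also have "2 * Dn M (DD X) + 2 * Dn M (DD Y) < \<infinity>"
    using X Y unfolding D12_iff by (simp add: ennreal_mult_eq_top_iff less_top[symmetric])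
  finally show ?thesis using X Y unfolding D12_iff by (auto intro: L2_add)
qed

lemma D12_zero: "D12 p (\<lambda>\<omega>. 0)"
  unfolding D12_iff Dn_def Dk_def by (auto intro: L2_bounded[where C=0])

lemma D12_const: "D12 p (\<lambda>\<omega>. c)"
  unfolding D12_iff Dn_def Dk_def by (auto intro: L2_bounded[where C="\<bar>c\<bar>"])

lemma D12_sum: "finite A \<Longrightarrow> (\<And>n. n \<in> A \<Longrightarrow> D12 p (X n)) \<Longrightarrow> D12 p (\<lambda>\<omega>. \<Sum>n\<in>A. X n \<omega>)"
proof (induction A rule: finite_induct)
  case empty then show ?case using D12_zero by simp
next
  case (insert x F) then show ?case by (auto intro!: D12_add)
qed

lemma D12_fin: "D12 p X \<Longrightarrow> Dn M (DD X) < \<infinity>" unfolding D12_iff by simp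
lemma D12_L2: "D12 p X \<Longrightarrow> L2 p X" unfolding D12_iff by simp

lemma ipair_D12_int: "D12 p X \<Longrightarrow> D12 p Y \<Longrightarrow> integrable M (\<lambda>\<omega>. ipair (\<lambda>k. Dk p k X \<omega>) (\<lambda>k. Dk p k Y \<omega>))"
  using ipair_int(1)[OF DD_meas DD_meas D12_fin D12_fin] D12_meas by auto

lemma ipair_D12_AE: "D12 p X \<Longrightarrow> D12 p Y \<Longrightarrow> AE \<omega> in M. summable (\<lambda>k. \<bar>Dk p k X \<omega> * Dk p k Y \<omega>\<bar>)"
  using ipair_int(2)[OF DD_meas DD_meas D12_fin D12_fin] D12_meas by auto

end

context rad begin

lemma Dn_ipair_self:
  assumes X: "D12 p X"
  shows "Dn M (DD X) = ennreal (\<integral>\<omega>. ipair (\<lambda>k. Dk p k X \<omega>) (\<lambda>k. Dk p k X \<omega>) \<partial>M)"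
proof -
  have "Dn M (DD X) = (\<integral>\<^sup>+\<omega>. ennreal (ipair (\<lambda>k. Dk p k X \<omega>) (\<lambda>k. Dk p k X \<omega>)) \<partial>M)"
    unfolding Dn_def
  proof (intro nn_integral_cong_AE)
    show "AE \<omega> in M. (\<Sum>k. ennreal ((DD X k \<omega>)\<^sup>2)) = ennreal (ipair (\<lambda>k. Dk p k X \<omega>) (\<lambda>k. Dk p k X \<omega>))"
      using ipair_D12_AE[OF X X]
    proof eventually_elim
      case (elim \<omega>)
      then have s: "summable (\<lambda>k. (Dk p k X \<omega>)\<^sup>2)" by (simp add: power2_eq_square)
      have "(\<Sum>k. ennreal ((Dk p k X \<omega>)\<^sup>2)) = ennreal (\<Sum>k. (Dk p k X \<omega>)\<^sup>2)"
        by (rule suminf_ennreal2[OF _ s]) simp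
      also have "(\<Sum>k. (Dk p k X \<omega>)\<^sup>2) = ipair (\<lambda>k. Dk p k X \<omega>) (\<lambda>k. Dk p k X \<omega>)"
        unfolding ipair_def power2_eq_square ..
      finally show ?case .
    qed
  qed
  also have "\<dots> = ennreal (\<integral>\<omega>. ipair (\<lambda>k. Dk p k X \<omega>) (\<lambda>k. Dk p k X \<omega>) \<partial>M)"
  proof (intro nn_integral_eq_integral ipair_D12_int[OF X X])
    show "AE \<omega> in M. 0 \<le> ipair (\<lambda>k. Dk p k X \<omega>) (\<lambda>k. Dk p k X \<omega>)"
      using ipair_D12_AE[OF X X]
    proof eventually_elim
      case (elim \<omega>)
      then have s: "summable (\<lambda>k. Dk p k X \<omega> * Dk p k X \<omega>)" by (simp add: abs_mult)
      show ?case unfolding ipair_def by (rule suminf_nonneg[OF s]) simp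
    qed
  qed
  finally show ?thesis .
qed

end

locale chaos = rad +
  fixes F H :: "(nat \<Rightarrow> bool) \<Rightarrow> real" and f :: "nat \<Rightarrow> nat list \<Rightarrow> real" and J :: "nat \<Rightarrow> (nat \<Rightarrow> bool) \<Rightarrow> real"
  assumes FD: "D12 p F"
    and Jd: "\<And>n. n \<ge> 1 \<Longrightarrow> is_J p n (f n) (J n)"
    and LF: "L2lim p (\<lambda>N \<omega>. (\<integral>\<omega>'. F \<omega>' \<partial>Mrad p) + (\<Sum>n\<in>{1..N}. J n \<omega>)) F"
    and LH: "L2lim p (\<lambda>N \<omega>. - (\<Sum>n\<in>{1..N}. J n \<omega> / real n)) H"
    and Hm: "H \<in> borel_measurable (Mrad p)"
begin

lemma JD12: "n \<ge> 1 \<Longrightarrow> D12 p (J n)"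
  using J_props(3)[OF Jd] .

lemma JL2: "n \<ge> 1 \<Longrightarrow> L2 p (J n)"
  using J_props(1)[OF Jd] .

lemma Jm: "n \<ge> 1 \<Longrightarrow> J n \<in> borel_measurable M"
  using JL2 unfolding L2_def by auto

lemma Jdual: "n \<ge> 1 \<Longrightarrow> D12 p G \<Longrightarrow> real n * (\<integral>\<omega>. G \<omega> * J n \<omega> \<partial>M) = (\<integral>\<omega>. ipair (\<lambda>k. Dk p k G \<omega>) (\<lambda>k. Dk p k (J n) \<omega>) \<partial>M)"
  using J_props(4)[OF Jd] .

lemma orth: "n \<ge> 1 \<Longrightarrow> m \<ge> 1 \<Longrightarrow> n \<noteq> m \<Longrightarrow> (\<integral>\<omega>. J n \<omega> * J m \<omega> \<partial>M) = 0"
proof -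
  assume n: "n \<ge> 1" and m: "m \<ge> 1" and nm: "n \<noteq> m"
  have a: "real n * (\<integral>\<omega>. J m \<omega> * J n \<omega> \<partial>M) = (\<integral>\<omega>. ipair (\<lambda>k. Dk p k (J m) \<omega>) (\<lambda>k. Dk p k (J n) \<omega>) \<partial>M)"
    by (rule Jdual[OF n JD12[OF m]])
  have b: "real m * (\<integral>\<omega>. J n \<omega> * J m \<omega> \<partial>M) = (\<integral>\<omega>. ipair (\<lambda>k. Dk p k (J n) \<omega>) (\<lambda>k. Dk p k (J m) \<omega>) \<partial>M)"
    by (rule Jdual[OF m JD12[OF n]])
  have "real n * (\<integral>\<omega>. J n \<omega> * J m \<omega> \<partial>M) = real m * (\<integral>\<omega>. J n \<omega> * J m \<omega> \<partial>M)"
    using a b by (simp add: ipair_sym mult.commute)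
  then show ?thesis using nm by simp
qed

definition a :: "nat \<Rightarrow> real" where "a n = (\<integral>\<omega>. (J n \<omega>)\<^sup>2 \<partial>M)"

lemma a_nonneg: "a n \<ge> 0" unfolding a_def by simp

lemma bilin:
  assumes A: "finite A" "A \<subseteq> {1..}"
  shows "(\<integral>\<omega>. (\<Sum>n\<in>A. J n \<omega>) * (\<Sum>m\<in>A. w m * J m \<omega>) \<partial>M) = (\<Sum>n\<in>A. w n * a n)"
proof -
  have JJ: "n \<in> A \<Longrightarrow> m \<in> A \<Longrightarrow> integrable M (\<lambda>\<omega>. J n \<omega> * J m \<omega>)" for n m
    using A by (intro L2_mult_int JL2) auto
  have "(\<integral>\<omega>. (\<Sum>n\<in>A. J n \<omega>) * (\<Sum>m\<in>A. w m * J m \<omega>) \<partial>M) = (\<integral>\<omega>. (\<Sum>n\<in>A. \<Sum>m\<in>A. w m * (J n \<omega> * J m \<omega>)) \<partial>M)"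
    by (simp add: sum_product algebra_simps)
  also have "\<dots> = (\<Sum>n\<in>A. \<Sum>m\<in>A. w m * (\<integral>\<omega>. J n \<omega> * J m \<omega> \<partial>M))"
    using JJ A(1)
    by (subst Bochner_Integration.integral_sum) (auto intro!: Bochner_Integration.integrable_sum Bochner_Integration.integrable_mult_right
        simp: Bochner_Integration.integral_sum)
  also have "\<dots> = (\<Sum>n\<in>A. \<Sum>m\<in>A. if m = n then w n * a n else 0)"
    using A by (intro sum.cong refl) (auto simp: orth a_def power2_eq_square subset_iff)
  also have "\<dots> = (\<Sum>n\<in>A. w n * a n)" using A(1) by simp
  finally show ?thesis .
qed

end

context chaos begin

definition T :: "nat set \<Rightarrow> (nat \<Rightarrow> bool) \<Rightarrow> real" where
  "T A \<omega> = (\<Sum>n\<in>A. (1 / real n) * J n \<omega>)"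

lemma T_D12: "finite A \<Longrightarrow> A \<subseteq> {1..} \<Longrightarrow> D12 p (T A)"
  unfolding T_def[abs_def] by (intro D12_sum D12_scale JD12) auto

lemma Dk_T: "Dk p k (T A) \<omega> = (\<Sum>n\<in>A. (1 / real n) * Dk p k (J n) \<omega>)"
  unfolding T_def[abs_def] by (simp only: Dk_sum Dk_scale)

lemma dualT:
  assumes G: "D12 p G" and A: "finite A" "A \<subseteq> {1..}"
  shows "(\<integral>\<omega>. G \<omega> * (\<Sum>n\<in>A. J n \<omega>) \<partial>M) = (\<integral>\<omega>. ipair (\<lambda>k. Dk p k G \<omega>) (\<lambda>k. Dk p k (T A) \<omega>) \<partial>M)"
proof -
  have n1: "n \<in> A \<Longrightarrow> n \<ge> 1" for n using A by auto
  have "(\<integral>\<omega>. G \<omega> * (\<Sum>n\<in>A. J n \<omega>) \<partial>M) = (\<Sum>n\<in>A. \<integral>\<omega>. G \<omega> * J n \<omega> \<partial>M)"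
    unfolding sum_distrib_left using A(1)
    by (intro Bochner_Integration.integral_sum L2_mult_int D12_L2 G JL2 n1) auto
  also have "\<dots> = (\<Sum>n\<in>A. (1 / real n) * (\<integral>\<omega>. ipair (\<lambda>k. Dk p k G \<omega>) (\<lambda>k. Dk p k (J n) \<omega>) \<partial>M))"
  proof (intro sum.cong refl)
    fix n assume "n \<in> A"
    then have n: "n \<ge> 1" by (rule n1)
    show "(\<integral>\<omega>. G \<omega> * J n \<omega> \<partial>M) = (1 / real n) * (\<integral>\<omega>. ipair (\<lambda>k. Dk p k G \<omega>) (\<lambda>k. Dk p k (J n) \<omega>) \<partial>M)"
      using Jdual[OF n G] n by (simp add: field_simps)
  qed
  also have "\<dots> = (\<integral>\<omega>. (\<Sum>n\<in>A. (1 / real n) * ipair (\<lambda>k. Dk p k G \<omega>) (\<lambda>k. Dk p k (J n) \<omega>)) \<partial>M)"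
    using A(1) by (subst Bochner_Integration.integral_sum) (auto intro!: Bochner_Integration.integrable_mult_right ipair_D12_int G JD12 n1)
  also have "\<dots> = (\<integral>\<omega>. ipair (\<lambda>k. Dk p k G \<omega>) (\<lambda>k. Dk p k (T A) \<omega>) \<partial>M)"
  proof (intro integral_cong_AE)
    have "AE \<omega> in M. \<forall>n\<in>A. summable (\<lambda>k. \<bar>Dk p k G \<omega> * Dk p k (J n) \<omega>\<bar>)"
      using A(1) by (intro eventually_ball_finite ballI ipair_D12_AE G JD12 n1)
    then show "AE \<omega> in M. (\<Sum>n\<in>A. (1 / real n) * ipair (\<lambda>k. Dk p k G \<omega>) (\<lambda>k. Dk p k (J n) \<omega>)) =
        ipair (\<lambda>k. Dk p k G \<omega>) (\<lambda>k. Dk p k (T A) \<omega>)"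
    proof eventually_elim
      case (elim \<omega>)
      have "ipair (\<lambda>k. Dk p k G \<omega>) (\<lambda>k. Dk p k (T A) \<omega>) = ipair (\<lambda>k. Dk p k G \<omega>) (\<lambda>k. \<Sum>n\<in>A. (1 / real n) * Dk p k (J n) \<omega>)"
        by (simp add: Dk_T)
      also have "\<dots> = (\<Sum>n\<in>A. ipair (\<lambda>k. Dk p k G \<omega>) (\<lambda>k. (1 / real n) * Dk p k (J n) \<omega>))"
      proof (rule ipair_sum[OF A(1)])
        fix n assume "n \<in> A"
        then have "summable (\<lambda>k. \<bar>Dk p k G \<omega> * Dk p k (J n) \<omega>\<bar>)" using elim by auto
        then have "summable (\<lambda>k. \<bar>1 / real n\<bar> * \<bar>Dk p k G \<omega> * Dk p k (J n) \<omega>\<bar>)" by (rule summable_mult)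
        then show "summable (\<lambda>k. \<bar>Dk p k G \<omega> * (1 / real n * Dk p k (J n) \<omega>)\<bar>)" by (simp add: abs_mult ac_simps)
      qed
      also have "\<dots> = (\<Sum>n\<in>A. (1 / real n) * ipair (\<lambda>k. Dk p k G \<omega>) (\<lambda>k. Dk p k (J n) \<omega>))"
        using elim by (intro sum.cong refl ipair_scale) auto
      finally show ?case by simp
    qed
  next
    show "(\<lambda>\<omega>. ipair (\<lambda>k. Dk p k G \<omega>) (\<lambda>k. Dk p k (T A) \<omega>)) \<in> borel_measurable M"
      using ipair_D12_int[OF G T_D12[OF A]] by auto
    have "integrable M (\<lambda>\<omega>. (\<Sum>n\<in>A. (1 / real n) * ipair (\<lambda>k. Dk p k G \<omega>) (\<lambda>k. Dk p k (J n) \<omega>)))"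
      using A(1) by (auto intro!: Bochner_Integration.integrable_sum Bochner_Integration.integrable_mult_right ipair_D12_int G JD12 n1)
    then show "(\<lambda>\<omega>. (\<Sum>n\<in>A. (1 / real n) * ipair (\<lambda>k. Dk p k G \<omega>) (\<lambda>k. Dk p k (J n) \<omega>))) \<in> borel_measurable M"
      by auto
  qed
  finally show ?thesis .
qed

lemma Dn_T:
  assumes A: "finite A" "A \<subseteq> {1..}"
  shows "Dn M (DD (T A)) = ennreal (\<Sum>n\<in>A. (1 / real n) * a n)"
proof -
  have "Dn M (DD (T A)) = ennreal (\<integral>\<omega>. ipair (\<lambda>k. Dk p k (T A) \<omega>) (\<lambda>k. Dk p k (T A) \<omega>) \<partial>M)"
    by (rule Dn_ipair_self[OF T_D12[OF A]])
  also have "(\<integral>\<omega>. ipair (\<lambda>k. Dk p k (T A) \<omega>) (\<lambda>k. Dk p k (T A) \<omega>) \<partial>M) = (\<integral>\<omega>. T A \<omega> * (\<Sum>n\<in>A. J n \<omega>) \<partial>M)"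
    by (rule dualT[OF T_D12[OF A] A, symmetric])
  also have "\<dots> = (\<integral>\<omega>. (\<Sum>n\<in>A. J n \<omega>) * (\<Sum>m\<in>A. (1 / real m) * J m \<omega>) \<partial>M)"
    unfolding T_def by (simp add: mult.commute)
  also have "\<dots> = (\<Sum>n\<in>A. (1 / real n) * a n)" by (rule bilin[OF A])
  finally show ?thesis .
qed

lemma sumsq:
  assumes A: "finite A" "A \<subseteq> {1..}"
  shows "(\<integral>\<omega>. (\<Sum>n\<in>A. J n \<omega>)\<^sup>2 \<partial>M) = (\<Sum>n\<in>A. a n)"
  using bilin[OF A, of "\<lambda>_. 1"] by (simp add: power2_eq_square)

end

context chaos begin

definition c0 :: real where "c0 = (\<integral>\<omega>. F \<omega> \<partial>M)"
definition S :: "nat \<Rightarrow> (nat \<Rightarrow> bool) \<Rightarrow> real" where "S N \<omega> = c0 + (\<Sum>n\<in>{1..N}. J n \<omega>)"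

lemma LFS: "L2lim p S F" using LF unfolding S_def[abs_def] c0_def .

lemma FL2: "L2 p F" using FD by (rule D12_L2)
lemma Fm: "F \<in> borel_measurable M" using FL2 unfolding L2_def by auto

lemma SumJ_L2: "L2 p (\<lambda>\<omega>. \<Sum>n\<in>{1..N}. J n \<omega>)"
  by (intro L2_sum JL2) auto

lemma S_L2: "L2 p (S N)"
  unfolding S_def[abs_def] by (intro L2_add L2_bounded[where C="\<bar>c0\<bar>"] SumJ_L2) auto

lemma int_tri:
  assumes "L2 p X" "L2 p Y" "L2 p Z"
  shows "(\<integral>\<omega>. (X \<omega> - Z \<omega>)\<^sup>2 \<partial>M) \<le> 2 * (\<integral>\<omega>. (X \<omega> - Y \<omega>)\<^sup>2 \<partial>M) + 2 * (\<integral>\<omega>. (Y \<omega> - Z \<omega>)\<^sup>2 \<partial>M)"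
proof -
  have i: "integrable M (\<lambda>\<omega>. (U \<omega> - V \<omega>)\<^sup>2)" if "L2 p U" "L2 p V" for U V
    using L2_diff[OF that] unfolding L2_def by auto
  have "(\<integral>\<omega>. (X \<omega> - Z \<omega>)\<^sup>2 \<partial>M) \<le> (\<integral>\<omega>. 2 * (X \<omega> - Y \<omega>)\<^sup>2 + 2 * (Y \<omega> - Z \<omega>)\<^sup>2 \<partial>M)"
  proof (intro integral_mono)
    show "integrable M (\<lambda>\<omega>. (X \<omega> - Z \<omega>)\<^sup>2)" using i assms by auto
    show "integrable M (\<lambda>\<omega>. 2 * (X \<omega> - Y \<omega>)\<^sup>2 + 2 * (Y \<omega> - Z \<omega>)\<^sup>2)" using i assms by auto
    fix \<omega>
    show "(X \<omega> - Z \<omega>)\<^sup>2 \<le> 2 * (X \<omega> - Y \<omega>)\<^sup>2 + 2 * (Y \<omega> - Z \<omega>)\<^sup>2"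
      using sq_sum_le[of "X \<omega> - Y \<omega>" "Y \<omega> - Z \<omega>"] by simp
  qed
  also have "\<dots> = 2 * (\<integral>\<omega>. (X \<omega> - Y \<omega>)\<^sup>2 \<partial>M) + 2 * (\<integral>\<omega>. (Y \<omega> - Z \<omega>)\<^sup>2 \<partial>M)"
    using i assms by simp
  finally show ?thesis .
qed

lemma a_bounded: "\<exists>Bnd. \<forall>N. (\<Sum>n\<in>{1..N}. a n) \<le> Bnd"
proof -
  define x where "x N = (\<integral>\<omega>. (S N \<omega> - F \<omega>)\<^sup>2 \<partial>M)" for N
  have l: "(\<lambda>N. nrm M (\<lambda>\<omega>. S N \<omega> - F \<omega>)) \<longlonglongrightarrow> 0" using LFS unfolding L2lim_def nrm_def by simp
  have "x \<longlonglongrightarrow> 0"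
  proof -
    have "x = (\<lambda>N. enn2real (nrm M (\<lambda>\<omega>. S N \<omega> - F \<omega>)))"
      unfolding x_def by (rule ext) (rule int_sq_enn[OF L2_diff[OF S_L2 FL2]])
    moreover have "(\<lambda>N. enn2real (nrm M (\<lambda>\<omega>. S N \<omega> - F \<omega>))) \<longlonglongrightarrow> 0" using l by (intro tendsto_enn2real) auto
    ultimately show ?thesis by simp
  qed
  then have "Bseq x" by (intro convergent_imp_Bseq convergentI)
  then obtain K where K: "\<And>N. \<bar>x N\<bar> \<le> K" by (metis BseqE real_norm_def)
  have "(\<Sum>n\<in>{1..N}. a n) \<le> 2 * K + 2 * (\<integral>\<omega>. (F \<omega> - c0)\<^sup>2 \<partial>M)" for N
  proof -
    have "(\<Sum>n\<in>{1..N}. a n) = (\<integral>\<omega>. (\<Sum>n\<in>{1..N}. J n \<omega>)\<^sup>2 \<partial>M)" by (rule sumsq[symmetric]) auto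
    also have "\<dots> = (\<integral>\<omega>. (S N \<omega> - c0)\<^sup>2 \<partial>M)" unfolding S_def by simp
    also have "\<dots> \<le> 2 * (\<integral>\<omega>. (S N \<omega> - F \<omega>)\<^sup>2 \<partial>M) + 2 * (\<integral>\<omega>. (F \<omega> - c0)\<^sup>2 \<partial>M)"
      using int_tri[OF S_L2 FL2 L2_bounded[where G="\<lambda>_. c0" and C="\<bar>c0\<bar>"]] by simp
    also have "\<dots> \<le> 2 * K + 2 * (\<integral>\<omega>. (F \<omega> - c0)\<^sup>2 \<partial>M)" using K[of N] unfolding x_def by simp
    finally show ?thesis .
  qed
  then show ?thesis by blast
qed

definition a' :: "nat \<Rightarrow> real" where "a' n = (if n \<ge> 1 then a n else 0)"

lemma a'_nonneg: "a' n \<ge> 0" unfolding a'_def using a_nonneg by simp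

lemma a'_summable: "summable a'"
proof -
  obtain Bnd where B: "\<And>N. (\<Sum>n\<in>{1..N}. a n) \<le> Bnd" using a_bounded by blast
  show ?thesis
  proof (rule summableI_nonneg_bounded[OF a'_nonneg])
    fix N
    have "(\<Sum>i<N. a' i) = (\<Sum>i\<in>{1..<N}. a i)"
      unfolding a'_def by (rule sum.mono_neutral_cong_right) auto
    also have "\<dots> \<le> (\<Sum>i\<in>{1..N}. a i)" by (rule sum_mono2) (auto simp: a_nonneg)
    also have "\<dots> \<le> Bnd" by (rule B)
    finally show "(\<Sum>i<N. a' i) \<le> Bnd" .
  qed
qed

definition tl :: "nat \<Rightarrow> real" where "tl N = (\<Sum>i. a' (i + Suc N))"

lemma tl_summable: "summable (\<lambda>i. a' (i + Suc N))"
  using summable_iff_shift[of a' "Suc N"] a'_summable by blast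

lemma tl_nonneg: "tl N \<ge> 0"
  unfolding tl_def by (intro suminf_nonneg[OF tl_summable] a'_nonneg)

lemma tl_lim: "tl \<longlonglongrightarrow> 0"
proof -
  have "(\<lambda>n. \<Sum>k. a' (k + n)) \<longlonglongrightarrow> 0" by (rule suminf_exist_split2[OF a'_summable])
  then have "(\<lambda>n. \<Sum>k. a' (k + Suc n)) \<longlonglongrightarrow> 0" by (rule LIMSEQ_Suc)
  then show ?thesis unfolding tl_def[abs_def] .
qed

lemma tl_bound: "(\<Sum>n\<in>{Suc N..Mx}. a n) \<le> tl N"
proof (cases "Suc N \<le> Mx")
  case False then show ?thesis using tl_nonneg by simp
next
  case True
  have "(\<Sum>n\<in>{Suc N..Mx}. a n) = (\<Sum>n\<in>{0 + Suc N..(Mx - Suc N) + Suc N}. a n)" using True by simp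
  also have "\<dots> = (\<Sum>i\<in>{0..Mx - Suc N}. a (i + Suc N))" by (rule sum.shift_bounds_cl_nat_ivl)
  also have "\<dots> = (\<Sum>i\<in>{0..Mx - Suc N}. a' (i + Suc N))" unfolding a'_def by simp
  also have "\<dots> \<le> tl N" unfolding tl_def
    by (intro sum_le_suminf[OF tl_summable]) (auto simp: a'_nonneg)
  finally show ?thesis .
qed

end

context chaos begin

abbreviation "TT N \<equiv> T {1..N}"

lemma TT_D12: "D12 p (TT N)" by (rule T_D12) auto
lemma TT_m: "TT N \<in> borel_measurable M" using TT_D12 by (rule D12_meas)

lemma Dn_neg: "X \<in> borel_measurable M \<Longrightarrow> Dn M (DD (\<lambda>\<omega>. - X \<omega>)) = Dn M (DD X)"
  using Dn_scale[of X "-1"] by simp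

lemma H_bound: "Dn M (DD (\<lambda>\<omega>. TT N \<omega> + H \<omega>)) \<le> 2 * ennreal (tl N)"
proof (rule Dfatou[where Qs="\<lambda>m \<omega>. TT N \<omega> - TT m \<omega>"])
  show "(\<lambda>\<omega>. TT N \<omega> - TT m \<omega>) \<in> borel_measurable M" for m using TT_m by auto
  show "(\<lambda>\<omega>. TT N \<omega> + H \<omega>) \<in> borel_measurable M" using TT_m Hm by auto
  have l: "(\<lambda>m. nrm M (\<lambda>\<omega>. - (\<Sum>n\<in>{1..m}. J n \<omega> / real n) - H \<omega>)) \<longlonglongrightarrow> 0"
    using LH unfolding L2lim_def nrm_def by simp
  have "(\<lambda>m. nrm M (\<lambda>\<omega>. (TT N \<omega> - TT m \<omega>) - (TT N \<omega> + H \<omega>))) = (\<lambda>m. nrm M (\<lambda>\<omega>. - (\<Sum>n\<in>{1..m}. J n \<omega> / real n) - H \<omega>))"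
    unfolding T_def by (rule ext, rule arg_cong[where f="nrm M"], rule ext) (simp add: algebra_simps)
  then show "(\<lambda>m. nrm M (\<lambda>\<omega>. (TT N \<omega> - TT m \<omega>) - (TT N \<omega> + H \<omega>))) \<longlonglongrightarrow> 0" using l by simp
  show "eventually (\<lambda>m. Dn M (DD (\<lambda>\<omega>. TT N \<omega> - TT m \<omega>)) \<le> ennreal (tl N)) sequentially"
  proof (rule eventually_sequentiallyI[of N])
    fix m assume m: "N \<le> m"
    have split: "{1..m} = {1..N} \<union> {Suc N..m}" using m by auto
    have "TT N \<omega> - TT m \<omega> = - T {Suc N..m} \<omega>" for \<omega>
      unfolding T_def split by (subst sum.union_disjoint) auto
    then have "(\<lambda>\<omega>. TT N \<omega> - TT m \<omega>) = (\<lambda>\<omega>. - T {Suc N..m} \<omega>)" by (rule ext)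
    then have "Dn M (DD (\<lambda>\<omega>. TT N \<omega> - TT m \<omega>)) = Dn M (DD (T {Suc N..m}))"
      using Dn_neg[OF D12_meas[OF T_D12[of "{Suc N..m}"]]] by auto
    also have "\<dots> = ennreal (\<Sum>n\<in>{Suc N..m}. (1 / real n) * a n)" by (rule Dn_T) auto
    also have "\<dots> \<le> ennreal (tl N)"
    proof (intro ennreal_leI order_trans[OF _ tl_bound[of N m]] sum_mono)
      fix n assume "n \<in> {Suc N..m}"
      then have "real n \<ge> 1" by auto
      then have "1 / real n \<le> 1" by simp
      from mult_right_mono[OF this a_nonneg[of n]] show "(1 / real n) * a n \<le> a n" by simp
    qed
    finally show "Dn M (DD (\<lambda>\<omega>. TT N \<omega> - TT m \<omega>)) \<le> ennreal (tl N)" .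
  qed
qed

lemma H_lim: "(\<lambda>N. Dn M (DD (\<lambda>\<omega>. TT N \<omega> + H \<omega>))) \<longlonglongrightarrow> 0"
proof (rule tendsto_sandwich[OF _ _ tendsto_const])
  show "eventually (\<lambda>N. 0 \<le> Dn M (DD (\<lambda>\<omega>. TT N \<omega> + H \<omega>))) sequentially" by simp
  show "eventually (\<lambda>N. Dn M (DD (\<lambda>\<omega>. TT N \<omega> + H \<omega>)) \<le> 2 * ennreal (tl N)) sequentially"
    using H_bound by simp
  have "(\<lambda>N. 2 * ennreal (tl N)) \<longlonglongrightarrow> 2 * ennreal 0"
    by (intro ennreal_tendsto_cmult tendsto_ennrealI tl_lim) auto
  then show "(\<lambda>N. 2 * ennreal (tl N)) \<longlonglongrightarrow> 0" by simp
qed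

lemma H_D12: "D12 p H"
proof -
  have "L2 p H"
  proof (rule L2lim_L2[OF _ Hm LH])
    fix N show "L2 p (\<lambda>\<omega>. - (\<Sum>n\<in>{1..N}. J n \<omega> / real n))"
    proof -
      have "L2 p (\<lambda>\<omega>. \<Sum>n\<in>{1..N}. (1 / real n) * J n \<omega>)" by (intro L2_sum L2_scale JL2) auto
      then have "L2 p (\<lambda>\<omega>. (-1) * (\<Sum>n\<in>{1..N}. (1 / real n) * J n \<omega>))" by (rule L2_scale)
      then show ?thesis by simp
    qed
  qed
  moreover have "Dn M (DD H) < \<infinity>"
  proof -
    have "(\<lambda>\<omega>. TT 0 \<omega> + H \<omega>) = H" unfolding T_def by auto
    moreover have "2 * ennreal (tl 0) < \<infinity>" by (simp add: less_top[symmetric] ennreal_mult_eq_top_iff)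
    ultimately show ?thesis using H_bound[of 0] by simp
  qed
  ultimately show ?thesis unfolding D12_iff by simp
qed

end

context chaos begin

lemma IBP:
  assumes G: "D12 p G"
  shows "(\<integral>\<omega>. F \<omega> * G \<omega> \<partial>M) = c0 * (\<integral>\<omega>. G \<omega> \<partial>M) + (\<integral>\<omega>. ipair (\<lambda>k. Dk p k G \<omega>) (\<lambda>k. - Dk p k H \<omega>) \<partial>M)"
proof -
  have LG: "L2 p G" using G by (rule D12_L2)
  have Gm: "G \<in> borel_measurable M" using G by (rule D12_meas)
  have lim1: "(\<lambda>N. \<integral>\<omega>. S N \<omega> * G \<omega> \<partial>M) \<longlonglongrightarrow> (\<integral>\<omega>. F \<omega> * G \<omega> \<partial>M)"
    by (rule L2lim_int[OF S_L2 FL2 LG LFS])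
  have eq: "(\<integral>\<omega>. S N \<omega> * G \<omega> \<partial>M) = c0 * (\<integral>\<omega>. G \<omega> \<partial>M) + (\<integral>\<omega>. ipair (\<lambda>k. Dk p k G \<omega>) (\<lambda>k. Dk p k (TT N) \<omega>) \<partial>M)" for N
  proof -
    have i1: "integrable M G" using LG by (rule L2_int)
    have i2: "integrable M (\<lambda>\<omega>. G \<omega> * (\<Sum>n\<in>{1..N}. J n \<omega>))" by (rule L2_mult_int[OF LG SumJ_L2])
    have "(\<integral>\<omega>. S N \<omega> * G \<omega> \<partial>M) = (\<integral>\<omega>. c0 * G \<omega> + G \<omega> * (\<Sum>n\<in>{1..N}. J n \<omega>) \<partial>M)"
      unfolding S_def by (simp add: algebra_simps)
    also have "\<dots> = c0 * (\<integral>\<omega>. G \<omega> \<partial>M) + (\<integral>\<omega>. G \<omega> * (\<Sum>n\<in>{1..N}. J n \<omega>) \<partial>M)"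
      using i1 i2 by simp
    also have "(\<integral>\<omega>. G \<omega> * (\<Sum>n\<in>{1..N}. J n \<omega>) \<partial>M) = (\<integral>\<omega>. ipair (\<lambda>k. Dk p k G \<omega>) (\<lambda>k. Dk p k (TT N) \<omega>) \<partial>M)"
      by (rule dualT[OF G]) auto
    finally show ?thesis .
  qed
  have HD: "D12 p H" by (rule H_D12)
  have nHD: "D12 p (\<lambda>\<omega>. (-1) * H \<omega>)" by (rule D12_scale[OF HD])
  have Dneg: "Dk p k (\<lambda>\<omega>. (-1) * H \<omega>) \<omega> = - Dk p k H \<omega>" for k \<omega> by (simp only: Dk_scale)
  have i3: "integrable M (\<lambda>\<omega>. ipair (\<lambda>k. Dk p k G \<omega>) (\<lambda>k. - Dk p k H \<omega>))"
    using ipair_D12_int[OF G nHD] unfolding Dneg .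
  have THfin: "Dn M (DD (\<lambda>\<omega>. TT N \<omega> + H \<omega>)) < \<infinity>" for N
    using H_bound[of N] by (rule le_less_trans) (simp add: less_top[symmetric] ennreal_mult_eq_top_iff)
  have THm: "(\<lambda>\<omega>. TT N \<omega> + H \<omega>) \<in> borel_measurable M" for N using TT_m Hm by auto
  have z: "(\<lambda>N. \<integral>\<omega>. ipair (\<lambda>k. DD G k \<omega>) (\<lambda>k. DD (\<lambda>\<omega>. TT N \<omega> + H \<omega>) k \<omega>) \<partial>M) \<longlonglongrightarrow> 0"
  proof (intro ipair_conv[OF DD_meas[OF Gm] D12_fin[OF G]])
    show "DD (\<lambda>\<omega>. TT N \<omega> + H \<omega>) k \<in> borel_measurable M" for N k by (rule DD_meas[OF THm])
  qed (use THfin H_lim in auto)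
  have e: "(\<integral>\<omega>. ipair (\<lambda>k. DD G k \<omega>) (\<lambda>k. DD (\<lambda>\<omega>. TT N \<omega> + H \<omega>) k \<omega>) \<partial>M) =
      (\<integral>\<omega>. ipair (\<lambda>k. Dk p k G \<omega>) (\<lambda>k. Dk p k (TT N) \<omega>) \<partial>M) - (\<integral>\<omega>. ipair (\<lambda>k. Dk p k G \<omega>) (\<lambda>k. - Dk p k H \<omega>) \<partial>M)" for N
  proof -
    have i4: "integrable M (\<lambda>\<omega>. ipair (\<lambda>k. Dk p k G \<omega>) (\<lambda>k. Dk p k (TT N) \<omega>))" by (rule ipair_D12_int[OF G TT_D12])
    have "(\<integral>\<omega>. ipair (\<lambda>k. DD G k \<omega>) (\<lambda>k. DD (\<lambda>\<omega>. TT N \<omega> + H \<omega>) k \<omega>) \<partial>M) =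
        (\<integral>\<omega>. ipair (\<lambda>k. Dk p k G \<omega>) (\<lambda>k. Dk p k (TT N) \<omega>) - ipair (\<lambda>k. Dk p k G \<omega>) (\<lambda>k. - Dk p k H \<omega>) \<partial>M)"
    proof (intro integral_cong_AE)
      show "AE \<omega> in M. ipair (\<lambda>k. DD G k \<omega>) (\<lambda>k. DD (\<lambda>\<omega>. TT N \<omega> + H \<omega>) k \<omega>) =
          ipair (\<lambda>k. Dk p k G \<omega>) (\<lambda>k. Dk p k (TT N) \<omega>) - ipair (\<lambda>k. Dk p k G \<omega>) (\<lambda>k. - Dk p k H \<omega>)"
        using ipair_D12_AE[OF G TT_D12, of N] ipair_D12_AE[OF G HD]
        by eventually_elim (simp add: Dk_add ipair_add ipair_neg)
      have "integrable M (\<lambda>\<omega>. ipair (\<lambda>k. Dk p k G \<omega>) (\<lambda>k. Dk p k (TT N) \<omega>) - ipair (\<lambda>k. Dk p k G \<omega>) (\<lambda>k. - Dk p k H \<omega>))"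
        using i3 i4 by auto
      then show "(\<lambda>\<omega>. ipair (\<lambda>k. Dk p k G \<omega>) (\<lambda>k. Dk p k (TT N) \<omega>) - ipair (\<lambda>k. Dk p k G \<omega>) (\<lambda>k. - Dk p k H \<omega>)) \<in> borel_measurable M"
        by auto
      show "(\<lambda>\<omega>. ipair (\<lambda>k. DD G k \<omega>) (\<lambda>k. DD (\<lambda>\<omega>. TT N \<omega> + H \<omega>) k \<omega>)) \<in> borel_measurable M"
        unfolding ipair_def using Gm THm[of N] by (intro borel_measurable_suminf borel_measurable_times Dk_meas) auto
    qed
    also have "\<dots> = (\<integral>\<omega>. ipair (\<lambda>k. Dk p k G \<omega>) (\<lambda>k. Dk p k (TT N) \<omega>) \<partial>M) - (\<integral>\<omega>. ipair (\<lambda>k. Dk p k G \<omega>) (\<lambda>k. - Dk p k H \<omega>) \<partial>M)"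
      using i3 i4 by simp
    finally show ?thesis .
  qed
  have lim2: "(\<lambda>N. \<integral>\<omega>. ipair (\<lambda>k. Dk p k G \<omega>) (\<lambda>k. Dk p k (TT N) \<omega>) \<partial>M) \<longlonglongrightarrow> (\<integral>\<omega>. ipair (\<lambda>k. Dk p k G \<omega>) (\<lambda>k. - Dk p k H \<omega>) \<partial>M)"
    using z unfolding e by (simp add: LIM_zero_iff)
  have "(\<lambda>N. \<integral>\<omega>. S N \<omega> * G \<omega> \<partial>M) \<longlonglongrightarrow> c0 * (\<integral>\<omega>. G \<omega> \<partial>M) + (\<integral>\<omega>. ipair (\<lambda>k. Dk p k G \<omega>) (\<lambda>k. - Dk p k H \<omega>) \<partial>M)"
    unfolding eq by (intro tendsto_add tendsto_const lim2)
  with lim1 show ?thesis by (rule LIMSEQ_unique)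
qed

end

context rad begin

theorem IBP_main:
  assumes FD: "D12 p F" and H: "Linv p F H"
  shows "D12 p H"
    and "\<And>G. D12 p G \<Longrightarrow> (\<integral>\<omega>. F \<omega> * G \<omega> \<partial>M) = (\<integral>\<omega>. F \<omega> \<partial>M) * (\<integral>\<omega>. G \<omega> \<partial>M) + (\<integral>\<omega>. ipair (\<lambda>k. Dk p k G \<omega>) (\<lambda>k. - Dk p k H \<omega>) \<partial>M)"
proof -
  obtain f J where Jd: "\<And>n. n \<ge> 1 \<Longrightarrow> is_J p n (f n) (J n)"
    and LF: "L2lim p (\<lambda>N \<omega>. (\<integral>\<omega>'. F \<omega>' \<partial>Mrad p) + (\<Sum>n\<in>{1..N}. J n \<omega>)) F"
    and LH: "L2lim p (\<lambda>N \<omega>. - (\<Sum>n\<in>{1..N}. J n \<omega> / real n)) H"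
    and Hm: "H \<in> borel_measurable M"
    using H unfolding Linv_def by blast
  interpret C: chaos p F H f J
    by unfold_locales (use FD Jd LF LH Hm in auto)
  show "D12 p H" by (rule C.H_D12)
  fix G assume "D12 p G"
  then show "(\<integral>\<omega>. F \<omega> * G \<omega> \<partial>M) = (\<integral>\<omega>. F \<omega> \<partial>M) * (\<integral>\<omega>. G \<omega> \<partial>M) + (\<integral>\<omega>. ipair (\<lambda>k. Dk p k G \<omega>) (\<lambda>k. - Dk p k H \<omega>) \<partial>M)"
    using C.IBP unfolding C.c0_def by simp
qed

end

definition gL :: "real \<Rightarrow> real \<Rightarrow> real \<Rightarrow> real" where
  "gL s L x = (if x \<le> L then exp (s * x) else exp (s * L) * (1 + s * (x - L)))"

definition gL' :: "real \<Rightarrow> real \<Rightarrow> real \<Rightarrow> real" where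
  "gL' s L x = s * exp (s * min x L)"


lemma exp_tan_my: "exp u + exp u * (t - u) \<le> exp (t::real)"
proof -
  have "1 + (t - u) \<le> exp (t - u)" by (rule exp_ge_add_one_self)
  then have "exp u * (1 + (t - u)) \<le> exp u * exp (t - u)" by (intro mult_left_mono) auto
  then show ?thesis by (simp add: exp_diff algebra_simps)
qed

lemma gL_tangent:
  assumes s: "s \<ge> 0"
  shows "gL s L x + gL' s L x * (y - x) \<le> gL s L y"
proof (cases "x \<le> L")
  case x: True
  show ?thesis
  proof (cases "y \<le> L")
    case True
    then show ?thesis using x exp_tan_my[of "s * x" "s * y"]
      by (simp add: gL_def gL'_def min_def algebra_simps)
  next
    case False
    have a: "exp (s * x) + exp (s * x) * (s * L - s * x) \<le> exp (s * L)" by (rule exp_tan_my)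
    have b: "exp (s * x) \<le> exp (s * L)" using x s by (simp add: mult_left_mono)
    have c: "s * exp (s * x) * (y - L) \<le> s * exp (s * L) * (y - L)"
      using b False s by (intro mult_right_mono mult_left_mono) auto
    have "gL s L x + gL' s L x * (y - x) = exp (s * x) + exp (s * x) * (s * L - s * x) + s * exp (s * x) * (y - L)"
      using x by (simp add: gL_def gL'_def min_def algebra_simps)
    also have "\<dots> \<le> exp (s * L) + s * exp (s * L) * (y - L)" using a c by linarith
    also have "\<dots> = gL s L y" using False by (simp add: gL_def algebra_simps)
    finally show ?thesis .
  qed
next
  case x: False
  show ?thesis
  proof (cases "y \<le> L")
    case True
    have a: "exp (s * L) + exp (s * L) * (s * y - s * L) \<le> exp (s * y)" by (rule exp_tan_my)
    have "gL s L x + gL' s L x * (y - x) = exp (s * L) + exp (s * L) * (s * y - s * L)"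
      using x by (simp add: gL_def gL'_def min_def algebra_simps)
    also have "\<dots> \<le> gL s L y" using a True by (simp add: gL_def)
    finally show ?thesis .
  next
    case False
    then show ?thesis using x by (simp add: gL_def gL'_def min_def algebra_simps)
  qed
qed

lemma gL'_mono: "s \<ge> 0 \<Longrightarrow> x \<le> y \<Longrightarrow> gL' s L x \<le> gL' s L y"
  unfolding gL'_def by (intro mult_left_mono) (auto simp: min_def mult_left_mono)

lemma gL'_nonneg: "s \<ge> 0 \<Longrightarrow> gL' s L x \<ge> 0"
  unfolding gL'_def by simp

lemma gL'_le_exp: "s \<ge> 0 \<Longrightarrow> gL' s L x \<le> s * exp (s * x)"
  unfolding gL'_def by (intro mult_left_mono) (auto simp: min_def mult_left_mono)

lemma gL'_le_const: "s \<ge> 0 \<Longrightarrow> gL' s L x \<le> s * exp (s * L)"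
  unfolding gL'_def by (intro mult_left_mono) (auto simp: min_def mult_left_mono)

lemma gL_le_exp: "s \<ge> 0 \<Longrightarrow> gL s L x \<le> exp (s * x)"
proof -
  assume s: "s \<ge> 0"
  show ?thesis
  proof (cases "x \<le> L")
    case False
    have "1 + s * (x - L) \<le> exp (s * (x - L))" by (rule exp_ge_add_one_self)
    then have "exp (s * L) * (1 + s * (x - L)) \<le> exp (s * L) * exp (s * (x - L))" by (intro mult_left_mono) auto
    then show ?thesis using False by (simp add: gL_def exp_add[symmetric] algebra_simps)
  qed (simp add: gL_def)
qed

lemma gL_pos: "s \<ge> 0 \<Longrightarrow> gL s L x > 0"
proof -
  assume s: "s \<ge> 0"
  show ?thesis
  proof (cases "x \<le> L")
    case False
    then have "s * (x - L) \<ge> 0" using s by simp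
    then have "1 + s * (x - L) > 0" by linarith
    then show ?thesis using False by (simp add: gL_def)
  qed (simp add: gL_def)
qed

lemma gL_chain:
  assumes s: "s \<ge> 0" and c: "c = a \<or> c = b"
  shows "\<bar>gL s L a - gL s L b - gL' s L c * (a - b)\<bar> \<le> (a - b) * (gL' s L a - gL' s L b)"
proof -
  have t1: "gL s L b + gL' s L b * (a - b) \<le> gL s L a" by (rule gL_tangent[OF s])
  have t2: "gL s L a + gL' s L a * (b - a) \<le> gL s L b" by (rule gL_tangent[OF s])
  show ?thesis
  proof (cases "b \<le> a")
    case True
    have m: "gL' s L b \<le> gL' s L a" by (rule gL'_mono[OF s True])
    have u: "(gL' s L c - gL' s L b) * (a - b) \<ge> 0" "(gL' s L a - gL' s L c) * (a - b) \<ge> 0"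
      using c m True by auto
    show ?thesis using t1 t2 u by (auto simp: abs_le_iff algebra_simps)
  next
    case False
    have m: "gL' s L a \<le> gL' s L b" using False by (intro gL'_mono[OF s]) auto
    have u: "(gL' s L c - gL' s L a) * (b - a) \<ge> 0" "(gL' s L b - gL' s L c) * (b - a) \<ge> 0"
      using c m False by auto
    show ?thesis using t1 t2 u by (auto simp: abs_le_iff algebra_simps)
  qed
qed

lemma gL_lip:
  assumes s: "s \<ge> 0"
  shows "\<bar>gL s L x - gL s L y\<bar> \<le> s * exp (s * L) * \<bar>x - y\<bar>"
proof -
  have t1: "gL s L y + gL' s L y * (x - y) \<le> gL s L x" by (rule gL_tangent[OF s])
  have t2: "gL s L x + gL' s L x * (y - x) \<le> gL s L y" by (rule gL_tangent[OF s])
  have b1: "0 \<le> gL' s L x" "gL' s L x \<le> s * exp (s * L)" "0 \<le> gL' s L y" "gL' s L y \<le> s * exp (s * L)"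
    using s by (auto intro: gL'_nonneg gL'_le_const)
  show ?thesis
  proof (cases "y \<le> x")
    case True
    have "gL' s L x * (x - y) \<le> s * exp (s * L) * (x - y)" using b1 True by (intro mult_right_mono) auto
    moreover have "0 \<le> gL' s L y * (x - y)" using b1 True by auto
    ultimately show ?thesis using t1 t2 True by (auto simp: abs_le_iff algebra_simps)
  next
    case False
    have "gL' s L y * (y - x) \<le> s * exp (s * L) * (y - x)" using b1 False by (intro mult_right_mono) auto
    moreover have "0 \<le> gL' s L x * (y - x)" using b1 False by auto
    ultimately show ?thesis using t1 t2 False by (auto simp: abs_le_iff algebra_simps)
  qed
qed

lemma exp_lip: "(a::real) \<le> C \<Longrightarrow> b \<le> C \<Longrightarrow> \<bar>exp a - exp b\<bar> \<le> exp C * \<bar>a - b\<bar>"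
proof -
  assume a: "a \<le> C" and b: "b \<le> C"
  have k: "exp v - exp w \<le> exp C * (v - w)" if "w \<le> v" "v \<le> C" for v w
  proof -
    have "exp v + exp v * (w - v) \<le> exp w" by (rule exp_tan_my)
    then have "exp v - exp w \<le> exp v * (v - w)" by (simp add: algebra_simps)
    also have "\<dots> \<le> exp C * (v - w)" using that by (intro mult_right_mono) auto
    finally show ?thesis .
  qed
  show ?thesis
  proof (cases "b \<le> a")
    case True then show ?thesis using k[OF True a] by (simp add: abs_le_iff)
  next
    case False then show ?thesis using k[of a b] b by (simp add: abs_le_iff)
  qed
qed

lemma gL'_lip:
  assumes s: "s \<ge> 0"
  shows "\<bar>gL' s L x - gL' s L y\<bar> \<le> s * (s * exp (s * L)) * \<bar>x - y\<bar>"
proof -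
  have "\<bar>exp (s * min x L) - exp (s * min y L)\<bar> \<le> exp (s * L) * \<bar>s * min x L - s * min y L\<bar>"
    using s by (intro exp_lip) (auto simp: mult_left_mono)
  also have "\<bar>s * min x L - s * min y L\<bar> \<le> s * \<bar>x - y\<bar>"
    using s by (simp add: right_diff_distrib[symmetric] abs_mult) (intro mult_left_mono, auto simp: min_def)
  finally have "\<bar>exp (s * min x L) - exp (s * min y L)\<bar> \<le> exp (s * L) * (s * \<bar>x - y\<bar>)"
    by (simp add: mult_left_mono)
  then have "s * \<bar>exp (s * min x L) - exp (s * min y L)\<bar> \<le> s * (exp (s * L) * (s * \<bar>x - y\<bar>))"
    using s by (intro mult_left_mono) auto
  moreover have "\<bar>gL' s L x - gL' s L y\<bar> = s * \<bar>exp (s * min x L) - exp (s * min y L)\<bar>"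
    unfolding gL'_def using s by (simp only: right_diff_distrib[symmetric] abs_mult abs_of_nonneg)
  moreover have "s * (exp (s * L) * (s * \<bar>x - y\<bar>)) = s * (s * exp (s * L)) * \<bar>x - y\<bar>"
    by (simp only: mult_ac)
  ultimately show ?thesis by simp
qed

context rad begin

lemma D12_lip:
  assumes F: "D12 p F" and m: "(\<lambda>\<omega>. \<psi> (F \<omega>)) \<in> borel_measurable M"
    and lip: "\<And>x y. \<bar>\<psi> x - \<psi> y\<bar> \<le> Lc * \<bar>x - y\<bar>"
  shows "D12 p (\<lambda>\<omega>. \<psi> (F \<omega>))"
proof -
  have Lc: "Lc \<ge> 0" using lip[of 1 0] by (smt (verit) zero_le_mult_iff)
  have LF: "L2 p F" using F by (rule D12_L2)
  have "L2 p (\<lambda>\<omega>. \<psi> (F \<omega>))"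
    unfolding L2_def
  proof (intro conjI m)
    have i: "integrable M (\<lambda>\<omega>. 2 * (\<psi> 0)\<^sup>2 + 2 * Lc\<^sup>2 * (F \<omega>)\<^sup>2)" using LF unfolding L2_def by auto
    show "integrable M (\<lambda>\<omega>. (\<psi> (F \<omega>))\<^sup>2)"
    proof (rule Bochner_Integration.integrable_bound[OF i])
      show "(\<lambda>\<omega>. (\<psi> (F \<omega>))\<^sup>2) \<in> borel_measurable M" using m by auto
      show "AE \<omega> in M. norm ((\<psi> (F \<omega>))\<^sup>2) \<le> norm (2 * (\<psi> 0)\<^sup>2 + 2 * Lc\<^sup>2 * (F \<omega>)\<^sup>2)"
      proof (intro AE_I2)
        fix \<omega>
        have a: "\<bar>\<psi> (F \<omega>) - \<psi> 0\<bar> \<le> Lc * \<bar>F \<omega>\<bar>" using lip[of "F \<omega>" 0] by simp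
        have b: "(\<psi> (F \<omega>) - \<psi> 0)\<^sup>2 \<le> (Lc * \<bar>F \<omega>\<bar>)\<^sup>2"
          using a by (metis abs_ge_zero abs_le_square_iff abs_of_nonneg order_trans)
        have "(\<psi> (F \<omega>))\<^sup>2 \<le> 2 * (\<psi> 0)\<^sup>2 + 2 * (\<psi> (F \<omega>) - \<psi> 0)\<^sup>2"
          using sq_sum_le[of "\<psi> 0" "\<psi> (F \<omega>) - \<psi> 0"] by simp
        also have "\<dots> \<le> 2 * (\<psi> 0)\<^sup>2 + 2 * Lc\<^sup>2 * (F \<omega>)\<^sup>2" using b by (simp add: power_mult_distrib)
        finally show "norm ((\<psi> (F \<omega>))\<^sup>2) \<le> norm (2 * (\<psi> 0)\<^sup>2 + 2 * Lc\<^sup>2 * (F \<omega>)\<^sup>2)" by simp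
      qed
    qed
  qed
  moreover have "Dn M (DD (\<lambda>\<omega>. \<psi> (F \<omega>))) < \<infinity>"
  proof -
    have "Dn M (DD (\<lambda>\<omega>. \<psi> (F \<omega>))) \<le> (\<integral>\<^sup>+\<omega>. ennreal (Lc\<^sup>2) * (\<Sum>k. ennreal ((Dk p k F \<omega>)\<^sup>2)) \<partial>M)"
      unfolding Dn_def
    proof (intro nn_integral_mono)
      fix \<omega>
      have "(\<Sum>k. ennreal ((Dk p k (\<lambda>\<omega>. \<psi> (F \<omega>)) \<omega>)\<^sup>2)) \<le> (\<Sum>k. ennreal (Lc\<^sup>2) * ennreal ((Dk p k F \<omega>)\<^sup>2))"
      proof (intro suminf_le summableI)
        fix k
        have c: "cc k \<ge> 0" using cc_pos[of k] by linarith
        have "\<bar>Dk p k (\<lambda>\<omega>. \<psi> (F \<omega>)) \<omega>\<bar> \<le> Lc * \<bar>Dk p k F \<omega>\<bar>"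
        proof -
          have "\<bar>Dk p k (\<lambda>\<omega>. \<psi> (F \<omega>)) \<omega>\<bar> = cc k * \<bar>\<psi> (F (fun_upd \<omega> k True)) - \<psi> (F (fun_upd \<omega> k False))\<bar>"
            unfolding Dk_def using c by (simp add: abs_mult)
          also have "\<dots> \<le> cc k * (Lc * \<bar>F (fun_upd \<omega> k True) - F (fun_upd \<omega> k False)\<bar>)"
            using c lip by (intro mult_left_mono) auto
          also have "\<dots> = Lc * \<bar>Dk p k F \<omega>\<bar>" unfolding Dk_def using c by (simp add: abs_mult)
          finally show ?thesis .
        qed
        then have "(Dk p k (\<lambda>\<omega>. \<psi> (F \<omega>)) \<omega>)\<^sup>2 \<le> Lc\<^sup>2 * (Dk p k F \<omega>)\<^sup>2"
          by (metis abs_ge_zero abs_le_square_iff abs_of_nonneg order_trans power_mult_distrib power2_abs Lc abs_mult)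
        then show "ennreal ((Dk p k (\<lambda>\<omega>. \<psi> (F \<omega>)) \<omega>)\<^sup>2) \<le> ennreal (Lc\<^sup>2) * ennreal ((Dk p k F \<omega>)\<^sup>2)"
          by (simp add: ennreal_mult[symmetric])
      qed
      then show "(\<Sum>k. ennreal ((DD (\<lambda>\<omega>. \<psi> (F \<omega>)) k \<omega>)\<^sup>2)) \<le> ennreal (Lc\<^sup>2) * (\<Sum>k. ennreal ((DD F k \<omega>)\<^sup>2))"
        by simp
    qed
    also have "\<dots> = ennreal (Lc\<^sup>2) * Dn M (DD F)" unfolding Dn_def using D12_meas[OF F]
      by (intro nn_integral_cmult) (auto intro!: borel_measurable_suminf_order Dk_meas)
    also have "\<dots> < \<infinity>" using D12_fin[OF F] by (simp add: ennreal_mult_less_top)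
    finally show ?thesis .
  qed
  ultimately show ?thesis unfolding D12_iff by simp
qed

lemma gL_borel: "gL s L \<in> borel_measurable borel"
  unfolding gL_def[abs_def] by measurable

lemma gL'_borel: "gL' s L \<in> borel_measurable borel"
  unfolding gL'_def[abs_def] by measurable

lemma gL_meas: "F \<in> borel_measurable M \<Longrightarrow> (\<lambda>\<omega>. gL s L (F \<omega>)) \<in> borel_measurable M"
  using measurable_comp[of F M borel "gL s L" borel] gL_borel by (simp add: comp_def)

lemma gL'_meas: "F \<in> borel_measurable M \<Longrightarrow> (\<lambda>\<omega>. gL' s L (F \<omega>)) \<in> borel_measurable M"
  using measurable_comp[of F M borel "gL' s L" borel] gL'_borel by (simp add: comp_def)

lemma gL_D12: "D12 p F \<Longrightarrow> s \<ge> 0 \<Longrightarrow> D12 p (\<lambda>\<omega>. gL s L (F \<omega>))"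
  by (rule D12_lip[OF _ gL_meas[OF D12_meas] gL_lip])

lemma gL'_D12: "D12 p F \<Longrightarrow> s \<ge> 0 \<Longrightarrow> D12 p (\<lambda>\<omega>. gL' s L (F \<omega>))"
  by (rule D12_lip[OF _ gL'_meas[OF D12_meas] gL'_lip])

lemma upd_self: "fun_upd \<omega> k (\<omega> k) = \<omega>" by simp

lemma term_ineq:
  assumes s: "s \<ge> 0"
  shows "Dk p k (\<lambda>\<omega>. gL s L (F \<omega>)) \<omega> * (- Dk p k H \<omega>) \<le>
    gL' s L (F \<omega>) * (Dk p k F \<omega> * (- Dk p k H \<omega>)) +
    Dk p k (\<lambda>\<omega>. gL' s L (F \<omega>)) \<omega> * ((1 / cc k) * Dk p k F \<omega> * \<bar>Dk p k H \<omega>\<bar>)"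
proof -
  define a where "a = F (fun_upd \<omega> k True)"
  define b where "b = F (fun_upd \<omega> k False)"
  define h where "h = Dk p k H \<omega>"
  define c where "c = cc k"
  have c: "c > 0" unfolding c_def by (rule cc_pos)
  have Fw: "F \<omega> = a \<or> F \<omega> = b"
  proof (cases "\<omega> k")
    case True
    then have "fun_upd \<omega> k True = \<omega>" by (intro ext) auto
    then show ?thesis unfolding a_def by simp
  next
    case False
    then have "fun_upd \<omega> k False = \<omega>" by (intro ext) auto
    then show ?thesis unfolding b_def by simp
  qed
  have DG: "Dk p k (\<lambda>\<omega>. gL s L (F \<omega>)) \<omega> = c * (gL s L a - gL s L b)" unfolding Dk_def a_def b_def c_def by simp
  have DG': "Dk p k (\<lambda>\<omega>. gL' s L (F \<omega>)) \<omega> = c * (gL' s L a - gL' s L b)" unfolding Dk_def a_def b_def c_def by simp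
  have DF: "Dk p k F \<omega> = c * (a - b)" unfolding Dk_def a_def b_def c_def by simp
  have ch: "\<bar>gL s L a - gL s L b - gL' s L (F \<omega>) * (a - b)\<bar> \<le> (a - b) * (gL' s L a - gL' s L b)"
    by (rule gL_chain[OF s Fw])
  have "c * (gL s L a - gL s L b) * (- h) - gL' s L (F \<omega>) * (c * (a - b) * (- h))
      = c * (gL s L a - gL s L b - gL' s L (F \<omega>) * (a - b)) * (- h)" by (simp add: algebra_simps)
  also have "\<dots> \<le> c * \<bar>gL s L a - gL s L b - gL' s L (F \<omega>) * (a - b)\<bar> * \<bar>h\<bar>"
  proof -
    let ?Y = "gL s L a - gL s L b - gL' s L (F \<omega>) * (a - b)"
    have "c * ?Y * (- h) \<le> \<bar>c * ?Y * (- h)\<bar>" by (rule abs_ge_self)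
    also have "\<bar>c * ?Y * (- h)\<bar> = c * \<bar>?Y\<bar> * \<bar>h\<bar>" using c by (simp add: abs_mult)
    finally show ?thesis .
  qed
  also have "\<dots> \<le> c * ((a - b) * (gL' s L a - gL' s L b)) * \<bar>h\<bar>"
    using c ch by (intro mult_right_mono mult_left_mono) auto
  also have "\<dots> = c * (gL' s L a - gL' s L b) * ((1 / c) * (c * (a - b)) * \<bar>h\<bar>)"
    using c by (simp add: field_simps)
  finally show ?thesis unfolding DG DG' DF h_def c_def[symmetric] by simp
qed

end

locale setting = rad +
  fixes F H du :: "(nat \<Rightarrow> bool) \<Rightarrow> real" and A :: real and \<gamma>1 \<gamma>2 :: "real \<Rightarrow> real"
  assumes FD: "D12 p F"
    and mean: "(\<integral>\<omega>. F \<omega> \<partial>Mrad p) = 0"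
    and H: "Linv p F H"
    and u: "div_rel p (\<lambda>k \<omega>. (1 / sqrt (p k * (1 - p k))) * Dk p k F \<omega> * \<bar>Dk p k H \<omega>\<bar>) du"
    and Apos: "A > 0"
    and mono1: "mono_on {0..A} \<gamma>1"
    and mono2: "mono_on {0..A} \<gamma>2"
    and mgf: "\<And>t. 0 \<le> t \<Longrightarrow> t \<le> A \<Longrightarrow> integrable (Mrad p) (\<lambda>\<omega>. exp (t * F \<omega>))"
    and h1: "\<And>t. 0 \<le> t \<Longrightarrow> t \<le> A \<Longrightarrow>
       integrable (Mrad p) (\<lambda>\<omega>. \<bar>1 - ipair (\<lambda>k. Dk p k F \<omega>) (\<lambda>k. - Dk p k H \<omega>)\<bar> * exp (t * F \<omega>)) \<and>
       (\<integral>\<omega>. \<bar>1 - ipair (\<lambda>k. Dk p k F \<omega>) (\<lambda>k. - Dk p k H \<omega>)\<bar> * exp (t * F \<omega>) \<partial>Mrad p)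
         \<le> \<gamma>1 t * (\<integral>\<omega>. exp (t * F \<omega>) \<partial>Mrad p)"
    and h2: "\<And>t. 0 \<le> t \<Longrightarrow> t \<le> A \<Longrightarrow>
       integrable (Mrad p) (\<lambda>\<omega>. \<bar>du \<omega>\<bar> * exp (t * F \<omega>)) \<and>
       (\<integral>\<omega>. \<bar>du \<omega>\<bar> * exp (t * F \<omega>) \<partial>Mrad p) \<le> \<gamma>2 t * (\<integral>\<omega>. exp (t * F \<omega>) \<partial>Mrad p)"
begin

lemma Fm: "F \<in> borel_measurable M" using FD by (rule D12_meas)
lemma HD: "D12 p H" using IBP_main(1)[OF FD H] .
lemma Hmeas: "H \<in> borel_measurable M" using HD by (rule D12_meas)

lemma nHD: "D12 p (\<lambda>\<omega>. (-1) * H \<omega>)" by (rule D12_scale[OF HD])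
lemma Dneg: "Dk p k (\<lambda>\<omega>. (-1) * H \<omega>) \<omega> = - Dk p k H \<omega>" by (simp only: Dk_scale)

lemma ipair_negH_int: "D12 p G \<Longrightarrow> integrable M (\<lambda>\<omega>. ipair (\<lambda>k. Dk p k G \<omega>) (\<lambda>k. - Dk p k H \<omega>))"
  using ipair_D12_int[OF _ nHD] unfolding Dneg .

lemma exp_int: "0 \<le> t \<Longrightarrow> t \<le> A \<Longrightarrow> integrable M (\<lambda>\<omega>. exp (t * F \<omega>))" by (rule mgf)

lemma key_L:
  assumes s: "0 \<le> s" "s \<le> A"
  shows "(\<integral>\<omega>. F \<omega> * gL s L (F \<omega>) \<partial>M) \<le> s * (1 + \<gamma>1 s + \<gamma>2 s) * (\<integral>\<omega>. exp (s * F \<omega>) \<partial>M)"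
proof -
  define G where "G = (\<lambda>\<omega>. gL s L (F \<omega>))"
  define G' where "G' = (\<lambda>\<omega>. gL' s L (F \<omega>))"
  define uu where "uu = (\<lambda>k \<omega>. (1 / sqrt (p k * (1 - p k))) * Dk p k F \<omega> * \<bar>Dk p k H \<omega>\<bar>)"
  define X where "X = (\<lambda>\<omega>. ipair (\<lambda>k. Dk p k F \<omega>) (\<lambda>k. - Dk p k H \<omega>))"
  define \<phi> where "\<phi> = (\<integral>\<omega>. exp (s * F \<omega>) \<partial>M)"
  have GD: "D12 p G" unfolding G_def by (rule gL_D12[OF FD s(1)])
  have G'D: "D12 p G'" unfolding G'_def by (rule gL'_D12[OF FD s(1)])
  have G'm: "G' \<in> borel_measurable M" using G'D by (rule D12_meas)
  have G'b: "0 \<le> G' \<omega>" "G' \<omega> \<le> s * exp (s * L)" "G' \<omega> \<le> s * exp (s * F \<omega>)" for \<omega>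
    unfolding G'_def using s by (auto intro: gL'_nonneg gL'_le_const gL'_le_exp)
  have uP: "L2proc p uu" and duL: "L2 p du" and dual: "\<And>G. D12 p G \<Longrightarrow>
      (\<integral>\<omega>. ipair (\<lambda>k. Dk p k G \<omega>) (\<lambda>k. uu k \<omega>) \<partial>M) = (\<integral>\<omega>. G \<omega> * du \<omega> \<partial>M)"
    using u unfolding div_rel_def uu_def by auto
  have uum: "\<And>k. uu k \<in> borel_measurable M" and uuf: "Dn M uu < \<infinity>"
    using uP unfolding L2proc_def Dn_def by auto
  have ibp: "(\<integral>\<omega>. F \<omega> * G \<omega> \<partial>M) = (\<integral>\<omega>. ipair (\<lambda>k. Dk p k G \<omega>) (\<lambda>k. - Dk p k H \<omega>) \<partial>M)"
    using IBP_main(2)[OF FD H GD] mean by simp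
  have iL: "integrable M (\<lambda>\<omega>. ipair (\<lambda>k. Dk p k G \<omega>) (\<lambda>k. - Dk p k H \<omega>))" by (rule ipair_negH_int[OF GD])
  have iX: "integrable M X" unfolding X_def by (rule ipair_negH_int[OF FD])
  have iGX: "integrable M (\<lambda>\<omega>. G' \<omega> * X \<omega>)"
  proof -
    have "integrable M (\<lambda>\<omega>. X \<omega> * G' \<omega>)"
      by (rule integrable_mult_bdd[OF iX G'm, of "s * exp (s * L)"]) (use G'b in \<open>simp add: abs_of_nonneg\<close>)
    then show ?thesis by (simp add: mult.commute)
  qed
  have iU: "integrable M (\<lambda>\<omega>. ipair (\<lambda>k. Dk p k G' \<omega>) (\<lambda>k. uu k \<omega>))"
    using ipair_int(1)[OF DD_meas[OF G'm] uum D12_fin[OF G'D] uuf] by simp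
  have AEi: "AE \<omega> in M. ipair (\<lambda>k. Dk p k G \<omega>) (\<lambda>k. - Dk p k H \<omega>) \<le> G' \<omega> * X \<omega> + ipair (\<lambda>k. Dk p k G' \<omega>) (\<lambda>k. uu k \<omega>)"
    using ipair_D12_AE[OF GD HD] ipair_D12_AE[OF FD HD] ipair_int(2)[OF DD_meas[OF G'm] uum D12_fin[OF G'D] uuf]
  proof eventually_elim
    case (elim \<omega>)
    have s1: "summable (\<lambda>k. Dk p k G \<omega> * (- Dk p k H \<omega>))"
    proof (rule summable_rabs_cancel)
      show "summable (\<lambda>k. \<bar>Dk p k G \<omega> * (- Dk p k H \<omega>)\<bar>)" using elim(1) by (simp add: abs_mult)
    qed
    have s2: "summable (\<lambda>k. G' \<omega> * (Dk p k F \<omega> * (- Dk p k H \<omega>)))"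
    proof (rule summable_mult, rule summable_rabs_cancel)
      show "summable (\<lambda>k. \<bar>Dk p k F \<omega> * (- Dk p k H \<omega>)\<bar>)" using elim(2) by (simp add: abs_mult)
    qed
    have s3: "summable (\<lambda>k. Dk p k G' \<omega> * uu k \<omega>)"
      using elim(3) by (rule summable_rabs_cancel)
    have "ipair (\<lambda>k. Dk p k G \<omega>) (\<lambda>k. - Dk p k H \<omega>) \<le> (\<Sum>k. G' \<omega> * (Dk p k F \<omega> * (- Dk p k H \<omega>)) + Dk p k G' \<omega> * uu k \<omega>)"
      unfolding ipair_def
    proof (rule suminf_le[OF _ s1 summable_add[OF s2 s3]])
      fix k
      show "Dk p k G \<omega> * (- Dk p k H \<omega>) \<le> G' \<omega> * (Dk p k F \<omega> * (- Dk p k H \<omega>)) + Dk p k G' \<omega> * uu k \<omega>"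
        unfolding G_def G'_def uu_def using term_ineq[OF s(1), of k L F \<omega> H] by simp
    qed
    also have "\<dots> = G' \<omega> * X \<omega> + ipair (\<lambda>k. Dk p k G' \<omega>) (\<lambda>k. uu k \<omega>)"
      unfolding X_def ipair_def
      using suminf_add[OF s2 s3] suminf_mult[OF summable_rabs_cancel, of "\<lambda>k. Dk p k F \<omega> * (- Dk p k H \<omega>)" "G' \<omega>"] elim(2)
      by (simp add: abs_mult)
    finally show ?case .
  qed
  have "(\<integral>\<omega>. F \<omega> * G \<omega> \<partial>M) \<le> (\<integral>\<omega>. G' \<omega> * X \<omega> + ipair (\<lambda>k. Dk p k G' \<omega>) (\<lambda>k. uu k \<omega>) \<partial>M)"
    unfolding ibp by (rule integral_mono_AE[OF iL _ AEi]) (use iGX iU in auto)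
  also have "\<dots> = (\<integral>\<omega>. G' \<omega> * X \<omega> \<partial>M) + (\<integral>\<omega>. G' \<omega> * du \<omega> \<partial>M)"
    using iGX iU dual[OF G'D] by simp
  also have "(\<integral>\<omega>. G' \<omega> * X \<omega> \<partial>M) \<le> s * \<phi> + s * (\<gamma>1 s * \<phi>)"
  proof -
    have ie: "integrable M (\<lambda>\<omega>. exp (s * F \<omega>))" by (rule exp_int[OF s])
    have ih: "integrable M (\<lambda>\<omega>. \<bar>1 - X \<omega>\<bar> * exp (s * F \<omega>))" using h1[OF s] unfolding X_def by simp
    have iG': "integrable M G'" using G'b G'm by (intro P.integrable_const_bound[where B="s * exp (s * L)"]) auto
    have "(\<integral>\<omega>. G' \<omega> * X \<omega> \<partial>M) \<le> (\<integral>\<omega>. s * exp (s * F \<omega>) + s * (\<bar>1 - X \<omega>\<bar> * exp (s * F \<omega>)) \<partial>M)"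
    proof (rule integral_mono[OF iGX])
      show "integrable M (\<lambda>\<omega>. s * exp (s * F \<omega>) + s * (\<bar>1 - X \<omega>\<bar> * exp (s * F \<omega>)))" using ie ih by auto
      fix \<omega>
      have "G' \<omega> * X \<omega> = G' \<omega> - G' \<omega> * (1 - X \<omega>)" by (simp add: algebra_simps)
      also have "\<dots> \<le> G' \<omega> + G' \<omega> * \<bar>1 - X \<omega>\<bar>"
        using G'b(1)[of \<omega>] by (smt (verit) abs_ge_self abs_minus_cancel mult_left_mono minus_mult_right)
      also have "\<dots> \<le> s * exp (s * F \<omega>) + s * exp (s * F \<omega>) * \<bar>1 - X \<omega>\<bar>"
        using G'b(3)[of \<omega>] by (intro add_mono mult_right_mono) auto
      finally show "G' \<omega> * X \<omega> \<le> s * exp (s * F \<omega>) + s * (\<bar>1 - X \<omega>\<bar> * exp (s * F \<omega>))" by (simp add: algebra_simps)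
    qed
    also have "\<dots> = s * \<phi> + s * (\<integral>\<omega>. \<bar>1 - X \<omega>\<bar> * exp (s * F \<omega>) \<partial>M)"
      using ie ih unfolding \<phi>_def by simp
    also have "\<dots> \<le> s * \<phi> + s * (\<gamma>1 s * \<phi>)"
      using h1[OF s] s unfolding X_def \<phi>_def by (intro add_left_mono mult_left_mono) auto
    finally show ?thesis .
  qed
  also have "(\<integral>\<omega>. G' \<omega> * du \<omega> \<partial>M) \<le> s * (\<gamma>2 s * \<phi>)"
  proof -
    have ih: "integrable M (\<lambda>\<omega>. \<bar>du \<omega>\<bar> * exp (s * F \<omega>))" using h2[OF s] by simp
    have iGd: "integrable M (\<lambda>\<omega>. G' \<omega> * du \<omega>)"
    proof -
      have "integrable M (\<lambda>\<omega>. du \<omega> * G' \<omega>)"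
        by (rule integrable_mult_bdd[OF L2_int[OF duL] G'm, of "s * exp (s * L)"]) (use G'b in \<open>simp add: abs_of_nonneg\<close>)
      then show ?thesis by (simp add: mult.commute)
    qed
    have "(\<integral>\<omega>. G' \<omega> * du \<omega> \<partial>M) \<le> (\<integral>\<omega>. s * (\<bar>du \<omega>\<bar> * exp (s * F \<omega>)) \<partial>M)"
    proof (rule integral_mono[OF iGd])
      show "integrable M (\<lambda>\<omega>. s * (\<bar>du \<omega>\<bar> * exp (s * F \<omega>)))" using ih by auto
      fix \<omega>
      have "G' \<omega> * du \<omega> \<le> G' \<omega> * \<bar>du \<omega>\<bar>" using G'b(1)[of \<omega>] by (intro mult_left_mono) auto
      also have "\<dots> \<le> s * exp (s * F \<omega>) * \<bar>du \<omega>\<bar>" using G'b(3)[of \<omega>] by (intro mult_right_mono) auto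
      finally show "G' \<omega> * du \<omega> \<le> s * (\<bar>du \<omega>\<bar> * exp (s * F \<omega>))" by (simp add: algebra_simps)
    qed
    also have "\<dots> = s * (\<integral>\<omega>. \<bar>du \<omega>\<bar> * exp (s * F \<omega>) \<partial>M)" by simp
    also have "\<dots> \<le> s * (\<gamma>2 s * \<phi>)" using h2[OF s] s unfolding \<phi>_def by (intro mult_left_mono) auto
    finally show ?thesis .
  qed
  finally show ?thesis unfolding G_def \<phi>_def by (simp add: algebra_simps)
qed

end

lemma absexp:
  fixes x r A :: real
  assumes r: "0 \<le> r" "r < A"
  shows "\<bar>x\<bar> * exp (r * x) \<le> \<bar>x\<bar> + exp (A * x) / (A - r)"
proof (cases "x \<le> 0")
  case True
  then have "exp (r * x) \<le> 1" using r by (simp add: mult_nonneg_nonpos)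
  then have "\<bar>x\<bar> * exp (r * x) \<le> \<bar>x\<bar>" by (simp add: mult_left_le)
  moreover have "exp (A * x) / (A - r) \<ge> 0" using r by simp
  ultimately show ?thesis by linarith
next
  case False
  have "(A - r) * x \<le> exp ((A - r) * x)" using exp_ge_add_one_self[of "(A - r) * x"] by linarith
  then have "x \<le> exp ((A - r) * x) / (A - r)" using r by (simp add: field_simps)
  then have "x * exp (r * x) \<le> exp ((A - r) * x) / (A - r) * exp (r * x)" by (intro mult_right_mono) auto
  also have "\<dots> = exp (A * x) / (A - r)" by (simp add: exp_add[symmetric] algebra_simps)
  finally show ?thesis using False by simp
qed

context setting begin

definition phi :: "real \<Rightarrow> real" where "phi t = (\<integral>\<omega>. exp (t * F \<omega>) \<partial>M)"

lemma F_int: "integrable M F" using L2_int[OF D12_L2[OF FD]] .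

lemma int_absexp:
  assumes r: "0 \<le> r" "r < A"
  shows "integrable M (\<lambda>\<omega>. \<bar>F \<omega>\<bar> * exp (r * F \<omega>))"
proof (rule Bochner_Integration.integrable_bound[where f="\<lambda>\<omega>. \<bar>F \<omega>\<bar> + exp (A * F \<omega>) / (A - r)"])
  show "integrable M (\<lambda>\<omega>. \<bar>F \<omega>\<bar> + exp (A * F \<omega>) / (A - r))"
    using F_int mgf[of A] Apos by auto
  show "(\<lambda>\<omega>. \<bar>F \<omega>\<bar> * exp (r * F \<omega>)) \<in> borel_measurable M" using Fm by measurable
  show "AE \<omega> in M. norm (\<bar>F \<omega>\<bar> * exp (r * F \<omega>)) \<le> norm (\<bar>F \<omega>\<bar> + exp (A * F \<omega>) / (A - r))"
    using absexp[OF r] r by (intro AE_I2) (simp add: abs_of_nonneg add_nonneg_nonneg)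
qed

lemma key:
  assumes s: "0 < s" "s < A"
  shows "(\<integral>\<omega>. F \<omega> * exp (s * F \<omega>) \<partial>M) \<le> s * (1 + \<gamma>1 s + \<gamma>2 s) * phi s"
proof -
  have lim: "(\<lambda>m. \<integral>\<omega>. F \<omega> * gL s (real m) (F \<omega>) \<partial>M) \<longlonglongrightarrow> (\<integral>\<omega>. F \<omega> * exp (s * F \<omega>) \<partial>M)"
  proof (rule integral_dominated_convergence[where w="\<lambda>\<omega>. \<bar>F \<omega>\<bar> * exp (s * F \<omega>)"])
    show "(\<lambda>\<omega>. F \<omega> * exp (s * F \<omega>)) \<in> borel_measurable M" using Fm by measurable
    show "(\<lambda>\<omega>. F \<omega> * gL s (real m) (F \<omega>)) \<in> borel_measurable M" for m
      using gL_meas[OF Fm] Fm by measurable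
    show "integrable M (\<lambda>\<omega>. \<bar>F \<omega>\<bar> * exp (s * F \<omega>))" using int_absexp s by auto
    show "AE \<omega> in M. (\<lambda>m. F \<omega> * gL s (real m) (F \<omega>)) \<longlonglongrightarrow> F \<omega> * exp (s * F \<omega>)"
    proof (intro AE_I2 tendsto_eventually)
      fix \<omega>
      obtain m0 :: nat where "F \<omega> \<le> real m0" using real_arch_simple by blast
      then show "eventually (\<lambda>m. F \<omega> * gL s (real m) (F \<omega>) = F \<omega> * exp (s * F \<omega>)) sequentially"
        by (intro eventually_sequentiallyI[of m0]) (auto simp: gL_def)
    qed
    show "AE \<omega> in M. norm (F \<omega> * gL s (real m) (F \<omega>)) \<le> \<bar>F \<omega>\<bar> * exp (s * F \<omega>)" for m
    proof (intro AE_I2)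
      fix \<omega>
      have "0 < gL s (real m) (F \<omega>)" "gL s (real m) (F \<omega>) \<le> exp (s * F \<omega>)"
        using s by (auto intro: gL_pos gL_le_exp)
      then show "norm (F \<omega> * gL s (real m) (F \<omega>)) \<le> \<bar>F \<omega>\<bar> * exp (s * F \<omega>)"
        by (simp add: abs_mult mult_left_mono)
    qed
  qed
  show ?thesis unfolding phi_def
    by (rule LIMSEQ_le_const2[OF lim]) (use key_L s in auto)
qed

lemma phi_seq:
  assumes X: "\<And>i. X i \<in> {0..A}" and lim: "X \<longlonglongrightarrow> x" and x: "x \<in> {0..A}"
  shows "(\<lambda>i. phi (X i)) \<longlonglongrightarrow> phi x"
  unfolding phi_def
proof (rule integral_dominated_convergence[where w="\<lambda>\<omega>. 1 + exp (A * F \<omega>)"])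
  show "(\<lambda>\<omega>. exp (x * F \<omega>)) \<in> borel_measurable M" using Fm by measurable
  show "(\<lambda>\<omega>. exp (X i * F \<omega>)) \<in> borel_measurable M" for i using Fm by measurable
  show "integrable M (\<lambda>\<omega>. 1 + exp (A * F \<omega>))" using mgf[of A] Apos by auto
  show "AE \<omega> in M. (\<lambda>i. exp (X i * F \<omega>)) \<longlonglongrightarrow> exp (x * F \<omega>)"
    using lim by (intro AE_I2 tendsto_intros) auto
  show "AE \<omega> in M. norm (exp (X i * F \<omega>)) \<le> 1 + exp (A * F \<omega>)" for i
  proof (intro AE_I2)
    fix \<omega>
    have "exp (X i * F \<omega>) \<le> max 1 (exp (A * F \<omega>))"
    proof (cases "F \<omega> \<ge> 0")
      case True then show ?thesis using X[of i] by (auto intro!: max.coboundedI2 mult_right_mono)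
    next
      case False then show ?thesis using X[of i] by (auto intro!: max.coboundedI1 simp: mult_nonneg_nonpos)
    qed
    moreover have "max 1 (exp (A * F \<omega>)) \<le> 1 + exp (A * F \<omega>)"
      using exp_gt_zero[of "A * F \<omega>"] by (simp add: max_def)
    ultimately have "exp (X i * F \<omega>) \<le> 1 + exp (A * F \<omega>)" by linarith
    then show "norm (exp (X i * F \<omega>)) \<le> 1 + exp (A * F \<omega>)" by simp
  qed
qed

lemma phi_cont: "continuous_on {0..A} phi"
  by (rule continuous_on_sequentiallyI) (use phi_seq in auto)

lemma phi_ge1: "0 \<le> t \<Longrightarrow> t \<le> A \<Longrightarrow> phi t \<ge> 1"
proof -
  assume t: "0 \<le> t" "t \<le> A"
  have "(\<integral>\<omega>. 1 + t * F \<omega> \<partial>M) \<le> phi t"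
    unfolding phi_def using F_int mgf[OF t] by (intro integral_mono) (auto simp: exp_ge_add_one_self)
  moreover have "(\<integral>\<omega>. 1 + t * F \<omega> \<partial>M) = 1" using F_int mean P.prob_space by simp
  ultimately show ?thesis by simp
qed

end

lemma exp_interval_bound:
  fixes t a b x :: real
  assumes "a \<le> t" "t \<le> b"
  shows "exp (t * x) \<le> exp (a * x) + exp (b * x)"
proof (cases "x \<ge> 0")
  case True
  then have "t * x \<le> b * x" using assms by (intro mult_right_mono) auto
  then have "exp (t * x) \<le> exp (b * x)" by simp
  then show ?thesis using exp_gt_zero[of "a * x"] by linarith
next
  case False
  then have "t * x \<le> a * x" using assms by (intro mult_right_mono_neg) auto
  then have "exp (t * x) \<le> exp (a * x)" by simp
  then show ?thesis using exp_gt_zero[of "b * x"] by linarith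
qed

lemma quot_bound:
  fixes y s x d :: real
  assumes d: "\<bar>y - s\<bar> \<le> d" and ys: "y \<noteq> s"
  shows "\<bar>(exp (y * x) - exp (s * x)) / (y - s)\<bar> \<le> \<bar>x\<bar> * exp ((s - d) * x) + \<bar>x\<bar> * exp ((s + d) * x)"
proof -
  define C where "C = max (y * x) (s * x)"
  have "\<bar>exp (y * x) - exp (s * x)\<bar> \<le> exp C * \<bar>y * x - s * x\<bar>"
    unfolding C_def by (rule exp_lip) auto
  also have "\<bar>y * x - s * x\<bar> = \<bar>x\<bar> * \<bar>y - s\<bar>" by (simp add: left_diff_distrib[symmetric] abs_mult)
  finally have a: "\<bar>exp (y * x) - exp (s * x)\<bar> \<le> exp C * (\<bar>x\<bar> * \<bar>y - s\<bar>)" .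
  have ypos: "\<bar>y - s\<bar> > 0" using ys by simp
  have "\<bar>(exp (y * x) - exp (s * x)) / (y - s)\<bar> = \<bar>exp (y * x) - exp (s * x)\<bar> / \<bar>y - s\<bar>" by (simp add: abs_divide)
  also have "\<dots> \<le> exp C * (\<bar>x\<bar> * \<bar>y - s\<bar>) / \<bar>y - s\<bar>" using a ypos by (intro divide_right_mono) auto
  also have "\<dots> = exp C * \<bar>x\<bar>" using ypos by simp
  also have "exp C \<le> exp ((s - d) * x) + exp ((s + d) * x)"
  proof -
    have "exp (y * x) \<le> exp ((s - d) * x) + exp ((s + d) * x)" using d by (intro exp_interval_bound) auto
    moreover have "exp (s * x) \<le> exp ((s - d) * x) + exp ((s + d) * x)" using d by (intro exp_interval_bound) auto
    ultimately show ?thesis unfolding C_def by (simp add: max_def)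
  qed
  then have "exp C * \<bar>x\<bar> \<le> (exp ((s - d) * x) + exp ((s + d) * x)) * \<bar>x\<bar>" by (intro mult_right_mono) auto
  finally show ?thesis by (simp add: algebra_simps)
qed

context setting begin

lemma phi_deriv:
  assumes s: "0 < s" "s < A"
  shows "(phi has_real_derivative (\<integral>\<omega>. F \<omega> * exp (s * F \<omega>) \<partial>M)) (at s)"
proof -
  define d where "d = min s (A - s) / 2"
  have d: "d > 0" "0 \<le> s - d" "s + d < A" using s unfolding d_def by (auto simp: min_def field_simps)
  define D where "D = (\<integral>\<omega>. F \<omega> * exp (s * F \<omega>) \<partial>M)"
  have pt: "(\<lambda>n. (exp (Z n * x) - exp (s * x)) / (Z n - s)) \<longlonglongrightarrow> x * exp (s * x)"
    if "\<And>n. Z n \<noteq> s" "Z \<longlonglongrightarrow> s" for Z x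
  proof -
    have "((\<lambda>y. exp (y * x)) has_real_derivative exp (s * x) * x) (at s)"
      by (auto intro!: derivative_eq_intros)
    then have "((\<lambda>y. (exp (y * x) - exp (s * x)) / (y - s)) \<longlongrightarrow> exp (s * x) * x) (at s)"
      by (simp add: has_field_derivative_iff)
    then have "(\<lambda>n. (exp (Z n * x) - exp (s * x)) / (Z n - s)) \<longlonglongrightarrow> exp (s * x) * x"
      using LIMSEQ_SEQ_conv[THEN iffD2] that by blast
    then show ?thesis by (simp add: mult.commute)
  qed
  have seq: "(\<lambda>n. (phi (Y n) - phi s) / (Y n - s)) \<longlonglongrightarrow> D" if Y: "\<And>n. Y n \<noteq> s" "Y \<longlonglongrightarrow> s" for Y
  proof -
    obtain N where N: "\<And>n. n \<ge> N \<Longrightarrow> norm (Y n - s) < d" using LIMSEQ_D[OF Y(2) d(1)] by blast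
    define Z where "Z n = Y (n + N)" for n
    have Z: "\<And>n. Z n \<noteq> s" "Z \<longlonglongrightarrow> s" "\<And>n. \<bar>Z n - s\<bar> \<le> d"
      using Y N unfolding Z_def by (auto intro: LIMSEQ_ignore_initial_segment less_imp_le)
    have Zin: "Z n \<in> {0..A}" for n using Z(3)[of n] d by (auto simp: abs_le_iff)
    have q: "(phi (Z n) - phi s) / (Z n - s) = (\<integral>\<omega>. (exp (Z n * F \<omega>) - exp (s * F \<omega>)) / (Z n - s) \<partial>M)" for n
      unfolding phi_def using mgf[of "Z n"] mgf[of s] Zin[of n] s by simp
    have "(\<lambda>n. (phi (Z n) - phi s) / (Z n - s)) \<longlonglongrightarrow> D"
      unfolding q D_def
    proof (rule integral_dominated_convergence[where w="\<lambda>\<omega>. \<bar>F \<omega>\<bar> * exp ((s - d) * F \<omega>) + \<bar>F \<omega>\<bar> * exp ((s + d) * F \<omega>)"])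
      show "(\<lambda>\<omega>. F \<omega> * exp (s * F \<omega>)) \<in> borel_measurable M" using Fm by measurable
      show "(\<lambda>\<omega>. (exp (Z n * F \<omega>) - exp (s * F \<omega>)) / (Z n - s)) \<in> borel_measurable M" for n using Fm by measurable
      show "integrable M (\<lambda>\<omega>. \<bar>F \<omega>\<bar> * exp ((s - d) * F \<omega>) + \<bar>F \<omega>\<bar> * exp ((s + d) * F \<omega>))"
        using int_absexp[of "s - d"] int_absexp[of "s + d"] d by auto
      show "AE \<omega> in M. (\<lambda>n. (exp (Z n * F \<omega>) - exp (s * F \<omega>)) / (Z n - s)) \<longlonglongrightarrow> F \<omega> * exp (s * F \<omega>)"
        using pt[OF Z(1,2)] by simp
      show "AE \<omega> in M. norm ((exp (Z n * F \<omega>) - exp (s * F \<omega>)) / (Z n - s)) \<le> \<bar>F \<omega>\<bar> * exp ((s - d) * F \<omega>) + \<bar>F \<omega>\<bar> * exp ((s + d) * F \<omega>)" for n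
        using quot_bound[OF Z(3) Z(1)] by simp
    qed
    then show ?thesis unfolding Z_def by (rule LIMSEQ_offset)
  qed
  have "((\<lambda>y. (phi y - phi s) / (y - s)) \<longlongrightarrow> D) (at s)"
    using seq by (intro LIMSEQ_SEQ_conv[THEN iffD1]) blast
  then show ?thesis unfolding D_def by (simp add: has_field_derivative_iff)
qed

end

context setting begin

lemma phi0: "phi 0 = 1" unfolding phi_def using P.prob_space by simp

lemma phi_pos: "0 \<le> t \<Longrightarrow> t \<le> A \<Longrightarrow> phi t > 0" using phi_ge1 by fastforce

lemma gamma_nonneg1: "0 \<le> t \<Longrightarrow> t \<le> A \<Longrightarrow> \<gamma>1 t \<ge> 0"
proof -
  assume t: "0 \<le> t" "t \<le> A"
  have "0 \<le> (\<integral>\<omega>. \<bar>1 - ipair (\<lambda>k. Dk p k F \<omega>) (\<lambda>k. - Dk p k H \<omega>)\<bar> * exp (t * F \<omega>) \<partial>M)" by simp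
  also have "\<dots> \<le> \<gamma>1 t * phi t" using h1[OF t] unfolding phi_def by simp
  finally show ?thesis using phi_pos[OF t] by (simp add: zero_le_mult_iff)
qed

lemma gamma_nonneg2: "0 \<le> t \<Longrightarrow> t \<le> A \<Longrightarrow> \<gamma>2 t \<ge> 0"
proof -
  assume t: "0 \<le> t" "t \<le> A"
  have "0 \<le> (\<integral>\<omega>. \<bar>du \<omega>\<bar> * exp (t * F \<omega>) \<partial>M)" by simp
  also have "\<dots> \<le> \<gamma>2 t * phi t" using h2[OF t] unfolding phi_def by simp
  finally show ?thesis using phi_pos[OF t] by (simp add: zero_le_mult_iff)
qed

lemma part1:
  assumes t: "0 \<le> t" "t \<le> A"
  shows "phi t \<le> exp (t\<^sup>2 / 2 * (1 + \<gamma>1 t + \<gamma>2 t))"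
proof (cases "t = 0")
  case True then show ?thesis using phi0 by simp
next
  case False
  then have t0: "0 < t" using t by simp
  define c where "c = \<gamma>1 t + \<gamma>2 t"
  define \<psi> where "\<psi> y = ln (phi y) - (1 + c) * y\<^sup>2 / 2" for y
  have cont: "continuous_on {0..t} \<psi>"
  proof -
    have "continuous_on {0..t} phi" by (rule continuous_on_subset[OF phi_cont]) (use t in auto)
    moreover have "\<forall>y\<in>{0..t}. phi y \<noteq> 0" using phi_pos t by fastforce
    ultimately show ?thesis unfolding \<psi>_def[abs_def]
      by (intro continuous_intros continuous_on_ln) auto
  qed
  have der: "(\<psi> has_real_derivative ((\<integral>\<omega>. F \<omega> * exp (y * F \<omega>) \<partial>M) / phi y - (1 + c) * y)) (at y)"
    if y: "0 < y" "y < t" for y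
  proof -
    have d: "(phi has_real_derivative (\<integral>\<omega>. F \<omega> * exp (y * F \<omega>) \<partial>M)) (at y)" using phi_deriv y t by auto
    have p: "phi y > 0" using phi_pos y t by auto
    show ?thesis unfolding \<psi>_def[abs_def]
      using d p by (auto intro!: derivative_eq_intros simp: field_simps power2_eq_square)
  qed
  obtain l z where z: "0 < z" "z < t" and dz: "(\<psi> has_real_derivative l) (at z)" and eq: "\<psi> t - \<psi> 0 = (t - 0) * l"
    using MVT[OF t0 cont] der by (metis real_differentiable_def)
  have l: "l = (\<integral>\<omega>. F \<omega> * exp (z * F \<omega>) \<partial>M) / phi z - (1 + c) * z"
    using DERIV_unique[OF dz der[OF z]] .
  have pz: "phi z > 0" using phi_pos z t by auto
  have "(\<integral>\<omega>. F \<omega> * exp (z * F \<omega>) \<partial>M) \<le> z * (1 + \<gamma>1 z + \<gamma>2 z) * phi z"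
    using key z t by auto
  also have "\<dots> \<le> z * (1 + c) * phi z"
  proof -
    have "\<gamma>1 z \<le> \<gamma>1 t" using mono1 z t by (intro mono_onD[OF mono1]) auto
    moreover have "\<gamma>2 z \<le> \<gamma>2 t" using mono2 z t by (intro mono_onD[OF mono2]) auto
    ultimately show ?thesis using z pz unfolding c_def by (intro mult_right_mono mult_left_mono) auto
  qed
  finally have "(\<integral>\<omega>. F \<omega> * exp (z * F \<omega>) \<partial>M) / phi z \<le> (1 + c) * z"
    using pz by (simp add: divide_le_eq algebra_simps)
  then have "l \<le> 0" unfolding l by simp
  then have "t * l \<le> 0" using t0 by (intro mult_nonneg_nonpos) auto
  then have "\<psi> t \<le> \<psi> 0" using eq by simp
  also have "\<psi> 0 = 0" unfolding \<psi>_def by (simp add: phi0)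
  finally have "ln (phi t) \<le> (1 + c) * t\<^sup>2 / 2" unfolding \<psi>_def by simp
  then have "exp (ln (phi t)) \<le> exp ((1 + c) * t\<^sup>2 / 2)" by simp
  then show ?thesis using phi_pos[OF t] unfolding c_def by (simp add: algebra_simps)
qed

lemma part2:
  assumes d0: "0 \<le> d0" and t: "0 \<le> t" and tS: "t \<le> Sup {s. 0 \<le> s \<and> s \<le> A \<and> s\<^sup>2 / 2 * (\<gamma>1 s + \<gamma>2 s) \<le> d0}"
  shows "phi t \<le> exp d0 * exp (t\<^sup>2 / 2)"
proof -
  define S0 where "S0 = {s. 0 \<le> s \<and> s \<le> A \<and> s\<^sup>2 / 2 * (\<gamma>1 s + \<gamma>2 s) \<le> d0}"
  have ne: "S0 \<noteq> {}" using d0 Apos unfolding S0_def by (intro exI[of _ 0] ex_in_conv[THEN iffD1]) auto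
  have ne': "0 \<in> S0" using d0 Apos unfolding S0_def by auto
  have bdd: "bdd_above S0" unfolding S0_def by (intro bdd_aboveI[of _ A]) auto
  have SA: "Sup S0 \<le> A" using ne' unfolding S0_def by (intro cSup_least) auto
  have lt: "phi y \<le> exp d0 * exp (y\<^sup>2 / 2)" if y: "0 \<le> y" "y < Sup S0" for y
  proof -
    obtain s where s: "s \<in> S0" "y < s" using less_cSupE[OF y(2) ne] by blast
    have s': "0 \<le> s" "s \<le> A" "s\<^sup>2 / 2 * (\<gamma>1 s + \<gamma>2 s) \<le> d0" using s(1) unfolding S0_def by auto
    have yA: "y \<le> A" using s s' by simp
    have g: "0 \<le> \<gamma>1 y" "\<gamma>1 y \<le> \<gamma>1 s" "0 \<le> \<gamma>2 y" "\<gamma>2 y \<le> \<gamma>2 s"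
      using gamma_nonneg1[OF y(1) yA] gamma_nonneg2[OF y(1) yA] mono_onD[OF mono1, of y s] mono_onD[OF mono2, of y s]
        y s s' yA by auto
    have "y\<^sup>2 / 2 * (\<gamma>1 y + \<gamma>2 y) \<le> s\<^sup>2 / 2 * (\<gamma>1 s + \<gamma>2 s)"
    proof (intro mult_mono)
      show "y\<^sup>2 / 2 \<le> s\<^sup>2 / 2" using y s by (simp add: power_mono)
    qed (use g s' in auto)
    then have "y\<^sup>2 / 2 * (\<gamma>1 y + \<gamma>2 y) \<le> d0" using s' by linarith
    then have "y\<^sup>2 / 2 * (1 + \<gamma>1 y + \<gamma>2 y) \<le> d0 + y\<^sup>2 / 2" by (simp add: algebra_simps)
    then have "exp (y\<^sup>2 / 2 * (1 + \<gamma>1 y + \<gamma>2 y)) \<le> exp (d0 + y\<^sup>2 / 2)" by simp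
    with part1[OF y(1) yA] show ?thesis by (simp add: exp_add)
  qed
  show ?thesis
  proof (cases "t < Sup S0")
    case True then show ?thesis using lt t by simp
  next
    case False
    then have tS0: "t = Sup S0" using tS unfolding S0_def by simp
    show ?thesis
    proof (cases "t = 0")
      case True then show ?thesis using phi0 d0 by simp
    next
      case False
      then have t0: "t > 0" using t by simp
      define X where "X n = t - t / (real n + 2)" for n
      have X: "0 \<le> X n" "X n < t" for n
        using t0 unfolding X_def by (auto simp: field_simps)
      have Xlim: "X \<longlonglongrightarrow> t"
      proof -
        have a: "(\<lambda>n. inverse (real (Suc (Suc n)))) \<longlonglongrightarrow> 0"
          using LIMSEQ_Suc[OF LIMSEQ_inverse_real_of_nat] .
        then have "(\<lambda>n. t * inverse (real (Suc (Suc n)))) \<longlonglongrightarrow> 0" by (rule tendsto_mult_right_zero)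
        moreover have "t * inverse (real (Suc (Suc n))) = t / (real n + 2)" for n by (simp add: divide_inverse add.commute)
        ultimately have "(\<lambda>n. t / (real n + 2)) \<longlonglongrightarrow> 0" by simp
        then show ?thesis unfolding X_def using tendsto_diff[OF tendsto_const, of _ 0 sequentially t] by simp
      qed
      have XA: "X n \<in> {0..A}" for n using X[of n] tS0 SA by auto
      have tA: "t \<in> {0..A}" using t tS0 SA by auto
      have l1: "(\<lambda>n. phi (X n)) \<longlonglongrightarrow> phi t" by (rule phi_seq[OF XA Xlim tA])
      have l2: "(\<lambda>n. exp d0 * exp ((X n)\<^sup>2 / 2)) \<longlonglongrightarrow> exp d0 * exp (t\<^sup>2 / 2)"
        by (intro tendsto_intros Xlim) auto
      show ?thesis
        by (rule LIMSEQ_le[OF l1 l2]) (use lt X tS0 in auto)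
    qed
  qed
qed

end

theorem lemma3p3:
  fixes p :: "nat \<Rightarrow> real"
    and F H du :: "(nat \<Rightarrow> bool) \<Rightarrow> real"
    and A :: real
    and \<gamma>1 \<gamma>2 :: "real \<Rightarrow> real"
  assumes p: "\<And>k. 0 < p k \<and> p k < 1"
    and F: "D12 p F"
    and mean: "(\<integral>\<omega>. F \<omega> \<partial>Mrad p) = 0"
    and var: "(\<integral>\<omega>. (F \<omega>)\<^sup>2 \<partial>Mrad p) = 1"
    and fzF: "\<And>z. D12 p (\<lambda>\<omega>. F \<omega> * fz z (F \<omega>) + (if F \<omega> > z then 1 else 0))"
    and H: "Linv p F H"
    and u: "div_rel p (\<lambda>k \<omega>. (1 / sqrt (p k * (1 - p k))) * Dk p k F \<omega> * \<bar>Dk p k H \<omega>\<bar>) du"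
    and A: "A > 0"
    and mono1: "mono_on {0..A} \<gamma>1"
    and mono2: "mono_on {0..A} \<gamma>2"
    and mgf: "\<And>t. 0 \<le> t \<Longrightarrow> t \<le> A \<Longrightarrow> integrable (Mrad p) (\<lambda>\<omega>. exp (t * F \<omega>))"
    and h1: "\<And>t. 0 \<le> t \<Longrightarrow> t \<le> A \<Longrightarrow>
       integrable (Mrad p) (\<lambda>\<omega>. \<bar>1 - ipair (\<lambda>k. Dk p k F \<omega>) (\<lambda>k. - Dk p k H \<omega>)\<bar> * exp (t * F \<omega>)) \<and>
       (\<integral>\<omega>. \<bar>1 - ipair (\<lambda>k. Dk p k F \<omega>) (\<lambda>k. - Dk p k H \<omega>)\<bar> * exp (t * F \<omega>) \<partial>Mrad p)
         \<le> \<gamma>1 t * (\<integral>\<omega>. exp (t * F \<omega>) \<partial>Mrad p)"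
    and h2: "\<And>t. 0 \<le> t \<Longrightarrow> t \<le> A \<Longrightarrow>
       integrable (Mrad p) (\<lambda>\<omega>. \<bar>du \<omega>\<bar> * exp (t * F \<omega>)) \<and>
       (\<integral>\<omega>. \<bar>du \<omega>\<bar> * exp (t * F \<omega>) \<partial>Mrad p) \<le> \<gamma>2 t * (\<integral>\<omega>. exp (t * F \<omega>) \<partial>Mrad p)"
  shows "(\<forall>t. 0 \<le> t \<and> t \<le> A \<longrightarrow>
            (\<integral>\<omega>. exp (t * F \<omega>) \<partial>Mrad p) \<le> exp (t\<^sup>2 / 2 * (1 + \<gamma>1 t + \<gamma>2 t))) \<and>
         (\<forall>d0 t. 0 \<le> d0 \<and> 0 \<le> t \<and>
            t \<le> Sup {s. 0 \<le> s \<and> s \<le> A \<and> s\<^sup>2 / 2 * (\<gamma>1 s + \<gamma>2 s) \<le> d0} \<longrightarrow>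
            (\<integral>\<omega>. exp (t * F \<omega>) \<partial>Mrad p) \<le> exp d0 * exp (t\<^sup>2 / 2))"
proof -
  interpret R: rad p by unfold_locales (rule p)
  interpret S: setting p F H du A \<gamma>1 \<gamma>2
    by unfold_locales (use F mean H u A mono1 mono2 mgf h1 h2 in auto)
  show ?thesis using S.part1 S.part2 unfolding S.phi_def by auto
qed

end
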